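(* Let $\Bbbk$ be a field of characteristic $0$, $B=\bigoplus_{s=1}^K\Bbbk e_s$, and let $(A,\{\!\{-,-\}\!\})$ be a double quasi-Poisson algebra over $B$. For $\alpha\in\mathbb N^K$, the algebra $R=\mathcal O(\operatorname{Rep}(A,\alpha))$ is a quasi-Poisson algebra over the pair $(\operatorname{GL}_\alpha,\mathfrak g_\alpha)$ for the antisymmetric biderivation $\{-,-\}$ on $R$ determined by $\{a_{ij},b_{kl}\}=\{\!\{a,b\}\!\}'_{kj}\{\!\{a,b\}\!\}''_{il}$ for $a,b\in A$.
   Context: $\otimes=\otimes_\Bbbk$; Sweedler notation. A $B$-linear double bracket is a $\Bbbk$-bilinear map $A\times A\to A\otimes A$ vanishing when an argument lies in $B$, with $\{\!\{a,b\}\!\}=-\{\!\{b,a\}\!\}''\otimes\{\!\{b,a\}\!\}'$ and $\{\!\{a,bc\}\!\}=\{\!\{a,b\}\!\}c+b\{\!\{a,c\}\!\}$ ($x(d'\otimes d'')y=xd'\otimes d''y$). Triple bracket: $\{\!\{a,b,c\}\!\}=\{\!\{a,\{\!\{b,c\}\!\}'\}\!\}\otimes\{\!\{b,c\}\!\}''+\tau\{\!\{b,\{\!\{c,a\}\!\}'\}\!\}\otimes\{\!\{c,a\}\!\}''+\tau^2\{\!\{c,\{\!\{a,b\}\!\}'\}\!\}\otimes\{\!\{a,b\}\!\}''$, $\tau(x_1\otimes x_2\otimes x_3)=x_3\otimes x_1\otimes x_2$. Quasi-Poisson: $\{\!\{a,b,c\}\!\}=\frac14\sum_s(ce_sa\otimes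 e_sb\otimes e_s-ce_sa\otimes e_s\otimes be_s-ce_s\otimes ae_sb\otimes e_s+ce_s\otimes ae_s\otimes be_s-e_sa\otimes e_sb\otimes e_sc+e_sa\otimes e_s\otimes be_sc+e_s\otimes ae_sb\otimes e_sc-e_s\otimes ae_s\otimes be_sc)$. $N=\sum_s\alpha_s$; $R$ is the commutative $\Bbbk$-algebra generated by $a_{ij}$ ($a\in A$, $1\le i,j\le N$) with $(a+b)_{ij}=a_{ij}+b_{ij}$, $(ab)_{ij}=\sum_ka_{ik}b_{kj}$, and $\mathcal X(e_s)=((e_s)_{ij})$ the $s$-th diagonal identity block of size $\alpha_s$; $\mathcal X(a)=(a_{ij})$. $\operatorname{GL}_\alpha=\prod_s\operatorname{GL}_{\alpha_s}(\Bbbk)$ acts by $g.\mathcal X(a)=g^{-1}\mathcal X(a)g$; $\mathfrak g_\alpha=\prod_s\mathfrak{gl}_{\alpha_s}(\Bbbk)$ acts by derivations $\eta_R(\mathcal X(a))=[\mathcal X(a),\eta]$, carries the trace pairing $(\eta_1|\eta_2)=\operatorname{tr}(\eta_1\eta_2)$ and the adjoint action of $\operatorname{GL}_\alpha$. Quasi-Poisson algebra: given a Lie algebra $\mathfrak g$ with nondegenerate invariant symmetric form $(-|-)$, dual bases $(\varepsilon_i),(\varepsilon^i)$, Cartan trivector $\phi=\frac1{12}\sum_{i,j,k}(\varepsilon^i|[\varepsilon^j,\varepsilon^k])\varepsilon_i\wedge\varepsilon_j\wedge\varepsilon_k$, acting on a commutative algebra $R$ by derivations $\eta\mapsto\eta_R$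 (Lie homomorphism), and a group $G$ acting on $\mathfrak g$ by Lie automorphisms $\eta\mapsto{}^g\eta$ and on $R$ by algebra automorphisms with $({}^g\eta)_Ra=g.\eta_R(g^{-1}.a)$: $R$ is a quasi-Poisson algebra over $(G,\mathfrak g)$ if it has an antisymmetric biderivation $\{-,-\}$ with $\eta_R\{a,b\}=\{\eta_Ra,b\}+\{a,\eta_Rb\}$, $\{a,\{b,c\}\}+\{b,\{c,a\}\}+\{c,\{a,b\}\}=\frac12\phi_R(a,b,c)$ where $(\eta^1\otimes\eta^2\otimes\eta^3)_R(a,b,c)=\eta^1_R(a)\eta^2_R(b)\eta^3_R(c)$ extended linearly, $g.\{a,b\}=\{g.a,g.b\}$, and ${}^g\phi=\phi$, for all $g\in G,\eta\in\mathfrak g,a,b,c\in R$. *)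

theory Defs
  imports Main "HOL-Library.Poly_Mapping"
begin

text \<open>An element of A (x) A (resp. A (x) A (x) A), tensor product over the field 'k, is
represented by a finite list of simple tensors (x,y) (resp. (x,y,z)); scalars are absorbed
into the first factor.  Two such lists represent the same tensor iff the difference of the
associated formal linear combinations lies in the k-span of the multilinearity relations;
this is the literal construction of the tensor product as a quotient of the free vector space.\<close>

definition fsum :: "'b list \<Rightarrow> ('b \<Rightarrow>\<^sub>0 'k::field)" where
  "fsum L = sum_list (map (\<lambda>t. Poly_Mapping.single t 1) L)"

inductive_set kspan :: "('b \<Rightarrow>\<^sub>0 'k::field) set \<Rightarrow> ('b \<Rightarrow>\<^sub>0 'k) set" for S where
  kspan_zero: "0 \<in> kspan S"
| kspan_step: "s \<in> S \<Longrightarrow> p \<in> kspan S \<Longrightarrow> Poly_Mapping.map ((*) c) s + p \<in> kspan S"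

definition Rel2 :: "('k::field \<Rightarrow> 'a::ring \<Rightarrow> 'a) \<Rightarrow> ('a \<times> 'a \<Rightarrow>\<^sub>0 'k) set" where
  "Rel2 sm =
     {Poly_Mapping.single (x + x', y) 1 - Poly_Mapping.single (x, y) 1 - Poly_Mapping.single (x', y) 1 | x x' y. True}
   \<union> {Poly_Mapping.single (x, y + y') 1 - Poly_Mapping.single (x, y) 1 - Poly_Mapping.single (x, y') 1 | x y y'. True}
   \<union> {Poly_Mapping.single (sm c x, y) 1 - Poly_Mapping.single (x, y) c | c x y. True}
   \<union> {Poly_Mapping.single (x, sm c y) 1 - Poly_Mapping.single (x, y) c | c x y. True}"

definition Rel3 :: "('k::field \<Rightarrow> 'a::ring \<Rightarrow> 'a) \<Rightarrow> ('a \<times> 'a \<times> 'a \<Rightarrow>\<^sub>0 'k) set" where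
  "Rel3 sm =
     {Poly_Mapping.single (x + x', y, z) 1 - Poly_Mapping.single (x, y, z) 1 - Poly_Mapping.single (x', y, z) 1 | x x' y z. True}
   \<union> {Poly_Mapping.single (x, y + y', z) 1 - Poly_Mapping.single (x, y, z) 1 - Poly_Mapping.single (x, y', z) 1 | x y y' z. True}
   \<union> {Poly_Mapping.single (x, y, z + z') 1 - Poly_Mapping.single (x, y, z) 1 - Poly_Mapping.single (x, y, z') 1 | x y z z'. True}
   \<union> {Poly_Mapping.single (sm c x, y, z) 1 - Poly_Mapping.single (x, y, z) c | c x y z. True}
   \<union> {Poly_Mapping.single (x, sm c y, z) 1 - Poly_Mapping.single (x, y, z) c | c x y z. True}
   \<union> {Poly_Mapping.single (x, y, sm c z) 1 - Poly_Mapping.single (x, y, z) c | c x y z. True}"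

definition teq2 :: "('k::field \<Rightarrow> 'a::ring \<Rightarrow> 'a) \<Rightarrow> ('a \<times> 'a) list \<Rightarrow> ('a \<times> 'a) list \<Rightarrow> bool" where
  "teq2 sm L M \<longleftrightarrow> fsum L - fsum M \<in> kspan (Rel2 sm)"

definition teq3 :: "('k::field \<Rightarrow> 'a::ring \<Rightarrow> 'a) \<Rightarrow> ('a \<times> 'a \<times> 'a) list \<Rightarrow> ('a \<times> 'a \<times> 'a) list \<Rightarrow> bool" where
  "teq3 sm L M \<longleftrightarrow> fsum L - fsum M \<in> kspan (Rel3 sm)"

text \<open>sm is the k-vector space structure on the (not necessarily unital as a type class) ring A,
making A an associative k-algebra; e 0, ..., e (K-1) are orthogonal idempotents whose sum is the
unit of A (this is the structure map B -> A of the B-algebra A).\<close>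
definition kalgebra :: "('k::field \<Rightarrow> 'a::ring \<Rightarrow> 'a) \<Rightarrow> bool" where
  "kalgebra sm \<longleftrightarrow>
     (\<forall>c x y. sm c (x + y) = sm c x + sm c y) \<and>
     (\<forall>c d x. sm (c + d) x = sm c x + sm d x) \<and>
     (\<forall>c d x. sm (c * d) x = sm c (sm d x)) \<and>
     (\<forall>x. sm 1 x = x) \<and>
     (\<forall>c x y. sm c (x * y) = sm c x * y \<and> sm c (x * y) = x * sm c y)"

definition Balgebra :: "('k::field \<Rightarrow> 'a::ring \<Rightarrow> 'a) \<Rightarrow> nat \<Rightarrow> (nat \<Rightarrow> 'a) \<Rightarrow> bool" where
  "Balgebra sm K e \<longleftrightarrow> kalgebra sm \<and>
     (\<forall>s<K. \<forall>t<K. e s * e t = (if s = t then e s else 0)) \<and>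
     (\<forall>x. (\<Sum>s<K. e s) * x = x \<and> x * (\<Sum>s<K. e s) = x)"

definition inB :: "('k::field \<Rightarrow> 'a::ring \<Rightarrow> 'a) \<Rightarrow> nat \<Rightarrow> (nat \<Rightarrow> 'a) \<Rightarrow> 'a \<Rightarrow> bool" where
  "inB sm K e b \<longleftrightarrow> (\<exists>c. b = (\<Sum>s<K. sm (c s) (e s)))"

definition double_bracket ::
  "('k::field \<Rightarrow> 'a::ring \<Rightarrow> 'a) \<Rightarrow> nat \<Rightarrow> (nat \<Rightarrow> 'a) \<Rightarrow> ('a \<Rightarrow> 'a \<Rightarrow> ('a \<times> 'a) list) \<Rightarrow> bool" where
  "double_bracket sm K e dbr \<longleftrightarrow>
     (\<forall>x x' y. teq2 sm (dbr (x + x') y) (dbr x y @ dbr x' y)) \<and>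
     (\<forall>x y y'. teq2 sm (dbr x (y + y')) (dbr x y @ dbr x y')) \<and>
     (\<forall>c x y. teq2 sm (dbr (sm c x) y) (map (\<lambda>(u, v). (sm c u, v)) (dbr x y))) \<and>
     (\<forall>c x y. teq2 sm (dbr x (sm c y)) (map (\<lambda>(u, v). (sm c u, v)) (dbr x y))) \<and>
     (\<forall>b x. inB sm K e b \<longrightarrow> teq2 sm (dbr b x) [] \<and> teq2 sm (dbr x b) []) \<and>
     (\<forall>a b. teq2 sm (dbr a b) (map (\<lambda>(u, v). (sm (-1) v, u)) (dbr b a))) \<and>
     (\<forall>a b c. teq2 sm (dbr a (b * c))
                 (map (\<lambda>(u, v). (u, v * c)) (dbr a b) @ map (\<lambda>(u, v). (b * u, v)) (dbr a c)))"

text \<open>{{a, d'}} (x) d'' for d = the tensor represented by L\<close>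
definition dbr_out :: "('a \<Rightarrow> 'a \<Rightarrow> ('a \<times> 'a) list) \<Rightarrow> 'a \<Rightarrow> ('a \<times> 'a) list \<Rightarrow> ('a \<times> 'a \<times> 'a) list" where
  "dbr_out dbr a L = concat (map (\<lambda>(u, v). map (\<lambda>(x, y). (x, y, v)) (dbr a u)) L)"

definition tau3 :: "'a \<times> 'a \<times> 'a \<Rightarrow> 'a \<times> 'a \<times> 'a" where
  "tau3 t = (case t of (x1, x2, x3) \<Rightarrow> (x3, x1, x2))"

definition triple_bracket :: "('a \<Rightarrow> 'a \<Rightarrow> ('a \<times> 'a) list) \<Rightarrow> 'a \<Rightarrow> 'a \<Rightarrow> 'a \<Rightarrow> ('a \<times> 'a \<times> 'a) list" where
  "triple_bracket dbr a b c =
     dbr_out dbr a (dbr b c) @ map tau3 (dbr_out dbr b (dbr c a)) @ map (tau3 \<circ> tau3) (dbr_out dbr c (dbr a b))"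

definition qP_rhs :: "('k::field \<Rightarrow> 'a::ring \<Rightarrow> 'a) \<Rightarrow> nat \<Rightarrow> (nat \<Rightarrow> 'a) \<Rightarrow> 'a \<Rightarrow> 'a \<Rightarrow> 'a \<Rightarrow> ('a \<times> 'a \<times> 'a) list" where
  "qP_rhs sm K e a b c = concat (map (\<lambda>s. let es = e s; p = sm (1/4); m = sm (-(1/4)) in
     [ (p (c * es * a), es * b, es),
       (m (c * es * a), es, b * es),
       (m (c * es), a * es * b, es),
       (p (c * es), a * es, b * es),
       (m (es * a), es * b, es * c),
       (p (es * a), es, b * es * c),
       (p es, a * es * b, es * c),
       (m es, a * es, b * es * c) ]) [0..<K])"

definition double_quasi_Poisson ::
  "('k::field \<Rightarrow> 'a::ring \<Rightarrow> 'a) \<Rightarrow> nat \<Rightarrow> (nat \<Rightarrow> 'a) \<Rightarrow> ('a \<Rightarrow> 'a \<Rightarrow> ('a \<times> 'a) list) \<Rightarrow> bool" where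
  "double_quasi_Poisson sm K e dbr \<longleftrightarrow> Balgebra sm K e \<and> double_bracket sm K e dbr \<and>
     (\<forall>a b c. teq3 sm (triple_bracket dbr a b c) (qP_rhs sm K e a b c))"

text \<open>Polynomials over 'k in the commuting variables a_ij (a in A, i, j natural numbers);
indices are 0-based: 0 <= i, j < N.  R is the quotient of this polynomial ring by the ideal
Irel generated by the defining relations; elements of R are represented by polynomials and
equality in R is congruence modulo Irel.\<close>

type_synonym ('a, 'k) rpoly = "(('a \<times> nat \<times> nat) \<Rightarrow>\<^sub>0 nat) \<Rightarrow>\<^sub>0 'k"

definition Xv :: "'a \<Rightarrow> nat \<Rightarrow> nat \<Rightarrow> ('a, 'k::field) rpoly" where
  "Xv a i j = Poly_Mapping.single (Poly_Mapping.single (a, i, j) 1) 1"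

definition cst :: "'k::field \<Rightarrow> ('a, 'k) rpoly" where
  "cst c = Poly_Mapping.single 0 c"

definition dimN :: "nat \<Rightarrow> (nat \<Rightarrow> nat) \<Rightarrow> nat" where
  "dimN K \<alpha> = (\<Sum>s<K. \<alpha> s)"

definition inblock :: "(nat \<Rightarrow> nat) \<Rightarrow> nat \<Rightarrow> nat \<Rightarrow> bool" where
  "inblock \<alpha> s i \<longleftrightarrow> (\<Sum>t<s. \<alpha> t) \<le> i \<and> i < (\<Sum>t<s. \<alpha> t) + \<alpha> s"

definition sameblock :: "nat \<Rightarrow> (nat \<Rightarrow> nat) \<Rightarrow> nat \<Rightarrow> nat \<Rightarrow> bool" where
  "sameblock K \<alpha> i j \<longleftrightarrow> (\<exists>s<K. inblock \<alpha> s i \<and> inblock \<alpha> s j)"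

text \<open>entries of X(e_s): the s-th diagonal identity block\<close>
definition eblk :: "(nat \<Rightarrow> nat) \<Rightarrow> nat \<Rightarrow> nat \<Rightarrow> nat \<Rightarrow> 'k::field" where
  "eblk \<alpha> s i j = (if i = j \<and> inblock \<alpha> s i then 1 else 0)"

inductive_set igen :: "'r::comm_ring_1 set \<Rightarrow> 'r set" for G where
  igen_zero: "0 \<in> igen G"
| igen_step: "g \<in> G \<Longrightarrow> p \<in> igen G \<Longrightarrow> r * g + p \<in> igen G"

definition Rrels :: "('k::field \<Rightarrow> 'a::ring \<Rightarrow> 'a) \<Rightarrow> nat \<Rightarrow> (nat \<Rightarrow> 'a) \<Rightarrow> (nat \<Rightarrow> nat) \<Rightarrow> ('a, 'k) rpoly set" where
  "Rrels sm K e \<alpha> = (let N = dimN K \<alpha> in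
       {Xv (x + y) i j - Xv x i j - Xv y i j | x y i j. i < N \<and> j < N}
     \<union> {Xv (sm c x) i j - cst c * Xv x i j | c x i j. i < N \<and> j < N}
     \<union> {Xv (x * y) i j - (\<Sum>k<N. Xv x i k * Xv y k j) | x y i j. i < N \<and> j < N}
     \<union> {Xv (e s) i j - cst (eblk \<alpha> s i j) | s i j. s < K \<and> i < N \<and> j < N}
     \<union> {Xv x i j | x i j. \<not> (i < N \<and> j < N)})"

definition Irel :: "('k::field \<Rightarrow> 'a::ring \<Rightarrow> 'a) \<Rightarrow> nat \<Rightarrow> (nat \<Rightarrow> 'a) \<Rightarrow> (nat \<Rightarrow> nat) \<Rightarrow> ('a, 'k) rpoly set" where
  "Irel sm K e \<alpha> = igen (Rrels sm K e \<alpha>)"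

definition req :: "('k::field \<Rightarrow> 'a::ring \<Rightarrow> 'a) \<Rightarrow> nat \<Rightarrow> (nat \<Rightarrow> 'a) \<Rightarrow> (nat \<Rightarrow> nat)
                   \<Rightarrow> ('a, 'k) rpoly \<Rightarrow> ('a, 'k) rpoly \<Rightarrow> bool" where
  "req sm K e \<alpha> p q \<longleftrightarrow> p - q \<in> Irel sm K e \<alpha>"

definition pder :: "('v \<Rightarrow> (('v \<Rightarrow>\<^sub>0 nat) \<Rightarrow>\<^sub>0 'k::field)) \<Rightarrow> (('v \<Rightarrow>\<^sub>0 nat) \<Rightarrow>\<^sub>0 'k) \<Rightarrow> (('v \<Rightarrow>\<^sub>0 nat) \<Rightarrow>\<^sub>0 'k)" where
  "pder d p = (\<Sum>m\<in>Poly_Mapping.keys p. Poly_Mapping.single 0 (Poly_Mapping.lookup p m) *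
       (\<Sum>v\<in>Poly_Mapping.keys m. of_nat (Poly_Mapping.lookup m v) *
          Poly_Mapping.single ((m::'v \<Rightarrow>\<^sub>0 nat) - Poly_Mapping.single (v::'v) (1::nat)) (1::'k) * d v))"

definition psubst :: "('v \<Rightarrow> (('v \<Rightarrow>\<^sub>0 nat) \<Rightarrow>\<^sub>0 'k::field)) \<Rightarrow> (('v \<Rightarrow>\<^sub>0 nat) \<Rightarrow>\<^sub>0 'k) \<Rightarrow> (('v \<Rightarrow>\<^sub>0 nat) \<Rightarrow>\<^sub>0 'k)" where
  "psubst s p = (\<Sum>m\<in>Poly_Mapping.keys p. Poly_Mapping.single 0 (Poly_Mapping.lookup p m) * (\<Prod>v\<in>Poly_Mapping.keys m. s v ^ Poly_Mapping.lookup m v))"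

text \<open>N x N matrices over k are functions nat => nat => k; elements of g_alpha are the block
diagonal ones (vanishing outside the N x N range).\<close>
definition in_galpha :: "nat \<Rightarrow> (nat \<Rightarrow> nat) \<Rightarrow> (nat \<Rightarrow> nat \<Rightarrow> 'k::field) \<Rightarrow> bool" where
  "in_galpha K \<alpha> \<eta> \<longleftrightarrow> (\<forall>i j. \<eta> i j \<noteq> 0 \<longrightarrow> i < dimN K \<alpha> \<and> j < dimN K \<alpha> \<and> sameblock K \<alpha> i j)"

definition mmul :: "nat \<Rightarrow> (nat \<Rightarrow> nat \<Rightarrow> 'k::field) \<Rightarrow> (nat \<Rightarrow> nat \<Rightarrow> 'k) \<Rightarrow> (nat \<Rightarrow> nat \<Rightarrow> 'k)" where
  "mmul N x y = (\<lambda>i j. \<Sum>k<N. x i k * y k j)"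

definition idm :: "nat \<Rightarrow> nat \<Rightarrow> nat \<Rightarrow> 'k::field" where
  "idm N i j = (if i = j \<and> i < N then 1 else 0)"

definition in_GLalpha :: "nat \<Rightarrow> (nat \<Rightarrow> nat) \<Rightarrow> (nat \<Rightarrow> nat \<Rightarrow> 'k::field) \<Rightarrow> (nat \<Rightarrow> nat \<Rightarrow> 'k) \<Rightarrow> bool" where
  "in_GLalpha K \<alpha> g h \<longleftrightarrow> in_galpha K \<alpha> g \<and> in_galpha K \<alpha> h \<and>
     mmul (dimN K \<alpha>) g h = idm (dimN K \<alpha>) \<and> mmul (dimN K \<alpha>) h g = idm (dimN K \<alpha>)"

definition etaR :: "nat \<Rightarrow> (nat \<Rightarrow> nat) \<Rightarrow> (nat \<Rightarrow> nat \<Rightarrow> 'k::field) \<Rightarrow> ('a, 'k) rpoly \<Rightarrow> ('a, 'k) rpoly" where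
  "etaR K \<alpha> \<eta> = pder (\<lambda>(a, i, j). let N = dimN K \<alpha> in
      if i < N \<and> j < N then (\<Sum>k<N. Xv a i k * cst (\<eta> k j) - cst (\<eta> i k) * Xv a k j) else 0)"

definition gactR :: "nat \<Rightarrow> (nat \<Rightarrow> nat) \<Rightarrow> (nat \<Rightarrow> nat \<Rightarrow> 'k::field) \<Rightarrow> (nat \<Rightarrow> nat \<Rightarrow> 'k) \<Rightarrow> ('a, 'k) rpoly \<Rightarrow> ('a, 'k) rpoly" where
  "gactR K \<alpha> g h = psubst (\<lambda>(a, i, j). let N = dimN K \<alpha> in
      if i < N \<and> j < N then (\<Sum>k<N. \<Sum>l<N. cst (h i k) * Xv a k l * cst (g l j)) else Xv a i j)"

text \<open>Cartan trivector, using the dual bases eps_(i,j) = E_ij, eps^(i,j) = E_ji of g_alpha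
for the trace pairing, and x /\ y /\ z = sum over permutations of sign * tensor.\<close>
definition Emat :: "nat \<Rightarrow> nat \<Rightarrow> nat \<Rightarrow> nat \<Rightarrow> 'k::field" where
  "Emat i j = (\<lambda>r c. if r = i \<and> c = j then 1 else 0)"

definition gbasis :: "nat \<Rightarrow> (nat \<Rightarrow> nat) \<Rightarrow> (nat \<times> nat) set" where
  "gbasis K \<alpha> = {(i, j). i < dimN K \<alpha> \<and> j < dimN K \<alpha> \<and> sameblock K \<alpha> i j}"

definition trpair :: "nat \<Rightarrow> (nat \<Rightarrow> nat \<Rightarrow> 'k::field) \<Rightarrow> (nat \<Rightarrow> nat \<Rightarrow> 'k) \<Rightarrow> 'k" where
  "trpair N x y = (\<Sum>r<N. \<Sum>c<N. x r c * y c r)"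

definition mbr :: "nat \<Rightarrow> (nat \<Rightarrow> nat \<Rightarrow> 'k::field) \<Rightarrow> (nat \<Rightarrow> nat \<Rightarrow> 'k) \<Rightarrow> (nat \<Rightarrow> nat \<Rightarrow> 'k)" where
  "mbr N x y = (\<lambda>i j. mmul N x y i j - mmul N y x i j)"

definition cartan_coef :: "nat \<Rightarrow> (nat \<Rightarrow> nat) \<Rightarrow> nat \<times> nat \<Rightarrow> nat \<times> nat \<Rightarrow> nat \<times> nat \<Rightarrow> 'k::field" where
  "cartan_coef K \<alpha> u v w = trpair (dimN K \<alpha>) (Emat (snd u) (fst u))
      (mbr (dimN K \<alpha>) (Emat (snd v) (fst v)) (Emat (snd w) (fst w)))"

definition wedge3 :: "('m \<Rightarrow> 'm \<Rightarrow> 'm \<Rightarrow> 'r::ab_group_add) \<Rightarrow> 'm \<Rightarrow> 'm \<Rightarrow> 'm \<Rightarrow> 'r" where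
  "wedge3 F x y z = F x y z - F y x z - F x z y - F z y x + F y z x + F z x y"

text \<open>phi evaluated through a trilinear map F on g_alpha: if phi = sum eta1 (x) eta2 (x) eta3
then this is sum F eta1 eta2 eta3\<close>
definition cartan_eval :: "nat \<Rightarrow> (nat \<Rightarrow> nat)
     \<Rightarrow> ((nat \<Rightarrow> nat \<Rightarrow> 'k::field) \<Rightarrow> (nat \<Rightarrow> nat \<Rightarrow> 'k) \<Rightarrow> (nat \<Rightarrow> nat \<Rightarrow> 'k) \<Rightarrow> 'r::ring_1) \<Rightarrow> ('k \<Rightarrow> 'r) \<Rightarrow> 'r" where
  "cartan_eval K \<alpha> F emb = emb (1/12) * (\<Sum>u\<in>gbasis K \<alpha>. \<Sum>v\<in>gbasis K \<alpha>. \<Sum>w\<in>gbasis K \<alpha>.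
      emb (cartan_coef K \<alpha> u v w) *
      wedge3 F (Emat (fst u) (snd u)) (Emat (fst v) (snd v)) (Emat (fst w) (snd w)))"

definition phiR :: "nat \<Rightarrow> (nat \<Rightarrow> nat) \<Rightarrow> ('a, 'k::field) rpoly \<Rightarrow> ('a, 'k) rpoly \<Rightarrow> ('a, 'k) rpoly \<Rightarrow> ('a, 'k) rpoly" where
  "phiR K \<alpha> p q r = cartan_eval K \<alpha> (\<lambda>x y z. etaR K \<alpha> x p * etaR K \<alpha> y q * etaR K \<alpha> z r) cst"

text \<open>components of a trivector in g_alpha^(x)3 (inside gl_N^(x)3, identified with 6-index arrays),
after applying the map M to each tensor factor\<close>
definition cartan_comp :: "nat \<Rightarrow> (nat \<Rightarrow> nat) \<Rightarrow> ((nat \<Rightarrow> nat \<Rightarrow> 'k::field) \<Rightarrow> (nat \<Rightarrow> nat \<Rightarrow> 'k))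
     \<Rightarrow> nat \<Rightarrow> nat \<Rightarrow> nat \<Rightarrow> nat \<Rightarrow> nat \<Rightarrow> nat \<Rightarrow> 'k" where
  "cartan_comp K \<alpha> M i1 j1 i2 j2 i3 j3 =
     cartan_eval K \<alpha> (\<lambda>x y z. M x i1 j1 * M y i2 j2 * M z i3 j3) id"

definition Adm :: "nat \<Rightarrow> (nat \<Rightarrow> nat \<Rightarrow> 'k::field) \<Rightarrow> (nat \<Rightarrow> nat \<Rightarrow> 'k) \<Rightarrow> (nat \<Rightarrow> nat \<Rightarrow> 'k) \<Rightarrow> (nat \<Rightarrow> nat \<Rightarrow> 'k)" where
  "Adm N g h x = mmul N (mmul N g x) h"

definition ind_br :: "('a \<Rightarrow> 'a \<Rightarrow> ('a \<times> 'a) list) \<Rightarrow> 'a \<Rightarrow> 'a \<Rightarrow> nat \<Rightarrow> nat \<Rightarrow> nat \<Rightarrow> nat \<Rightarrow> ('a, 'k::field) rpoly" where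
  "ind_br dbr a b i j k l = sum_list (map (\<lambda>(x, y). Xv x k j * Xv y i l) (dbr a b))"

end

theory Submission
  imports Defs
begin


abbreviation sg where "sg \<equiv> Poly_Mapping.single"
abbreviation lk where "lk \<equiv> Poly_Mapping.lookup"
abbreviation ks where "ks \<equiv> Poly_Mapping.keys"

lemma pm_expand: "(p::'b \<Rightarrow>\<^sub>0 'c::comm_monoid_add) = (\<Sum>m\<in>ks p. sg m (lk p m))"
proof (rule poly_mapping_eqI)
  fix k
  have "lk (\<Sum>m\<in>ks p. sg m (lk p m)) k = (\<Sum>m\<in>ks p. lk (sg m (lk p m)) k)"
    by (simp add: lookup_sum)
  also have "\<dots> = (\<Sum>m\<in>ks p. if m = k then lk p m else 0)"
    by (rule sum.cong) (auto simp: lookup_single when_def)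
  also have "\<dots> = lk p k"
    by (simp add: sum.delta in_keys_iff)
  finally show "lk p k = lk (\<Sum>m\<in>ks p. sg m (lk p m)) k" by simp
qed

definition lin :: "('b \<Rightarrow> ('c::comm_monoid_add \<Rightarrow>\<^sub>0 'k::field)) \<Rightarrow> ('b \<Rightarrow>\<^sub>0 'k) \<Rightarrow> ('c \<Rightarrow>\<^sub>0 'k)" where
  "lin h p = (\<Sum>m\<in>ks p. sg 0 (lk p m) * h m)"

lemma lin_superset: "finite S \<Longrightarrow> ks p \<subseteq> S \<Longrightarrow> lin h p = (\<Sum>m\<in>S. sg 0 (lk p m) * h m)"
  unfolding lin_def
  by (rule sum.mono_neutral_left) (auto simp: in_keys_iff)

lemma lin_add: "lin h (p + q) = lin h p + lin h q"
proof -
  let ?S = "ks p \<union> ks q"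
  have "lin h (p + q) = (\<Sum>m\<in>?S. sg 0 (lk (p+q) m) * h m)"
    by (rule lin_superset) (use keys_add[of p q] in auto)
  also have "\<dots> = (\<Sum>m\<in>?S. sg 0 (lk p m) * h m) + (\<Sum>m\<in>?S. sg 0 (lk q m) * h m)"
    by (simp add: lookup_add single_add distrib_right sum.distrib)
  also have "\<dots> = lin h p + lin h q"
    using lin_superset[of "ks p \<union> ks q" p h] lin_superset[of "ks p \<union> ks q" q h] by simp
  finally show ?thesis .
qed

lemma lin_zero[simp]: "lin h 0 = 0"
  by (simp add: lin_def)

lemma lin_single[simp]: "lin h (sg m c) = sg 0 c * h m"
  by (simp add: lin_def)

lemma lin_uminus: "lin h (- p) = - lin h p"
  using lin_add[of h p "-p"] by (simp add: eq_neg_iff_add_eq_0 add.commute)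

lemma lin_diff: "lin h (p - q) = lin h p - lin h q"
  using lin_add[of h p "-q"] lin_uminus[of h q] by simp

lemma lin_sum: "lin h (\<Sum>i\<in>S. f i) = (\<Sum>i\<in>S. lin h (f i))"
  by (induction S rule: infinite_finite_induct) (auto simp: lin_add)

lemma sg0_mult: "sg 0 ((a::'k::field) * b) = (sg 0 a * sg 0 b :: 'c::comm_monoid_add \<Rightarrow>\<^sub>0 'k)"
  by (simp add: mult_single)

lemma single_mult_one: "sg (m::'c::comm_monoid_add) (c::'k::field) = sg 0 c * sg m 1"
  by (simp add: mult_single)

lemma pm_expand1: "(p::'c::comm_monoid_add \<Rightarrow>\<^sub>0 'k::field) = (\<Sum>m\<in>ks p. sg 0 (lk p m) * sg m 1)"
  by (subst pm_expand) (simp add: single_mult_one[symmetric])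

lemma mult_expand: "(p::'c::comm_monoid_add \<Rightarrow>\<^sub>0 'k::field) * q =
   (\<Sum>m\<in>ks p. \<Sum>n\<in>ks q. sg (m + n) (lk p m * lk q n))"
proof -
  have "p * q = (\<Sum>m\<in>ks p. sg m (lk p m)) * (\<Sum>n\<in>ks q. sg n (lk q n))"
    by (simp flip: pm_expand)
  also have "\<dots> = (\<Sum>m\<in>ks p. \<Sum>n\<in>ks q. sg m (lk p m) * sg n (lk q n))"
    by (rule sum_product)
  finally show ?thesis by (simp add: mult_single)
qed

lemma lin_mult: "lin h ((p::'c::comm_monoid_add \<Rightarrow>\<^sub>0 'k::field) * q) =
   (\<Sum>m\<in>ks p. \<Sum>n\<in>ks q. sg 0 (lk p m * lk q n) * h (m + n))"
  by (subst mult_expand) (simp add: lin_sum)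

lemma lin_cmult: "lin h (sg 0 c * p) = sg 0 c * lin h p"
proof -
  have "lin h (sg 0 c * p) = lin h (\<Sum>m\<in>ks p. sg m (c * lk p m))"
    by (subst pm_expand[of p]) (simp add: sum_distrib_left mult_single)
  also have "\<dots> = sg 0 c * lin h p"
    apply (simp only: lin_sum lin_single)
    by (simp add: lin_def sum_distrib_left sg0_mult mult.assoc)
  finally show ?thesis .
qed

lemma lin_hsum: "lin (\<lambda>m. h1 m + h2 m) p = lin h1 p + lin h2 p"
  by (simp add: lin_def distrib_left sum.distrib)

lemma lin_hmult: "lin (\<lambda>m. h m * r) p = lin h p * r"
  by (simp add: lin_def sum_distrib_right mult.assoc)

lemma lin_hmult_left: "lin (\<lambda>m. r * h m) p = r * lin h p"
  by (simp add: lin_def sum_distrib_left mult.left_commute)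

lemma lin_mult_hom:
  assumes "\<And>m n. h (m + n) = h m * h n"
  shows "lin h ((p::'c::comm_monoid_add \<Rightarrow>\<^sub>0 'k::field) * q) = lin h p * lin h q"
proof -
  have "lin h (p*q) = (\<Sum>m\<in>ks p. \<Sum>n\<in>ks q. sg 0 (lk p m * lk q n) * h (m+n))" by (rule lin_mult)
  also have "\<dots> = (\<Sum>m\<in>ks p. sg 0 (lk p m) * h m) * (\<Sum>n\<in>ks q. sg 0 (lk q n) * h n)"
    unfolding sum_product by (simp add: assms sg0_mult mult_ac)
  also have "\<dots> = lin h p * lin h q" by (simp add: lin_def)
  finally show ?thesis .
qed

lemma lin_mult_der:
  assumes "\<And>m n. h (m + n) = h m * sg n 1 + sg m 1 * h n"
  shows "lin h ((p::'c::comm_monoid_add \<Rightarrow>\<^sub>0 'k::field) * q) = lin h p * q + p * lin h q"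
proof -
  have e1: "(\<Sum>n\<in>ks q. sg 0 (lk q n) * sg n 1) = q" by (rule pm_expand1[symmetric])
  have e2: "(\<Sum>n\<in>ks p. sg 0 (lk p n) * sg n 1) = p" by (rule pm_expand1[symmetric])
  have "lin h (p*q) = (\<Sum>m\<in>ks p. \<Sum>n\<in>ks q. sg 0 (lk p m * lk q n) * h (m+n))" by (rule lin_mult)
  also have "\<dots> = (\<Sum>m\<in>ks p. sg 0 (lk p m) * h m) * (\<Sum>n\<in>ks q. sg 0 (lk q n) * sg n 1)
     + (\<Sum>m\<in>ks p. sg 0 (lk p m) * sg m 1) * (\<Sum>n\<in>ks q. sg 0 (lk q n) * h n)"
    unfolding sum_product by (simp add: assms sg0_mult mult_ac distrib_left sum.distrib)
  also have "\<dots> = lin h p * q + p * lin h q" unfolding e1 e2 by (simp add: lin_def)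
  finally show ?thesis .
qed


definition hder :: "('v \<Rightarrow> (('v \<Rightarrow>\<^sub>0 nat) \<Rightarrow>\<^sub>0 'k::field)) \<Rightarrow> ('v \<Rightarrow>\<^sub>0 nat) \<Rightarrow> (('v \<Rightarrow>\<^sub>0 nat) \<Rightarrow>\<^sub>0 'k)" where
  "hder d m = (\<Sum>v\<in>ks m. of_nat (lk m v) * sg (m - sg v 1) 1 * d v)"

definition hsub :: "('v \<Rightarrow> (('v \<Rightarrow>\<^sub>0 nat) \<Rightarrow>\<^sub>0 'k::field)) \<Rightarrow> ('v \<Rightarrow>\<^sub>0 nat) \<Rightarrow> (('v \<Rightarrow>\<^sub>0 nat) \<Rightarrow>\<^sub>0 'k)" where
  "hsub s m = (\<Prod>v\<in>ks m. s v ^ lk m v)"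

lemma pder_lin: "pder d = lin (hder d)"
  by (simp add: fun_eq_iff pder_def lin_def hder_def)

lemma psubst_lin: "psubst s = lin (hsub s)"
  by (simp add: fun_eq_iff psubst_def lin_def hsub_def)

lemma hder_superset: "finite S \<Longrightarrow> ks m \<subseteq> S \<Longrightarrow>
   hder d m = (\<Sum>v\<in>S. of_nat (lk m v) * sg (m - sg v 1) 1 * d v)"
  unfolding hder_def by (rule sum.mono_neutral_left) (auto simp: in_keys_iff)

lemma hsub_superset: "finite S \<Longrightarrow> ks m \<subseteq> S \<Longrightarrow>
   hsub s m = (\<Prod>v\<in>S. s v ^ lk m v)"
  unfolding hsub_def by (rule prod.mono_neutral_left) (auto simp: in_keys_iff)

lemma hsub_add: "hsub s (m + n) = hsub s m * hsub s n"
proof -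
  let ?S = "ks m \<union> ks n"
  have "hsub s (m + n) = (\<Prod>v\<in>?S. s v ^ lk (m+n) v)"
    by (rule hsub_superset) (use keys_add[of m n] in auto)
  also have "\<dots> = (\<Prod>v\<in>?S. s v ^ lk m v) * (\<Prod>v\<in>?S. s v ^ lk n v)"
    by (simp add: lookup_add power_add prod.distrib)
  also have "\<dots> = hsub s m * hsub s n"
    using hsub_superset[of ?S m s] hsub_superset[of ?S n s] by simp
  finally show ?thesis .
qed

lemma sg_add1: "sg (a + b) (1::'k::field) = sg a 1 * sg b 1"
  by (simp add: mult_single)

lemma monom_split:
  assumes "lk m v \<noteq> 0"
  shows "m + n - sg v 1 = (m - sg v (1::nat)) + n"
  by (rule poly_mapping_eqI) (use assms in \<open>auto simp: lookup_add lookup_minus lookup_single when_def\<close>)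

lemma hder_add:
  fixes d :: "'v \<Rightarrow> (('v \<Rightarrow>\<^sub>0 nat) \<Rightarrow>\<^sub>0 'k::field)"
  shows "hder d (m + n) = hder d m * sg n 1 + sg m 1 * hder d n"
proof -
  let ?S = "ks m \<union> ks n"
  have "hder d (m + n) = (\<Sum>v\<in>?S. of_nat (lk (m+n) v) * sg (m + n - sg v 1) 1 * d v)"
    by (rule hder_superset) (use keys_add[of m n] in auto)
  also have "\<dots> = (\<Sum>v\<in>?S. of_nat (lk m v) * sg (m + n - sg v 1) 1 * d v)
      + (\<Sum>v\<in>?S. of_nat (lk n v) * sg (m + n - sg v 1) 1 * d v)"
    by (simp add: lookup_add distrib_right sum.distrib)
  also have "(\<Sum>v\<in>?S. of_nat (lk m v) * sg (m + n - sg v 1) 1 * d v)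
     = (\<Sum>v\<in>?S. of_nat (lk m v) * sg (m - sg v 1) 1 * d v) * sg n 1"
    unfolding sum_distrib_right
  proof (rule sum.cong[OF refl])
    fix v
    show "of_nat (lk m v) * sg (m + n - sg v 1) 1 * d v = of_nat (lk m v) * sg (m - sg v 1) 1 * d v * sg n (1::'k)"
    proof (cases "lk m v = 0")
      case False
      then show ?thesis using monom_split[OF False, of n] by (simp add: sg_add1 mult_ac)
    qed simp
  qed
  also have "(\<Sum>v\<in>?S. of_nat (lk n v) * sg (m + n - sg v 1) 1 * d v)
     = sg m 1 * (\<Sum>v\<in>?S. of_nat (lk n v) * sg (n - sg v 1) 1 * d v)"
    unfolding sum_distrib_left
  proof (rule sum.cong[OF refl])
    fix v
    show "of_nat (lk n v) * sg (m + n - sg v 1) 1 * d v = sg m (1::'k) * (of_nat (lk n v) * sg (n - sg v 1) 1 * d v)"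
    proof (cases "lk n v = 0")
      case False
      then show ?thesis using monom_split[OF False, of m] by (simp add: add.commute sg_add1 mult_ac)
    qed simp
  qed
  also have "(\<Sum>v\<in>?S. of_nat (lk m v) * sg (m - sg v 1) 1 * d v) = hder d m"
    by (rule hder_superset[symmetric]) auto
  also have "(\<Sum>v\<in>?S. of_nat (lk n v) * sg (n - sg v 1) 1 * d v) = hder d n"
    by (rule hder_superset[symmetric]) auto
  finally show ?thesis .
qed

lemma pder_add: "pder d (p + q) = pder d p + pder d q"
  by (simp add: pder_lin lin_add)
lemma pder_diff: "pder d (p - q) = pder d p - pder d q"
  by (simp add: pder_lin lin_diff)
lemma pder_uminus: "pder d (- p) = - pder d p"
  by (simp add: pder_lin lin_uminus)
lemma pder_sum: "pder d (\<Sum>i\<in>S. f i) = (\<Sum>i\<in>S. pder d (f i))"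
  by (simp add: pder_lin lin_sum)
lemma pder_mult: "pder d (p * q) = pder d p * q + p * pder d q"
  unfolding pder_lin by (rule lin_mult_der) (rule hder_add)
lemma pder_const: "pder d (sg 0 c) = 0"
  by (simp add: pder_lin hder_def)
lemma pder_var: "pder d (sg (sg v 1) 1) = d v"
  by (simp add: pder_lin hder_def)
lemma pder_cmult: "pder d (sg 0 c * p) = sg 0 c * pder d p"
  by (simp add: pder_mult pder_const)
lemma pder_dadd: "pder (\<lambda>v. d1 v + d2 v) p = pder d1 p + pder d2 p"
proof -
  have "hder (\<lambda>v. d1 v + d2 v) = (\<lambda>m. hder d1 m + hder d2 m)"
    by (simp add: fun_eq_iff hder_def distrib_left sum.distrib)
  then show ?thesis by (simp add: pder_lin lin_hsum)
qed
lemma pder_dmult: "pder (\<lambda>v. d v * r) p = pder d p * r"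
proof -
  have "hder (\<lambda>v. d v * r) = (\<lambda>m. hder d m * r)"
    by (simp add: fun_eq_iff hder_def sum_distrib_right mult.assoc)
  then show ?thesis by (simp add: pder_lin lin_hmult)
qed
lemma pder_dmult_left: "pder (\<lambda>v. r * d v) p = r * pder d p"
  using pder_dmult[of d r p] by (simp add: mult.commute)
lemma pder_dzero: "pder (\<lambda>v. 0) p = 0"
  by (simp add: pder_lin hder_def lin_def)
lemma pder_dsum: "finite S \<Longrightarrow> pder (\<lambda>v. \<Sum>i\<in>S. d i v) p = (\<Sum>i\<in>S. pder (d i) p)"
  by (induction S rule: finite_induct) (simp_all add: pder_dzero pder_dadd)
lemma pder_dcong: "(\<And>v. d1 v = d2 v) \<Longrightarrow> pder d1 p = pder d2 p"
  by (metis ext)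

lemma psubst_add: "psubst s (p + q) = psubst s p + psubst s q"
  by (simp add: psubst_lin lin_add)
lemma psubst_diff: "psubst s (p - q) = psubst s p - psubst s q"
  by (simp add: psubst_lin lin_diff)
lemma psubst_mult: "psubst s (p * q) = psubst s p * psubst s q"
  unfolding psubst_lin by (rule lin_mult_hom) (rule hsub_add)
lemma psubst_const: "psubst s (sg 0 c) = sg 0 c"
  by (simp add: psubst_lin hsub_def)
lemma psubst_var: "psubst s (sg (sg v 1) 1) = s v"
  by (simp add: psubst_lin hsub_def)
lemma psubst_sum: "psubst s (\<Sum>i\<in>S. f i) = (\<Sum>i\<in>S. psubst s (f i))"
  by (simp add: psubst_lin lin_sum)

lemma poly_induct:
  fixes Q :: "(('v \<Rightarrow>\<^sub>0 nat) \<Rightarrow>\<^sub>0 'k::field) \<Rightarrow> bool"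
  assumes cst: "\<And>c. Q (sg 0 c)" and var: "\<And>v. Q (sg (sg v 1) 1)"
    and add: "\<And>p q. Q p \<Longrightarrow> Q q \<Longrightarrow> Q (p + q)"
    and mul: "\<And>p q. Q p \<Longrightarrow> Q q \<Longrightarrow> Q (p * q)"
  shows "Q p"
proof -
  have pw: "Q (sg (sg v n) 1)" for v n
  proof (induction n)
    case 0 then show ?case using cst[of 1] by simp
  next
    case (Suc n)
    have "sg (sg v (Suc n)) (1::'k) = sg (sg v 1) 1 * sg (sg v n) 1"
      by (simp add: mult_single single_add[symmetric])
    then show ?case using mul[OF var Suc] by simp
  qed
  have mon: "Q (sg (\<Sum>v\<in>S. sg v (f v)) 1)" if "finite S" for S f
    using that
  proof (induction S rule: finite_induct)
    case empty then show ?case using cst[of 1] by simp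
  next
    case (insert x F)
    have "sg (\<Sum>v\<in>insert x F. sg v (f v)) (1::'k) = sg (sg x (f x)) 1 * sg (\<Sum>v\<in>F. sg v (f v)) 1"
      using insert by (simp add: mult_single)
    then show ?case using mul[OF pw insert.IH] by simp
  qed
  have monq: "Q (sg m 1)" for m
    using mon[of "ks m" "lk m"] by (simp flip: pm_expand)
  have sm: "Q (\<Sum>m\<in>S. sg 0 (f m) * sg m 1)" if "finite S" for S f
    using that
  proof (induction S rule: finite_induct)
    case empty then show ?case using cst[of 0] by simp
  next
    case (insert x F)
    then show ?case using add[OF mul[OF cst monq] insert.IH] by simp
  qed
  show ?thesis using sm[of "ks p" "lk p"] by (simp flip: pm_expand1)
qed


lemma igen_gen: "g \<in> G \<Longrightarrow> g \<in> igen G"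
proof -
  assume "g \<in> G"
  then have "1 * g + 0 \<in> igen G" by (intro igen_step igen_zero)
  then show ?thesis by simp
qed

lemma igen_add: "p \<in> igen G \<Longrightarrow> q \<in> igen G \<Longrightarrow> p + q \<in> igen G"
  by (induction p rule: igen.induct) (auto simp: add.assoc intro: igen_step)

lemma igen_mult: "p \<in> igen G \<Longrightarrow> s * p \<in> igen G"
proof (induction p rule: igen.induct)
  case igen_zero then show ?case by (simp add: igen.igen_zero)
next
  case (igen_step g p r)
  then show ?case using igen.igen_step[of g G "s*p" "s*r"] by (simp add: distrib_left mult.assoc)
qed

locale ctx =
  fixes sm :: "'k::field_char_0 \<Rightarrow> 'a::ring \<Rightarrow> 'a" and K :: nat and e :: "nat \<Rightarrow> 'a"
    and dbr :: "'a \<Rightarrow> 'a \<Rightarrow> ('a \<times> 'a) list" and \<alpha> :: "nat \<Rightarrow> nat"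
  assumes dqP: "double_quasi_Poisson sm K e dbr"
begin

abbreviation NN where "NN \<equiv> dimN K \<alpha>"
abbreviation inI :: "('a, 'k) rpoly \<Rightarrow> bool" where "inI p \<equiv> p \<in> Irel sm K e \<alpha>"
abbreviation RE :: "('a, 'k) rpoly \<Rightarrow> ('a, 'k) rpoly \<Rightarrow> bool" (infix "\<simeq>" 50)
  where "p \<simeq> q \<equiv> req sm K e \<alpha> p q"
abbreviation X :: "'a \<Rightarrow> nat \<Rightarrow> nat \<Rightarrow> ('a, 'k) rpoly" where "X \<equiv> Xv"

lemma I0[simp]: "inI 0"
  by (simp add: Irel_def igen.igen_zero)
lemma Iadd: "inI p \<Longrightarrow> inI q \<Longrightarrow> inI (p + q)"
  by (simp add: Irel_def igen_add)
lemma Imult: "inI p \<Longrightarrow> inI (s * p)"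
  by (simp add: Irel_def igen_mult)
lemma Imult2: "inI p \<Longrightarrow> inI (p * s)"
  using Imult[of p s] by (simp add: mult.commute)
lemma Iuminus: "inI p \<Longrightarrow> inI (- p)"
  using Imult[of p "-1"] by simp
lemma Idiff: "inI p \<Longrightarrow> inI q \<Longrightarrow> inI (p - q)"
  using Iadd[of p "-q"] Iuminus[of q] by simp
lemma Isum: "(\<And>i. i \<in> S \<Longrightarrow> inI (f i)) \<Longrightarrow> inI (\<Sum>i\<in>S. f i)"
  by (induction S rule: infinite_finite_induct) (auto intro: Iadd)
lemma Isum_list: "(\<And>x. x \<in> set xs \<Longrightarrow> inI (f x)) \<Longrightarrow> inI (sum_list (map f xs))"
  by (induction xs) (auto intro: Iadd)
lemma Igen: "g \<in> Rrels sm K e \<alpha> \<Longrightarrow> inI g"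
  by (simp add: Irel_def igen_gen)

lemma req_def': "p \<simeq> q \<longleftrightarrow> inI (p - q)"
  by (simp add: req_def)
lemma req_refl[simp, intro]: "p \<simeq> p"
  by (simp add: req_def)
lemma req_eqI: "p = q \<Longrightarrow> p \<simeq> q"
  by simp
lemma req_sym: "p \<simeq> q \<Longrightarrow> q \<simeq> p"
  unfolding req_def' using Iuminus[of "p - q"] by simp
lemma req_trans[trans]: "p \<simeq> q \<Longrightarrow> q \<simeq> r \<Longrightarrow> p \<simeq> r"
  unfolding req_def' using Iadd[of "p - q" "q - r"] by simp
lemma req_trans_eq1[trans]: "p = q \<Longrightarrow> q \<simeq> r \<Longrightarrow> p \<simeq> r" by simp
lemma req_trans_eq2[trans]: "p \<simeq> q \<Longrightarrow> q = r \<Longrightarrow> p \<simeq> r" by simp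
lemma req_add: "p \<simeq> p' \<Longrightarrow> q \<simeq> q' \<Longrightarrow> p + q \<simeq> p' + q'"
proof -
  assume a: "p \<simeq> p'" "q \<simeq> q'"
  have "p + q - (p' + q') = (p - p') + (q - q')" by (simp add: algebra_simps)
  then show ?thesis using a Iadd unfolding req_def' by metis
qed
lemma req_diff: "p \<simeq> p' \<Longrightarrow> q \<simeq> q' \<Longrightarrow> p - q \<simeq> p' - q'"
proof -
  assume a: "p \<simeq> p'" "q \<simeq> q'"
  have "p - q - (p' - q') = (p - p') - (q - q')" by (simp add: algebra_simps)
  then show ?thesis using a Idiff unfolding req_def' by metis
qed
lemma req_uminus: "p \<simeq> p' \<Longrightarrow> - p \<simeq> - p'"
  unfolding req_def' using Iuminus[of "p - p'"] by (simp add: algebra_simps)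
lemma req_mult: "p \<simeq> p' \<Longrightarrow> q \<simeq> q' \<Longrightarrow> p * q \<simeq> p' * q'"
proof -
  assume a: "p \<simeq> p'" "q \<simeq> q'"
  have "p * q - p' * q' = (p - p') * q + p' * (q - q')" by (simp add: algebra_simps)
  then show ?thesis using a unfolding req_def' by (metis Iadd Imult Imult2)
qed
lemma req_sum: "(\<And>i. i \<in> S \<Longrightarrow> f i \<simeq> g i) \<Longrightarrow> (\<Sum>i\<in>S. f i) \<simeq> (\<Sum>i\<in>S. g i)"
  by (induction S rule: infinite_finite_induct) (auto intro: req_add)
lemma req_sum_list: "(\<And>x. x \<in> set xs \<Longrightarrow> f x \<simeq> g x) \<Longrightarrow> sum_list (map f xs) \<simeq> sum_list (map g xs)"
  by (induction xs) (auto intro: req_add)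
lemma req_zero: "inI p \<Longrightarrow> p \<simeq> 0"
  by (simp add: req_def)
lemma req_zeroD: "p \<simeq> 0 \<Longrightarrow> inI p"
  by (simp add: req_def)

lemma Balg: "Balgebra sm K e" and dbrP: "double_bracket sm K e dbr"
  and qP: "\<And>a b c. teq3 sm (triple_bracket dbr a b c) (qP_rhs sm K e a b c)"
  using dqP by (auto simp: double_quasi_Poisson_def)

lemma kalg: "kalgebra sm" using Balg by (simp add: Balgebra_def)

lemma Rm1: "i < NN \<Longrightarrow> j < NN \<Longrightarrow> inI (Xv (x + y) i j - Xv x i j - Xv y i j)"
  by (rule Igen, unfold Rrels_def Let_def, rule UnI1, rule UnI1, rule UnI1, rule UnI1) blast
lemma Rm2: "i < NN \<Longrightarrow> j < NN \<Longrightarrow> inI (Xv (sm c x) i j - cst c * Xv x i j)"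
  by (rule Igen, unfold Rrels_def Let_def, rule UnI1, rule UnI1, rule UnI1, rule UnI2) blast
lemma Rm3: "i < NN \<Longrightarrow> j < NN \<Longrightarrow> inI (Xv (x * y) i j - (\<Sum>k<NN. Xv x i k * Xv y k j))"
  by (rule Igen, unfold Rrels_def Let_def, rule UnI1, rule UnI1, rule UnI2) blast
lemma Rm4: "s < K \<Longrightarrow> i < NN \<Longrightarrow> j < NN \<Longrightarrow> inI (Xv (e s) i j - cst (eblk \<alpha> s i j))"
  by (rule Igen, unfold Rrels_def Let_def, rule UnI1, rule UnI2) blast
lemma R5: "\<not> (i < NN \<and> j < NN) \<Longrightarrow> inI (X x i j)"
  by (rule Igen, unfold Rrels_def Let_def, rule UnI2) blast

lemma R5': "\<not> (i < NN \<and> j < NN) \<Longrightarrow> X x i j \<simeq> 0"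
  using R5 req_zero by blast

lemma R1: "X (x + y) i j \<simeq> X x i j + X y i j"
proof (cases "i < NN \<and> j < NN")
  case True
  then show ?thesis using Rm1[of i j x y] unfolding req_def' by (simp add: diff_diff_eq)
next
  case False
  have a: "X (x + y) i j \<simeq> 0" by (rule R5'[OF False])
  have b: "X x i j + X y i j \<simeq> 0" using req_add[OF R5'[OF False] R5'[OF False]] by simp
  show ?thesis using req_trans[OF a req_sym[OF b]] by simp
qed

lemma R2: "X (sm c x) i j \<simeq> cst c * X x i j"
proof (cases "i < NN \<and> j < NN")
  case True
  then show ?thesis using Rm2[of i j c x] unfolding req_def' by simp
next
  case False
  have a: "X (sm c x) i j \<simeq> 0" by (rule R5'[OF False])
  have b: "cst c * X x i j \<simeq> 0" using req_mult[OF req_refl R5'[OF False], of "cst c"] by simp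
  show ?thesis using req_trans[OF a req_sym[OF b]] by simp
qed

lemma R3: "X (x * y) i j \<simeq> (\<Sum>m<NN. X x i m * X y m j)"
proof (cases "i < NN \<and> j < NN")
  case True
  then show ?thesis using Rm3[of i j x y] unfolding req_def' by simp
next
  case False
  have "inI (X x i m * X y m j)" for m
    using False R5[of i m x] R5[of m j y] Imult[of "X y m j" "X x i m"] Imult2[of "X x i m" "X y m j"]
    by auto
  then have "(\<Sum>m<NN. X x i m * X y m j) \<simeq> 0"
    by (intro req_zero Isum)
  then show ?thesis using req_trans[OF R5'[OF False] req_sym] by blast
qed

lemma inblock_lt: "s < K \<Longrightarrow> inblock \<alpha> s i \<Longrightarrow> i < NN"
proof -
  assume s: "s < K" and ib: "inblock \<alpha> s i"
  have "(\<Sum>t<s. \<alpha> t) + \<alpha> s = (\<Sum>t<Suc s. \<alpha> t)" by simp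
  also have "\<dots> \<le> (\<Sum>t<K. \<alpha> t)"
    by (rule sum_mono2) (use s in auto)
  finally show ?thesis using ib by (simp add: inblock_def dimN_def)
qed

lemma R4: "s < K \<Longrightarrow> X (e s) i j \<simeq> cst (eblk \<alpha> s i j)"
proof (cases "i < NN \<and> j < NN")
  case True
  assume "s < K"
  then show ?thesis using Rm4[of s i j] True unfolding req_def' by simp
next
  case False
  assume s: "s < K"
  have "eblk \<alpha> s i j = (0::'k)" using False inblock_lt[OF s] by (auto simp: eblk_def)
  then show ?thesis using R5'[OF False] by (simp add: cst_def)
qed

lemma cst_add: "cst (a + b) = cst a + cst b" by (simp add: cst_def single_add)
lemma cst_mult: "cst (a * b) = cst a * cst b" by (simp add: cst_def mult_single)
lemma cst_uminus: "cst (- a) = - cst a" by (simp add: cst_def single_uminus)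
lemma cst_diff: "cst (a - b) = cst a - cst b" by (simp add: cst_def single_diff)
lemma cst_0[simp]: "cst 0 = 0" by (simp add: cst_def)
lemma cst_1[simp]: "cst 1 = 1" by (simp add: cst_def)

end


context ctx begin

lemma lin_fsum: "lin h (fsum L) = sum_list (map h L)"
  by (induction L) (simp_all add: fsum_def lin_add)

lemma kspan_lin:
  assumes "\<And>s. s \<in> S \<Longrightarrow> inI (lin h s)" and "p \<in> kspan S"
  shows "inI (lin h p)"
  using assms(2)
proof (induction p rule: kspan.induct)
  case kspan_zero then show ?case by simp
next
  case (kspan_step s p c)
  have lk: "lk (Poly_Mapping.map ((*) c) s) m = c * lk s m" for m
    by (simp add: Poly_Mapping.map.rep_eq when_def)
  have "lin h (Poly_Mapping.map ((*) c) s) = (\<Sum>m\<in>ks s. sg 0 (lk (Poly_Mapping.map ((*) c) s) m) * h m)"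
    by (rule lin_superset) (auto simp: lk in_keys_iff)
  also have "\<dots> = sg 0 c * lin h s"
    by (simp add: lk lin_def sum_distrib_left sg0_mult mult.assoc)
  finally have "lin h (Poly_Mapping.map ((*) c) s + p) = sg 0 c * lin h s + lin h p"
    by (simp add: lin_add)
  then show ?case using assms(1)[OF kspan_step(1)] kspan_step(3) by (simp add: Iadd Imult)
qed

definition lmod :: "('a \<Rightarrow> ('a, 'k) rpoly) \<Rightarrow> bool" where
  "lmod f \<longleftrightarrow> (\<forall>x y. f (x + y) \<simeq> f x + f y) \<and> (\<forall>c x. f (sm c x) \<simeq> cst c * f x)"

lemma lmodD: "lmod f \<Longrightarrow> f (x + y) \<simeq> f x + f y" "lmod f \<Longrightarrow> f (sm c x) \<simeq> cst c * f x"
  by (auto simp: lmod_def)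

lemma lmodI: "(\<And>x y. f (x + y) \<simeq> f x + f y) \<Longrightarrow> (\<And>c x. f (sm c x) \<simeq> cst c * f x) \<Longrightarrow> lmod f"
  by (auto simp: lmod_def)

lemma lmod_X: "lmod (\<lambda>x. X x i j)"
  by (intro lmodI R1 R2)

lemma lmod_mult_const: "lmod f \<Longrightarrow> lmod (\<lambda>x. f x * r)"
proof (intro lmodI)
  fix x y assume "lmod f"
  show "f (x + y) * r \<simeq> f x * r + f y * r"
    using req_mult[OF lmodD(1)[OF \<open>lmod f\<close>, of x y] req_refl[of r]] by (simp add: distrib_right)
next
  fix c x assume "lmod f"
  show "f (sm c x) * r \<simeq> cst c * (f x * r)"
    using req_mult[OF lmodD(2)[OF \<open>lmod f\<close>, of c x] req_refl[of r]] by (simp add: mult.assoc)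
qed

lemma lmod_sum: "(\<And>i. i \<in> S \<Longrightarrow> lmod (f i)) \<Longrightarrow> lmod (\<lambda>x. \<Sum>i\<in>S. f i x)"
proof (induction S rule: infinite_finite_induct)
  case (infinite A) then show ?case by (simp add: lmod_def)
next
  case empty then show ?case by (simp add: lmod_def)
next
  case (insert a F)
  show ?case
  proof (intro lmodI)
    fix x y
    have "f a (x + y) + (\<Sum>i\<in>F. f i (x + y)) \<simeq> (f a x + f a y) + ((\<Sum>i\<in>F. f i x) + (\<Sum>i\<in>F. f i y))"
      using insert by (intro req_add lmodD) auto
    then show "(\<Sum>i\<in>insert a F. f i (x + y)) \<simeq> (\<Sum>i\<in>insert a F. f i x) + (\<Sum>i\<in>insert a F. f i y)"
      using insert by (simp add: ac_simps)
  next
    fix c x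
    have "f a (sm c x) + (\<Sum>i\<in>F. f i (sm c x)) \<simeq> cst c * f a x + cst c * (\<Sum>i\<in>F. f i x)"
      using insert by (intro req_add lmodD) auto
    then show "(\<Sum>i\<in>insert a F. f i (sm c x)) \<simeq> cst c * (\<Sum>i\<in>insert a F. f i x)"
      using insert by (simp add: distrib_left)
  qed
qed

lemma teq2_I:
  fixes \<Psi> :: "'a \<Rightarrow> 'a \<Rightarrow> ('a, 'k) rpoly"
  assumes a1: "\<And>x x' y. \<Psi> (x + x') y \<simeq> \<Psi> x y + \<Psi> x' y"
    and a2: "\<And>x y y'. \<Psi> x (y + y') \<simeq> \<Psi> x y + \<Psi> x y'"
    and a3: "\<And>c x y. \<Psi> (sm c x) y \<simeq> cst c * \<Psi> x y"
    and a4: "\<And>c x y. \<Psi> x (sm c y) \<simeq> cst c * \<Psi> x y"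
    and t: "teq2 sm L M"
  shows "sum_list (map (\<lambda>(x, y). \<Psi> x y) L) \<simeq> sum_list (map (\<lambda>(x, y). \<Psi> x y) M)"
proof -
  let ?h = "\<lambda>(x, y). \<Psi> x y"
  have rel: "inI (lin ?h s)" if "s \<in> Rel2 sm" for s
    using that unfolding Rel2_def
  proof (elim UnE)
    assume "s \<in> {sg (x + x', y) 1 - sg (x, y) 1 - sg (x', y) 1 |x x' y. True}"
    then obtain x x' y where "s = sg (x + x', y) 1 - sg (x, y) 1 - sg (x', y) 1" by blast
    then show ?thesis using a1[of x x' y] by (simp add: lin_diff lin_add req_def' diff_diff_eq)
  next
    assume "s \<in> {sg (x, y + y') 1 - sg (x, y) 1 - sg (x, y') 1 |x y y'. True}"
    then obtain x y y' where "s = sg (x, y + y') 1 - sg (x, y) 1 - sg (x, y') 1" by blast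
    then show ?thesis using a2[of x y y'] by (simp add: lin_diff lin_add req_def' diff_diff_eq)
  next
    assume "s \<in> {sg (sm c x, y) 1 - sg (x, y) c |c x y. True}"
    then obtain c x y where "s = sg (sm c x, y) 1 - sg (x, y) c" by blast
    then show ?thesis using a3[of c x y] by (simp add: lin_diff req_def' cst_def)
  next
    assume "s \<in> {sg (x, sm c y) 1 - sg (x, y) c |c x y. True}"
    then obtain c x y where "s = sg (x, sm c y) 1 - sg (x, y) c" by blast
    then show ?thesis using a4[of x c y] by (simp add: lin_diff req_def' cst_def)
  qed
  have "inI (lin ?h (fsum L - fsum M))"
    by (rule kspan_lin[OF rel]) (use t in \<open>simp_all add: teq2_def\<close>)
  then show ?thesis by (simp add: lin_diff lin_fsum req_def')
qed

lemma teq3_I: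
  fixes \<Psi> :: "'a \<Rightarrow> 'a \<Rightarrow> 'a \<Rightarrow> ('a, 'k) rpoly"
  assumes a1: "\<And>x x' y z. \<Psi> (x + x') y z \<simeq> \<Psi> x y z + \<Psi> x' y z"
    and a2: "\<And>x y y' z. \<Psi> x (y + y') z \<simeq> \<Psi> x y z + \<Psi> x y' z"
    and a3: "\<And>x y z z'. \<Psi> x y (z + z') \<simeq> \<Psi> x y z + \<Psi> x y z'"
    and a4: "\<And>c x y z. \<Psi> (sm c x) y z \<simeq> cst c * \<Psi> x y z"
    and a5: "\<And>c x y z. \<Psi> x (sm c y) z \<simeq> cst c * \<Psi> x y z"
    and a6: "\<And>c x y z. \<Psi> x y (sm c z) \<simeq> cst c * \<Psi> x y z"
    and t: "teq3 sm L M"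
  shows "sum_list (map (\<lambda>(x, y, z). \<Psi> x y z) L) \<simeq> sum_list (map (\<lambda>(x, y, z). \<Psi> x y z) M)"
proof -
  let ?h = "\<lambda>(x, y, z). \<Psi> x y z"
  have rel: "inI (lin ?h s)" if "s \<in> Rel3 sm" for s
    using that unfolding Rel3_def
  proof (elim UnE)
    assume "s \<in> {sg (x + x', y, z) 1 - sg (x, y, z) 1 - sg (x', y, z) 1 |x x' y z. True}"
    then obtain x x' y z where "s = sg (x + x', y, z) 1 - sg (x, y, z) 1 - sg (x', y, z) 1" by blast
    then show ?thesis using a1[of x x' y z] by (simp add: lin_diff lin_add req_def' diff_diff_eq)
  next
    assume "s \<in> {sg (x, y + y', z) 1 - sg (x, y, z) 1 - sg (x, y', z) 1 |x y y' z. True}"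
    then obtain x y y' z where "s = sg (x, y + y', z) 1 - sg (x, y, z) 1 - sg (x, y', z) 1" by blast
    then show ?thesis using a2[of x y y' z] by (simp add: lin_diff lin_add req_def' diff_diff_eq)
  next
    assume "s \<in> {sg (x, y, z + z') 1 - sg (x, y, z) 1 - sg (x, y, z') 1 |x y z z'. True}"
    then obtain x y z z' where "s = sg (x, y, z + z') 1 - sg (x, y, z) 1 - sg (x, y, z') 1" by blast
    then show ?thesis using a3[of x y z z'] by (simp add: lin_diff lin_add req_def' diff_diff_eq)
  next
    assume "s \<in> {sg (sm c x, y, z) 1 - sg (x, y, z) c |c x y z. True}"
    then obtain c x y z where "s = sg (sm c x, y, z) 1 - sg (x, y, z) c" by blast
    then show ?thesis using a4[of c x y z] by (simp add: lin_diff req_def' cst_def)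
  next
    assume "s \<in> {sg (x, sm c y, z) 1 - sg (x, y, z) c |c x y z. True}"
    then obtain c x y z where "s = sg (x, sm c y, z) 1 - sg (x, y, z) c" by blast
    then show ?thesis using a5[of x c y z] by (simp add: lin_diff req_def' cst_def)
  next
    assume "s \<in> {sg (x, y, sm c z) 1 - sg (x, y, z) c |c x y z. True}"
    then obtain c x y z where "s = sg (x, y, sm c z) 1 - sg (x, y, z) c" by blast
    then show ?thesis using a6[of x y c z] by (simp add: lin_diff req_def' cst_def)
  qed
  have "inI (lin ?h (fsum L - fsum M))"
    by (rule kspan_lin[OF rel]) (use t in \<open>simp_all add: teq3_def\<close>)
  then show ?thesis by (simp add: lin_diff lin_fsum req_def')
qed

lemma teq2_prod:
  assumes f: "lmod f" and g: "lmod g" and t: "teq2 sm L M"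
  shows "sum_list (map (\<lambda>(x, y). f x * g y) L) \<simeq> sum_list (map (\<lambda>(x, y). f x * g y) M)"
proof (rule teq2_I[OF _ _ _ _ t])
  fix x x' y
  show "f (x + x') * g y \<simeq> f x * g y + f x' * g y"
    using req_mult[OF lmodD(1)[OF f] req_refl] by (simp add: distrib_right)
next
  fix x y y'
  show "f x * g (y + y') \<simeq> f x * g y + f x * g y'"
    using req_mult[OF req_refl lmodD(1)[OF g]] by (simp add: distrib_left)
next
  fix c x y
  show "f (sm c x) * g y \<simeq> cst c * (f x * g y)"
    using req_mult[OF lmodD(2)[OF f] req_refl] by (simp add: mult.assoc)
next
  fix c x y
  have eq: "cst c * (f x * g y) = f x * (cst c * g y)" by (simp add: mult_ac)
  show "f x * g (sm c y) \<simeq> cst c * (f x * g y)"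
    unfolding eq by (rule req_mult[OF req_refl lmodD(2)[OF g]])
qed

lemma teq3_prod:
  assumes f: "lmod f" and g: "lmod g" and h: "lmod h" and t: "teq3 sm L M"
  shows "sum_list (map (\<lambda>(x, y, z). f x * g y * h z) L) \<simeq> sum_list (map (\<lambda>(x, y, z). f x * g y * h z) M)"
proof (rule teq3_I[OF _ _ _ _ _ _ t])
  fix x x' y z
  show "f (x + x') * g y * h z \<simeq> f x * g y * h z + f x' * g y * h z"
    using req_mult[OF req_mult[OF lmodD(1)[OF f] req_refl] req_refl] by (simp add: distrib_right)
next
  fix x y y' z
  show "f x * g (y + y') * h z \<simeq> f x * g y * h z + f x * g y' * h z"
    using req_mult[OF req_mult[OF req_refl lmodD(1)[OF g]] req_refl] by (simp add: distrib_left distrib_right)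
next
  fix x y z z'
  show "f x * g y * h (z + z') \<simeq> f x * g y * h z + f x * g y * h z'"
    using req_mult[OF req_refl lmodD(1)[OF h]] by (simp add: distrib_left)
next
  fix c x y z
  show "f (sm c x) * g y * h z \<simeq> cst c * (f x * g y * h z)"
    using req_mult[OF req_mult[OF lmodD(2)[OF f] req_refl] req_refl] by (simp add: mult.assoc)
next
  fix c x y z
  have eq: "cst c * (f x * g y * h z) = f x * (cst c * g y) * h z" by (simp add: mult_ac)
  show "f x * g (sm c y) * h z \<simeq> cst c * (f x * g y * h z)"
    unfolding eq by (rule req_mult[OF req_mult[OF req_refl lmodD(2)[OF g]] req_refl])
next
  fix c x y z
  have eq: "cst c * (f x * g y * h z) = f x * g y * (cst c * h z)" by (simp add: mult_ac)
  show "f x * g y * h (sm c z) \<simeq> cst c * (f x * g y * h z)"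
    unfolding eq by (rule req_mult[OF req_refl lmodD(2)[OF h]])
qed

end


lemma sum_list_map_sum: "sum_list (map (\<lambda>t. \<Sum>m\<in>S. f m t) L) = (\<Sum>m\<in>S. sum_list (map (f m) L))"
  by (induction L) (simp_all add: sum.distrib)

lemma sum_list_map_mult_left: "sum_list (map (\<lambda>t. (c::'r::semiring_0) * f t) L) = c * sum_list (map f L)"
  by (induction L) (simp_all add: distrib_left)

lemma sum_list_map_mult_right: "sum_list (map (\<lambda>t. f t * (c::'r::semiring_0)) L) = sum_list (map f L) * c"
  by (induction L) (simp_all add: distrib_right)

lemma sum_list_map_uminus: "sum_list (map (\<lambda>t. - f t) L) = - sum_list (map f (L::'b list)) "
  for f :: "'b \<Rightarrow> 'r::ab_group_add"
  by (induction L) simp_all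

context ctx begin

definition tsum :: "('a \<Rightarrow> ('a, 'k) rpoly) \<Rightarrow> ('a \<Rightarrow> ('a, 'k) rpoly) \<Rightarrow> ('a \<times> 'a) list \<Rightarrow> ('a, 'k) rpoly" where
  "tsum f g L = sum_list (map (\<lambda>(x, y). f x * g y) L)"

lemma tsum_append: "tsum f g (L @ M) = tsum f g L + tsum f g M"
  by (simp add: tsum_def)

lemma tsum_Nil[simp]: "tsum f g [] = 0"
  by (simp add: tsum_def)

lemma tsum_cong: "(\<And>x. f x \<simeq> f' x) \<Longrightarrow> (\<And>y. g y \<simeq> g' y) \<Longrightarrow> tsum f g L \<simeq> tsum f' g' L"
  unfolding tsum_def by (rule req_sum_list) (auto intro: req_mult)

lemma tsum_map1: "tsum f g (map (\<lambda>(u, v). (h u, v)) L) = tsum (\<lambda>u. f (h u)) g L"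
  by (induction L) (auto simp: tsum_def)

lemma tsum_map2: "tsum f g (map (\<lambda>(u, v). (u, h v)) L) = tsum f (\<lambda>v. g (h v)) L"
  by (induction L) (auto simp: tsum_def)

lemma tsum_swapmap: "tsum f g (map (\<lambda>(u, v). (h v, u)) L) = tsum g (\<lambda>v. f (h v)) L"
  by (induction L) (auto simp: tsum_def mult.commute)

lemma tsum_sum1: "tsum (\<lambda>x. \<Sum>m\<in>S. f m x) g L = (\<Sum>m\<in>S. tsum (f m) g L)"
  by (induction L) (auto simp: tsum_def sum.distrib sum_distrib_right)

lemma tsum_sum2: "tsum f (\<lambda>x. \<Sum>m\<in>S. g m x) L = (\<Sum>m\<in>S. tsum f (g m) L)"
  by (induction L) (auto simp: tsum_def sum.distrib sum_distrib_left)

lemma tsum_mult1: "tsum (\<lambda>x. f x * r) g L = tsum f g L * r"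
  by (induction L) (auto simp: tsum_def algebra_simps)

lemma tsum_mult1': "tsum (\<lambda>x. r * f x) g L = r * tsum f g L"
  by (induction L) (auto simp: tsum_def algebra_simps)

lemma tsum_mult2: "tsum f (\<lambda>x. g x * r) L = tsum f g L * r"
  by (induction L) (auto simp: tsum_def algebra_simps)

lemma tsum_mult2': "tsum f (\<lambda>x. r * g x) L = r * tsum f g L"
  by (induction L) (auto simp: tsum_def algebra_simps)

lemma tsum_uminus1: "tsum (\<lambda>x. - f x) g L = - tsum f g L"
  by (induction L) (auto simp: tsum_def)
lemma tsum_uminus2: "tsum f (\<lambda>x. - g x) L = - tsum f g L"
  by (induction L) (auto simp: tsum_def)
lemma tsum_add1: "tsum (\<lambda>x. f x + f' x) g L = tsum f g L + tsum f' g L"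
  by (induction L) (auto simp: tsum_def algebra_simps)
lemma tsum_add2: "tsum f (\<lambda>x. g x + g' x) L = tsum f g L + tsum f g' L"
  by (induction L) (auto simp: tsum_def algebra_simps)

lemma tsum_teq2: "lmod f \<Longrightarrow> lmod g \<Longrightarrow> teq2 sm L M \<Longrightarrow> tsum f g L \<simeq> tsum f g M"
  unfolding tsum_def by (rule teq2_prod)

lemma db_props:
  "teq2 sm (dbr (x + x') y) (dbr x y @ dbr x' y)"
  "teq2 sm (dbr x (y + y')) (dbr x y @ dbr x y')"
  "teq2 sm (dbr (sm c x) y) (map (\<lambda>(u, v). (sm c u, v)) (dbr x y))"
  "teq2 sm (dbr x (sm c y)) (map (\<lambda>(u, v). (sm c u, v)) (dbr x y))"
  "teq2 sm (dbr a b) (map (\<lambda>(u, v). (sm (-1) v, u)) (dbr b a))"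
  "teq2 sm (dbr a (b * d)) (map (\<lambda>(u, v). (u, v * d)) (dbr a b) @ map (\<lambda>(u, v). (b * u, v)) (dbr a d))"
  using dbrP by (simp_all add: double_bracket_def)

lemma db_B: "inB sm K e b \<Longrightarrow> teq2 sm (dbr b x) [] \<and> teq2 sm (dbr x b) []"
  using dbrP unfolding double_bracket_def by blast

lemma sm_props: "sm c (x + y) = sm c x + sm c y" "sm (c + d) x = sm c x + sm d x"
  "sm (c * d) x = sm c (sm d x)" "sm 1 x = x" "sm c (x * y) = sm c x * y" "sm c (x * y) = x * sm c y"
  using kalg unfolding kalgebra_def by blast+

lemma sm_zero: "sm 0 x = 0"
  using sm_props(2)[of 0 0 x] by simp

lemma inB_e: "s < K \<Longrightarrow> inB sm K e (e s)"
proof -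
  assume s: "s < K"
  have "(\<Sum>t<K. sm (if t = s then 1 else 0) (e t)) = (\<Sum>t<K. if t = s then e s else 0)"
    by (rule sum.cong) (auto simp: sm_zero sm_props(4))
  also have "\<dots> = e s" using s by simp
  finally have "e s = (\<Sum>t<K. sm (if t = s then 1 else 0) (e t))" by simp
  then show ?thesis unfolding inB_def by (rule exI[where x="\<lambda>t. if t = s then 1 else 0"])
qed

lemma tsum_sm1: "lmod f \<Longrightarrow> tsum f g (map (\<lambda>(u, v). (sm c u, v)) L) \<simeq> cst c * tsum f g L"
proof -
  assume f: "lmod f"
  have "tsum f g (map (\<lambda>(u, v). (sm c u, v)) L) = tsum (\<lambda>u. f (sm c u)) g L" by (rule tsum_map1)
  also have "\<dots> \<simeq> tsum (\<lambda>u. cst c * f u) g L" by (rule tsum_cong) (use f lmodD(2) in auto)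
  also have "\<dots> = cst c * tsum f g L" by (rule tsum_mult1')
  finally show ?thesis .
qed

lemma lmod_comp_right: "lmod f \<Longrightarrow> lmod (\<lambda>v. f (v * y))"
proof (rule lmodI)
  fix a b assume "lmod f"
  show "f ((a + b) * y) \<simeq> f (a * y) + f (b * y)"
    using lmodD(1)[OF \<open>lmod f\<close>, of "a*y" "b*y"] by (simp add: distrib_right)
next
  fix c a assume "lmod f"
  show "f (sm c a * y) \<simeq> cst c * f (a * y)"
    using lmodD(2)[OF \<open>lmod f\<close>, of c "a*y"] by (simp add: sm_props(5))
qed

lemma lmod_comp_left: "lmod f \<Longrightarrow> lmod (\<lambda>v. f (y * v))"
proof (rule lmodI)
  fix a b assume "lmod f"
  show "f (y * (a + b)) \<simeq> f (y * a) + f (y * b)"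
    using lmodD(1)[OF \<open>lmod f\<close>, of "y*a" "y*b"] by (simp add: distrib_left)
next
  fix c a assume "lmod f"
  show "f (y * sm c a) \<simeq> cst c * f (y * a)"
    using lmodD(2)[OF \<open>lmod f\<close>, of c "y*a"] by (simp add: sm_props(6)[symmetric])
qed

lemma tsum_anti: "lmod f \<Longrightarrow> lmod g \<Longrightarrow> tsum f g (dbr a b) \<simeq> - tsum g f (dbr b a)"
proof -
  assume f: "lmod f" and g: "lmod g"
  have "tsum f g (dbr a b) \<simeq> tsum f g (map (\<lambda>(u, v). (sm (-1) v, u)) (dbr b a))"
    by (rule tsum_teq2[OF f g db_props(5)])
  also have "\<dots> = tsum g (\<lambda>v. f (sm (-1) v)) (dbr b a)" by (rule tsum_swapmap)
  also have "\<dots> \<simeq> tsum g (\<lambda>v. cst (-1) * f v) (dbr b a)"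
    by (rule tsum_cong) (use f lmodD(2) in auto)
  also have "\<dots> = - tsum g f (dbr b a)" by (simp add: cst_uminus tsum_uminus2)
  finally show ?thesis .
qed

lemma lmod_tsum1: "lmod f \<Longrightarrow> lmod g \<Longrightarrow> lmod (\<lambda>a. tsum f g (dbr a b))"
proof (rule lmodI)
  fix x y assume f: "lmod f" and g: "lmod g"
  show "tsum f g (dbr (x + y) b) \<simeq> tsum f g (dbr x b) + tsum f g (dbr y b)"
    using tsum_teq2[OF f g db_props(1)] by (simp add: tsum_append)
next
  fix c x assume f: "lmod f" and g: "lmod g"
  show "tsum f g (dbr (sm c x) b) \<simeq> cst c * tsum f g (dbr x b)"
    using req_trans[OF tsum_teq2[OF f g db_props(3)] tsum_sm1[OF f]] .
qed

lemma lmod_tsum2: "lmod f \<Longrightarrow> lmod g \<Longrightarrow> lmod (\<lambda>b. tsum f g (dbr a b))"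
proof (rule lmodI)
  fix x y assume f: "lmod f" and g: "lmod g"
  show "tsum f g (dbr a (x + y)) \<simeq> tsum f g (dbr a x) + tsum f g (dbr a y)"
    using tsum_teq2[OF f g db_props(2)] by (simp add: tsum_append)
next
  fix c x assume f: "lmod f" and g: "lmod g"
  show "tsum f g (dbr a (sm c x)) \<simeq> cst c * tsum f g (dbr a x)"
    using req_trans[OF tsum_teq2[OF f g db_props(4)] tsum_sm1[OF f]] .
qed

lemma tsum_leib2: "lmod f \<Longrightarrow> lmod g \<Longrightarrow>
  tsum f g (dbr a (b * c)) \<simeq> tsum f (\<lambda>v. g (v * c)) (dbr a b) + tsum (\<lambda>u. f (b * u)) g (dbr a c)"
proof -
  assume f: "lmod f" and g: "lmod g"
  show ?thesis using tsum_teq2[OF f g db_props(6)] by (simp add: tsum_append tsum_map1 tsum_map2)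
qed

lemma tsum_leib1: "lmod f \<Longrightarrow> lmod g \<Longrightarrow>
  tsum f g (dbr (x * y) b) \<simeq> tsum (\<lambda>v. f (v * y)) g (dbr x b) + tsum f (\<lambda>u. g (x * u)) (dbr y b)"
proof -
  assume f: "lmod f" and g: "lmod g"
  have "tsum f g (dbr (x * y) b) \<simeq> - tsum g f (dbr b (x * y))" by (rule tsum_anti[OF f g])
  also have "\<dots> \<simeq> - (tsum g (\<lambda>v. f (v * y)) (dbr b x) + tsum (\<lambda>u. g (x * u)) f (dbr b y))"
    by (rule req_uminus[OF tsum_leib2[OF g f]])
  also have "\<dots> = (- tsum g (\<lambda>v. f (v * y)) (dbr b x)) + (- tsum (\<lambda>u. g (x * u)) f (dbr b y))"
    by simp
  also have "\<dots> \<simeq> tsum (\<lambda>v. f (v * y)) g (dbr x b) + tsum f (\<lambda>u. g (x * u)) (dbr y b)"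
  proof (rule req_add)
    have h1: "tsum g (\<lambda>v. f (v * y)) (dbr b x) \<simeq> - tsum (\<lambda>v. f (v * y)) g (dbr x b)"
      by (rule tsum_anti[OF g lmod_comp_right[OF f]])
    show "- tsum g (\<lambda>v. f (v * y)) (dbr b x) \<simeq> tsum (\<lambda>v. f (v * y)) g (dbr x b)"
      using req_uminus[OF h1] by simp
    have h2: "tsum (\<lambda>u. g (x * u)) f (dbr b y) \<simeq> - tsum f (\<lambda>u. g (x * u)) (dbr y b)"
      by (rule tsum_anti[OF lmod_comp_left[OF g] f])
    show "- tsum (\<lambda>u. g (x * u)) f (dbr b y) \<simeq> tsum f (\<lambda>u. g (x * u)) (dbr y b)"
      using req_uminus[OF h2] by simp
  qed
  finally show ?thesis .
qed

lemma ind_br_tsum: "ind_br dbr a b i j k l = tsum (\<lambda>x. X x k j) (\<lambda>y. X y i l) (dbr a b)"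
  by (simp add: ind_br_def tsum_def)

end


context ctx begin

lemma rpoly_induct:
  fixes Q :: "('a, 'k) rpoly \<Rightarrow> bool"
  assumes cst: "\<And>c. Q (cst c)" and var: "\<And>a i j. Q (X a i j)"
    and add: "\<And>p q. Q p \<Longrightarrow> Q q \<Longrightarrow> Q (p + q)"
    and mul: "\<And>p q. Q p \<Longrightarrow> Q q \<Longrightarrow> Q (p * q)"
  shows "Q p"
proof (rule poly_induct)
  fix c show "Q (sg 0 c)" using cst by (simp add: cst_def)
next
  fix v :: "'a \<times> nat \<times> nat"
  obtain a i j where "v = (a, i, j)" by (cases v) auto
  then show "Q (sg (sg v 1) 1)" using var[of a i j] by (simp add: Xv_def)
qed (use add mul in auto)

definition G :: "'a \<times> nat \<times> nat \<Rightarrow> 'a \<times> nat \<times> nat \<Rightarrow> ('a, 'k) rpoly" where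
  "G v w = (case v of (a, i, j) \<Rightarrow> (case w of (b, k, l) \<Rightarrow> ind_br dbr a b i j k l))"

definition br :: "('a, 'k) rpoly \<Rightarrow> ('a, 'k) rpoly \<Rightarrow> ('a, 'k) rpoly" where
  "br p q = pder (\<lambda>v. pder (G v) q) p"

lemma br_add1: "br (p + q) r = br p r + br q r"
  by (simp add: br_def pder_add)
lemma br_add2: "br p (q + r) = br p q + br p r"
  by (simp add: br_def pder_add pder_dadd)
lemma br_mult1: "br (p * q) r = br p r * q + p * br q r"
  by (simp add: br_def pder_mult)
lemma br_mult2: "br p (q * r) = br p q * r + q * br p r"
  by (simp add: br_def pder_mult pder_dadd pder_dmult pder_dmult_left)
lemma br_cst1[simp]: "br (cst c) q = 0"
  by (simp add: br_def cst_def pder_const)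
lemma br_cst2[simp]: "br p (cst c) = 0"
  by (simp add: br_def cst_def pder_const pder_dzero)
lemma br_zero1[simp]: "br 0 q = 0"
  using br_cst1[of 0 q] by simp
lemma br_zero2[simp]: "br p 0 = 0"
  using br_cst2[of p 0] by simp
lemma br_XX: "br (X a i j) (X b k l) = ind_br dbr a b i j k l"
  unfolding br_def Xv_def pder_var by (simp add: G_def)
lemma br_uminus1: "br (- p) q = - br p q"
  by (simp add: br_def pder_uminus)
lemma br_uminus2: "br p (- q) = - br p q"
  using br_add2[of p q "-q"] by (simp add: eq_neg_iff_add_eq_0 add.commute)
lemma br_diff1: "br (p - q) r = br p r - br q r"
  by (simp add: br_def pder_diff)
lemma br_diff2: "br p (q - r) = br p q - br p r"
  using br_add2[of p q "-r"] br_uminus2[of p r] by simp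
lemma br_sum1: "br (\<Sum>i\<in>S. f i) q = (\<Sum>i\<in>S. br (f i) q)"
  by (induction S rule: infinite_finite_induct) (simp_all add: br_add1)
lemma br_sum2: "br p (\<Sum>i\<in>S. f i) = (\<Sum>i\<in>S. br p (f i))"
  by (induction S rule: infinite_finite_induct) (simp_all add: br_add2)
lemma br_cmult1: "br (cst c * p) q = cst c * br p q"
  by (simp add: br_mult1)
lemma br_cmult2: "br p (cst c * q) = cst c * br p q"
  by (simp add: br_mult2)

lemma der_vanish:
  assumes cst: "\<And>c. inI (D (cst c))" and var: "\<And>a i j. inI (D (X a i j))"
    and add: "\<And>p q. D (p + q) = D p + D q"
    and mul: "\<And>p q. D (p * q) = D p * q + p * D q"
  shows "inI (D p)"
proof (induction p rule: rpoly_induct)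
  case (3 p q) then show ?case by (simp add: add Iadd)
next
  case (4 p q) then show ?case by (simp add: mul Iadd Imult Imult2)
qed (use cst var in auto)

lemma ind_br_anti: "ind_br dbr a b i j k l \<simeq> - ind_br dbr b a k l i j"
  unfolding ind_br_tsum by (rule tsum_anti[OF lmod_X lmod_X])

lemma br_anti_I: "inI (br p q + br q p)"
proof -
  have gen: "inI (br (X a i j) q + br q (X a i j))" for a i j
    by (rule der_vanish[where D="\<lambda>q. br (X a i j) q + br q (X a i j)"])
      (use ind_br_anti in \<open>auto simp: br_XX br_add1 br_add2 br_mult1 br_mult2 req_def' algebra_simps\<close>)
  show ?thesis
    by (rule der_vanish[where D="\<lambda>p. br p q + br q p"])
      (use gen in \<open>auto simp: br_add1 br_add2 br_mult1 br_mult2 algebra_simps\<close>)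
qed

lemma br_anti: "br p q \<simeq> - br q p"
  using br_anti_I[of p q] by (simp add: req_def')

lemma tsum_zero1: "(\<And>x. f x \<simeq> 0) \<Longrightarrow> tsum f g L \<simeq> 0"
proof -
  assume "\<And>x. f x \<simeq> 0"
  then have "tsum f g L \<simeq> tsum (\<lambda>x. 0) g L" by (intro tsum_cong) auto
  also have "tsum (\<lambda>x. 0) g L = 0" by (induction L) (auto simp: tsum_def)
  finally show ?thesis .
qed

lemma tsum_zero2: "(\<And>x. g x \<simeq> 0) \<Longrightarrow> tsum f g L \<simeq> 0"
proof -
  assume "\<And>x. g x \<simeq> 0"
  then have "tsum f g L \<simeq> tsum f (\<lambda>x. 0) L" by (intro tsum_cong) auto
  also have "tsum f (\<lambda>x. 0) L = 0" by (induction L) (auto simp: tsum_def)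
  finally show ?thesis .
qed

lemma tsum_teq2_nil: "lmod f \<Longrightarrow> lmod g \<Longrightarrow> teq2 sm L [] \<Longrightarrow> tsum f g L \<simeq> 0"
  using tsum_teq2 by fastforce

lemma rel_gen:
  assumes g: "g \<in> Rrels sm K e \<alpha>"
  shows "inI (br g (X b k l))"
  using g unfolding Rrels_def Let_def
proof (elim UnE)
  assume "g \<in> {Xv (x + y) i j - Xv x i j - Xv y i j |x y i j. i < NN \<and> j < NN}"
  then obtain x y i j where gg: "g = X (x + y) i j - X x i j - X y i j" by blast
  have "ind_br dbr (x + y) b i j k l \<simeq> ind_br dbr x b i j k l + ind_br dbr y b i j k l"
    unfolding ind_br_tsum by (rule lmodD(1)[OF lmod_tsum1[OF lmod_X lmod_X]])
  then show ?thesis by (simp add: gg br_diff1 br_add1 br_XX req_def' diff_diff_eq)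
next
  assume "g \<in> {Xv (sm c x) i j - cst c * Xv x i j |c x i j. i < NN \<and> j < NN}"
  then obtain c x i j where gg: "g = X (sm c x) i j - cst c * X x i j" by blast
  have "ind_br dbr (sm c x) b i j k l \<simeq> cst c * ind_br dbr x b i j k l"
    unfolding ind_br_tsum by (rule lmodD(2)[OF lmod_tsum1[OF lmod_X lmod_X]])
  then show ?thesis by (simp add: gg br_diff1 br_XX br_cmult1 req_def')
next
  assume "g \<in> {Xv (x * y) i j - (\<Sum>k<NN. Xv x i k * Xv y k j) |x y i j. i < NN \<and> j < NN}"
  then obtain x y i j where gg: "g = X (x * y) i j - (\<Sum>m<NN. X x i m * X y m j)" by blast
  have "ind_br dbr (x * y) b i j k l = tsum (\<lambda>u. X u k j) (\<lambda>v. X v i l) (dbr (x * y) b)"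
    by (rule ind_br_tsum)
  also have "\<dots> \<simeq> tsum (\<lambda>u. X (u * y) k j) (\<lambda>v. X v i l) (dbr x b)
       + tsum (\<lambda>u. X u k j) (\<lambda>v. X (x * v) i l) (dbr y b)"
    by (rule tsum_leib1[OF lmod_X lmod_X])
  also have "\<dots> \<simeq> tsum (\<lambda>u. \<Sum>m<NN. X u k m * X y m j) (\<lambda>v. X v i l) (dbr x b)
       + tsum (\<lambda>u. X u k j) (\<lambda>v. \<Sum>m<NN. X x i m * X v m l) (dbr y b)"
    by (intro req_add tsum_cong R3 req_refl)
  also have "\<dots> = (\<Sum>m<NN. ind_br dbr x b i m k l * X y m j) + (\<Sum>m<NN. X x i m * ind_br dbr y b m j k l)"
    by (simp add: tsum_sum1 tsum_sum2 tsum_mult1 tsum_mult2' ind_br_tsum)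
  also have "\<dots> = br (\<Sum>m<NN. X x i m * X y m j) (X b k l)"
    by (simp add: br_sum1 br_mult1 br_XX sum.distrib)
  finally show ?thesis by (simp add: gg br_diff1 br_XX req_def')
next
  assume "g \<in> {Xv (e s) i j - cst (eblk \<alpha> s i j) |s i j. s < K \<and> i < NN \<and> j < NN}"
  then obtain s i j where gg: "g = X (e s) i j - cst (eblk \<alpha> s i j)" and s: "s < K" by blast
  have "ind_br dbr (e s) b i j k l \<simeq> 0"
    unfolding ind_br_tsum using db_B[OF inB_e[OF s]] by (intro tsum_teq2_nil lmod_X) auto
  then show ?thesis by (simp add: gg br_diff1 br_XX req_def')
next
  assume "g \<in> {Xv x i j |x i j. \<not> (i < NN \<and> j < NN)}"
  then obtain x i j where gg: "g = X x i j" and ij: "\<not> (i < NN \<and> j < NN)" by blast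
  have "ind_br dbr x b i j k l \<simeq> 0"
  proof (cases "j < NN")
    case True
    then have "\<not> i < NN" using ij by simp
    then show ?thesis unfolding ind_br_tsum by (intro tsum_zero2 R5') simp
  next
    case False
    then show ?thesis unfolding ind_br_tsum by (intro tsum_zero1 R5') simp
  qed
  then show ?thesis by (simp add: gg br_XX req_def')
qed

lemma rel_left: "g \<in> Rrels sm K e \<alpha> \<Longrightarrow> inI (br g q)"
  by (rule der_vanish[where D="br g"]) (auto simp: rel_gen br_add2 br_mult2)

lemma I_left: "inI x \<Longrightarrow> inI (br x q)"
  unfolding Irel_def
proof (induction x rule: igen.induct)
  case igen_zero then show ?case by (simp add: Irel_def[symmetric])
next
  case (igen_step g p r)
  have "br (r * g + p) q = br r q * g + r * br g q + br p q" by (simp add: br_add1 br_mult1)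
  moreover have "inI (br r q * g)" using Igen[OF igen_step(1)] by (rule Imult)
  moreover have "inI (r * br g q)" using rel_left[OF igen_step(1)] by (rule Imult)
  ultimately show ?case using igen_step(3) by (simp add: Irel_def[symmetric] Iadd)
qed

lemma I_right: "inI x \<Longrightarrow> inI (br q x)"
proof -
  assume "inI x"
  then have "inI (- br x q)" using I_left Iuminus by blast
  moreover have "inI (br q x - (- br x q))" using br_anti[of q x] by (simp add: req_def')
  ultimately show ?thesis using Iadd by fastforce
qed

lemma br_wd: "p \<simeq> p' \<Longrightarrow> q \<simeq> q' \<Longrightarrow> br p q \<simeq> br p' q'"
proof -
  assume a: "p \<simeq> p'" "q \<simeq> q'"
  have "br p q - br p' q' = br (p - p') q + br p' (q - q')"
    by (simp add: br_diff1 br_diff2)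
  then show ?thesis using a I_left I_right Iadd unfolding req_def' by metis
qed

end


context ctx begin

lemma tsum_diff1: "tsum (\<lambda>x. f x - f' x) g L = tsum f g L - tsum f' g L"
  by (induction L) (auto simp: tsum_def algebra_simps)
lemma tsum_diff2: "tsum f (\<lambda>x. g x - g' x) L = tsum f g L - tsum f g' L"
  by (induction L) (auto simp: tsum_def algebra_simps)

abbreviation eR where "eR \<eta> \<equiv> etaR K \<alpha> \<eta>"

lemma eR_add: "eR \<eta> (p + q) = eR \<eta> p + eR \<eta> q"
  by (simp add: etaR_def pder_add)
lemma eR_mult: "eR \<eta> (p * q) = eR \<eta> p * q + p * eR \<eta> q"
  by (simp add: etaR_def pder_mult)
lemma eR_cst[simp]: "eR \<eta> (cst c) = 0"
  by (simp add: etaR_def cst_def pder_const)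
lemma eR_diff: "eR \<eta> (p - q) = eR \<eta> p - eR \<eta> q"
  by (simp add: etaR_def pder_diff)
lemma eR_sum: "eR \<eta> (\<Sum>i\<in>S. f i) = (\<Sum>i\<in>S. eR \<eta> (f i))"
  by (simp add: etaR_def pder_sum)
lemma eR_zero[simp]: "eR \<eta> 0 = 0"
  using eR_cst[of \<eta> 0] by simp
lemma eR_X: "eR \<eta> (X a i j) = (if i < NN \<and> j < NN then
    (\<Sum>m<NN. X a i m * cst (\<eta> m j) - cst (\<eta> i m) * X a m j) else 0)"
  unfolding etaR_def Xv_def pder_var by (simp add: Let_def Xv_def)

definition Ecom :: "(nat \<Rightarrow> nat \<Rightarrow> 'k) \<Rightarrow> 'a \<Rightarrow> nat \<Rightarrow> nat \<Rightarrow> ('a, 'k) rpoly" where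
  "Ecom \<eta> a i j = (\<Sum>m<NN. X a i m * cst (\<eta> m j) - cst (\<eta> i m) * X a m j)"

lemma eR_X_mod:
  assumes "in_galpha K \<alpha> \<eta>"
  shows "eR \<eta> (X a i j) \<simeq> Ecom \<eta> a i j"
proof (cases "i < NN \<and> j < NN")
  case True then show ?thesis by (simp add: eR_X Ecom_def)
next
  case False
  have z: "\<eta> i m = 0" if "\<not> i < NN" for i m
    using assms that by (auto simp: in_galpha_def)
  have z2: "\<eta> m j = 0" if "\<not> j < NN" for j m
    using assms that by (auto simp: in_galpha_def)
  have "Ecom \<eta> a i j \<simeq> 0"
    unfolding Ecom_def
  proof (rule req_zero, rule Isum)
    fix m
    show "inI (X a i m * cst (\<eta> m j) - cst (\<eta> i m) * X a m j)"
    proof (cases "i < NN")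
      case True
      then have "\<not> j < NN" using False by simp
      then show ?thesis using z2[of j m] R5[of m j a] by (simp add: Imult Iuminus)
    next
      case False
      then show ?thesis using z[of i m] R5[of i m a] by (simp add: Imult2)
    qed
  qed
  moreover have "eR \<eta> (X a i j) = 0" using False by (simp only: eR_X if_False)
  ultimately show ?thesis using req_sym by simp
qed

lemma eR_tsum: "eR \<eta> (tsum f g L) = tsum (\<lambda>u. eR \<eta> (f u)) g L + tsum f (\<lambda>v. eR \<eta> (g v)) L"
  by (induction L) (auto simp: tsum_def eR_add eR_mult)

lemma eta_gen:
  assumes eta: "in_galpha K \<alpha> \<eta>"
  shows "eR \<eta> (ind_br dbr a b i j k l) \<simeq> br (eR \<eta> (X a i j)) (X b k l) + br (X a i j) (eR \<eta> (X b k l))"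
proof -
  let ?L = "dbr a b"
  have "eR \<eta> (ind_br dbr a b i j k l) = tsum (\<lambda>u. eR \<eta> (X u k j)) (\<lambda>v. X v i l) ?L
      + tsum (\<lambda>u. X u k j) (\<lambda>v. eR \<eta> (X v i l)) ?L"
    by (simp add: ind_br_tsum eR_tsum)
  also have "\<dots> \<simeq> tsum (\<lambda>u. Ecom \<eta> u k j) (\<lambda>v. X v i l) ?L + tsum (\<lambda>u. X u k j) (\<lambda>v. Ecom \<eta> v i l) ?L"
    by (intro req_add tsum_cong eR_X_mod[OF eta] req_refl)
  also have "\<dots> = br (Ecom \<eta> a i j) (X b k l) + br (X a i j) (Ecom \<eta> b k l)"
    by (simp add: Ecom_def tsum_sum1 tsum_sum2 tsum_diff1 tsum_diff2 tsum_mult1 tsum_mult1'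
        tsum_mult2 tsum_mult2' br_sum1 br_sum2 br_diff1 br_diff2 br_mult1 br_mult2 br_XX ind_br_tsum
        sum_subtractf algebra_simps)
  also have "\<dots> \<simeq> br (eR \<eta> (X a i j)) (X b k l) + br (X a i j) (eR \<eta> (X b k l))"
    by (intro req_add br_wd req_refl req_sym[OF eR_X_mod[OF eta]])
  finally show ?thesis .
qed

lemma eta_inv:
  assumes eta: "in_galpha K \<alpha> \<eta>"
  shows "eR \<eta> (br p q) \<simeq> br (eR \<eta> p) q + br p (eR \<eta> q)"
proof -
  have gen: "inI (eR \<eta> (br (X a i j) q) - br (eR \<eta> (X a i j)) q - br (X a i j) (eR \<eta> q))" for a i j
    by (rule der_vanish[where D="\<lambda>q. eR \<eta> (br (X a i j) q) - br (eR \<eta> (X a i j)) q - br (X a i j) (eR \<eta> q)"])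
      (use eta_gen[OF eta] in \<open>auto simp: br_XX br_add2 br_mult2 eR_add eR_mult req_def' algebra_simps\<close>)
  have "inI (eR \<eta> (br p q) - br (eR \<eta> p) q - br p (eR \<eta> q))"
    by (rule der_vanish[where D="\<lambda>p. eR \<eta> (br p q) - br (eR \<eta> p) q - br p (eR \<eta> q)"])
      (use gen in \<open>auto simp: br_add1 br_mult1 eR_add eR_mult algebra_simps\<close>)
  then show ?thesis by (simp add: req_def' diff_diff_eq)
qed

end


lemma swap4: "(\<Sum>p\<in>A. \<Sum>q\<in>B. \<Sum>r\<in>C. \<Sum>s\<in>D. F p q r s) = (\<Sum>p\<in>A. \<Sum>s\<in>D. \<Sum>r\<in>C. \<Sum>q\<in>B. F p q r s)"
proof (rule sum.cong[OF refl])
  fix p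
  have "(\<Sum>q\<in>B. \<Sum>r\<in>C. \<Sum>s\<in>D. F p q r s) = (\<Sum>q\<in>B. \<Sum>s\<in>D. \<Sum>r\<in>C. F p q r s)"
    by (rule sum.cong[OF refl], rule sum.swap)
  also have "\<dots> = (\<Sum>s\<in>D. \<Sum>q\<in>B. \<Sum>r\<in>C. F p q r s)"
    by (rule sum.swap)
  also have "\<dots> = (\<Sum>s\<in>D. \<Sum>r\<in>C. \<Sum>q\<in>B. F p q r s)"
    by (rule sum.cong[OF refl], rule sum.swap)
  finally show "(\<Sum>q\<in>B. \<Sum>r\<in>C. \<Sum>s\<in>D. F p q r s) = (\<Sum>s\<in>D. \<Sum>r\<in>C. \<Sum>q\<in>B. F p q r s)" .
qed

context ctx begin

abbreviation gR where "gR g h \<equiv> gactR K \<alpha> g h"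

lemma gR_add: "gR g h (p + q) = gR g h p + gR g h q"
  by (simp add: gactR_def psubst_add)
lemma gR_mult: "gR g h (p * q) = gR g h p * gR g h q"
  by (simp add: gactR_def psubst_mult)
lemma gR_cst[simp]: "gR g h (cst c) = cst c"
  by (simp add: gactR_def cst_def psubst_const)
lemma gR_zero[simp]: "gR g h 0 = 0"
  using gR_cst[of g h 0] by simp
lemma gR_X: "gR g h (X a i j) = (if i < NN \<and> j < NN then
    (\<Sum>k<NN. \<Sum>l<NN. cst (h i k) * X a k l * cst (g l j)) else X a i j)"
  unfolding gactR_def Xv_def psubst_var by (simp add: Let_def Xv_def)

definition Gm :: "(nat \<Rightarrow> nat \<Rightarrow> 'k) \<Rightarrow> (nat \<Rightarrow> nat \<Rightarrow> 'k) \<Rightarrow> 'a \<Rightarrow> nat \<Rightarrow> nat \<Rightarrow> ('a, 'k) rpoly" where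
  "Gm g h a i j = (\<Sum>p<NN. \<Sum>q<NN. cst (h i p) * X a p q * cst (g q j))"

lemma gR_X_mod:
  assumes g: "in_galpha K \<alpha> g" and h: "in_galpha K \<alpha> h"
  shows "gR g h (X a i j) \<simeq> Gm g h a i j"
proof (cases "i < NN \<and> j < NN")
  case True then show ?thesis by (simp add: gR_X Gm_def)
next
  case False
  have "Gm g h a i j = 0"
  proof (cases "i < NN")
    case True
    then have "\<not> j < NN" using False by simp
    then have "g q j = 0" for q using g by (auto simp: in_galpha_def)
    then show ?thesis by (simp add: Gm_def)
  next
    case False
    then have "h i p = 0" for p using h by (auto simp: in_galpha_def)
    then show ?thesis by (simp add: Gm_def)
  qed
  moreover have "gR g h (X a i j) = X a i j" using False by (simp only: gR_X if_False)
  ultimately show ?thesis using R5'[OF False] by simp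
qed

lemma gR_tsum: "gR g h (tsum f f' L) = tsum (\<lambda>u. gR g h (f u)) (\<lambda>v. gR g h (f' v)) L"
  by (induction L) (auto simp: tsum_def gR_add gR_mult)

lemma gl_gen:
  assumes g: "in_galpha K \<alpha> g" and h: "in_galpha K \<alpha> h"
  shows "gR g h (ind_br dbr a b i j k l) \<simeq> br (gR g h (X a i j)) (gR g h (X b k l))"
proof -
  let ?L = "dbr a b"
  have "gR g h (ind_br dbr a b i j k l) = tsum (\<lambda>u. gR g h (X u k j)) (\<lambda>v. gR g h (X v i l)) ?L"
    by (simp add: ind_br_tsum gR_tsum)
  also have "\<dots> \<simeq> tsum (\<lambda>u. Gm g h u k j) (\<lambda>v. Gm g h v i l) ?L"
    by (intro tsum_cong gR_X_mod[OF g h])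
  also have "\<dots> = (\<Sum>p<NN. \<Sum>q<NN. \<Sum>r<NN. \<Sum>s<NN.
      cst (h k p) * cst (g q j) * cst (h i r) * cst (g s l) * tsum (\<lambda>x. X x p q) (\<lambda>y. X y r s) ?L)"
    by (simp add: Gm_def tsum_sum1 tsum_sum2 tsum_mult1 tsum_mult1' tsum_mult2 tsum_mult2'
        sum_distrib_left sum_distrib_right mult_ac)
  also have "\<dots> = (\<Sum>p<NN. \<Sum>s<NN. \<Sum>r<NN. \<Sum>q<NN.
      cst (h k p) * cst (g q j) * cst (h i r) * cst (g s l) * tsum (\<lambda>x. X x p q) (\<lambda>y. X y r s) ?L)"
    by (rule swap4)
  also have "\<dots> = br (Gm g h a i j) (Gm g h b k l)"
    by (simp add: Gm_def br_sum1 br_sum2 br_mult1 br_mult2 br_XX ind_br_tsum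
        sum_distrib_left sum_distrib_right mult_ac)
  also have "\<dots> \<simeq> br (gR g h (X a i j)) (gR g h (X b k l))"
    by (intro br_wd req_sym[OF gR_X_mod[OF g h]])
  finally show ?thesis .
qed

lemma gl_inv:
  assumes g: "in_galpha K \<alpha> g" and h: "in_galpha K \<alpha> h"
  shows "gR g h (br p q) \<simeq> br (gR g h p) (gR g h q)"
proof -
  have gen: "inI (gR g h (br (X a i j) q) - br (gR g h (X a i j)) (gR g h q))" for a i j
  proof (induction q rule: rpoly_induct)
    case (1 c) then show ?case by simp
  next
    case (2 b k l) then show ?case using gl_gen[OF g h] by (simp add: br_XX req_def')
  next
    case (3 p q)
    have "gR g h (br (X a i j) (p + q)) - br (gR g h (X a i j)) (gR g h (p + q))
      = (gR g h (br (X a i j) p) - br (gR g h (X a i j)) (gR g h p))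
        + (gR g h (br (X a i j) q) - br (gR g h (X a i j)) (gR g h q))"
      by (simp add: br_add2 gR_add algebra_simps)
    then show ?case using 3 by (simp add: Iadd)
  next
    case (4 p q)
    have "gR g h (br (X a i j) (p * q)) - br (gR g h (X a i j)) (gR g h (p * q))
      = (gR g h (br (X a i j) p) - br (gR g h (X a i j)) (gR g h p)) * gR g h q
        + gR g h p * (gR g h (br (X a i j) q) - br (gR g h (X a i j)) (gR g h q))"
      by (simp add: br_mult2 gR_add gR_mult algebra_simps)
    then show ?case using 4 by (simp add: Iadd Imult Imult2)
  qed
  have "inI (gR g h (br p q) - br (gR g h p) (gR g h q))"
  proof (induction p rule: rpoly_induct)
    case (1 c) then show ?case by simp
  next
    case (2 a i j) then show ?case by (rule gen)
  next
    case (3 p p')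
    have "gR g h (br (p + p') q) - br (gR g h (p + p')) (gR g h q)
      = (gR g h (br p q) - br (gR g h p) (gR g h q)) + (gR g h (br p' q) - br (gR g h p') (gR g h q))"
      by (simp add: br_add1 gR_add algebra_simps)
    then show ?case using 3 by (simp add: Iadd)
  next
    case (4 p p')
    have "gR g h (br (p * p') q) - br (gR g h (p * p')) (gR g h q)
      = (gR g h (br p q) - br (gR g h p) (gR g h q)) * gR g h p'
        + gR g h p * (gR g h (br p' q) - br (gR g h p') (gR g h q))"
      by (simp add: br_mult1 gR_add gR_mult algebra_simps)
    then show ?case using 4 by (simp add: Iadd Imult Imult2)
  qed
  then show ?thesis by (simp add: req_def')
qed

end


lemma inblock_unique: "inblock \<alpha> s i \<Longrightarrow> inblock \<alpha> t i \<Longrightarrow> s = t"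
proof (rule ccontr)
  assume a: "inblock \<alpha> s i" "inblock \<alpha> t i" "s \<noteq> t"
  have key: "\<not> (inblock \<alpha> s i \<and> inblock \<alpha> t i)" if "s < t" for s t
  proof
    assume b: "inblock \<alpha> s i \<and> inblock \<alpha> t i"
    have "(\<Sum>r<s. \<alpha> r) + \<alpha> s = (\<Sum>r<Suc s. \<alpha> r)" by simp
    also have "\<dots> \<le> (\<Sum>r<t. \<alpha> r)" by (rule sum_mono2) (use that in auto)
    finally show False using b by (auto simp: inblock_def)
  qed
  show False using a key[of s t] key[of t s] by (cases "s < t") auto
qed

lemma inblock_exists: "i < (\<Sum>t<n. \<alpha> t) \<Longrightarrow> \<exists>s<n. inblock \<alpha> s i"
proof (induction n)
  case 0 then show ?case by simp
next
  case (Suc n)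
  show ?case
  proof (cases "i < (\<Sum>t<n. \<alpha> t)")
    case True then show ?thesis using Suc.IH by (meson less_SucI)
  next
    case False then show ?thesis using Suc.prems by (auto simp: inblock_def intro!: exI[of _ n])
  qed
qed

lemma sameblock_sym: "sameblock K \<alpha> i j \<Longrightarrow> sameblock K \<alpha> j i"
  by (auto simp: sameblock_def)

lemma sameblock_trans: "sameblock K \<alpha> i j \<Longrightarrow> sameblock K \<alpha> j k \<Longrightarrow> sameblock K \<alpha> i k"
  unfolding sameblock_def using inblock_unique by metis

lemma sameblock_refl: "i < dimN K \<alpha> \<Longrightarrow> sameblock K \<alpha> i i"
  using inblock_exists[of i \<alpha> K] by (auto simp: sameblock_def dimN_def)

lemma sw12: "(\<Sum>u\<in>S. \<Sum>v\<in>S. \<Sum>w\<in>S. f v u w) = (\<Sum>u\<in>S. \<Sum>v\<in>S. \<Sum>w\<in>S. f u v w)"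
  by (rule sum.swap)

lemma sw23: "(\<Sum>u\<in>S. \<Sum>v\<in>S. \<Sum>w\<in>S. f u w v) = (\<Sum>u\<in>S. \<Sum>v\<in>S. \<Sum>w\<in>S. f u v w)"
  by (rule sum.cong[OF refl], rule sum.swap)

lemma sw13: "(\<Sum>u\<in>S. \<Sum>v\<in>S. \<Sum>w\<in>S. f w v u) = (\<Sum>u\<in>S. \<Sum>v\<in>S. \<Sum>w\<in>S. f u v w)"
proof -
  have "(\<Sum>u\<in>S. \<Sum>v\<in>S. \<Sum>w\<in>S. f w v u) = (\<Sum>u\<in>S. \<Sum>w\<in>S. \<Sum>v\<in>S. f w v u)"
    by (rule sum.cong[OF refl], rule sum.swap)
  also have "\<dots> = (\<Sum>w\<in>S. \<Sum>u\<in>S. \<Sum>v\<in>S. f w v u)" by (rule sum.swap)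
  also have "\<dots> = (\<Sum>w\<in>S. \<Sum>v\<in>S. \<Sum>u\<in>S. f w v u)" by (rule sum.cong[OF refl], rule sum.swap)
  finally show ?thesis .
qed

lemma swc1: "(\<Sum>u\<in>S. \<Sum>v\<in>S. \<Sum>w\<in>S. f v w u) = (\<Sum>u\<in>S. \<Sum>v\<in>S. \<Sum>w\<in>S. f u v w)"
proof -
  have "(\<Sum>u\<in>S. \<Sum>v\<in>S. \<Sum>w\<in>S. f v w u) = (\<Sum>v\<in>S. \<Sum>u\<in>S. \<Sum>w\<in>S. f v w u)" by (rule sum.swap)
  also have "\<dots> = (\<Sum>v\<in>S. \<Sum>w\<in>S. \<Sum>u\<in>S. f v w u)" by (rule sum.cong[OF refl], rule sum.swap)
  finally show ?thesis .
qed

lemma swc2: "(\<Sum>u\<in>S. \<Sum>v\<in>S. \<Sum>w\<in>S. f w u v) = (\<Sum>u\<in>S. \<Sum>v\<in>S. \<Sum>w\<in>S. f u v w)"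
proof -
  have "(\<Sum>u\<in>S. \<Sum>v\<in>S. \<Sum>w\<in>S. f w u v) = (\<Sum>u\<in>S. \<Sum>w\<in>S. \<Sum>v\<in>S. f w u v)"
    by (rule sum.cong[OF refl], rule sum.swap)
  also have "\<dots> = (\<Sum>w\<in>S. \<Sum>u\<in>S. \<Sum>v\<in>S. f w u v)" by (rule sum.swap)
  finally show ?thesis .
qed

lemma wedge_sum:
  fixes c Cf :: "'b \<Rightarrow> 'b \<Rightarrow> 'b \<Rightarrow> 'r::comm_ring_1"
  assumes c12: "\<And>u v w. c v u w = - c u v w" and c23: "\<And>u v w. c u w v = - c u v w"
  shows "(\<Sum>u\<in>S. \<Sum>v\<in>S. \<Sum>w\<in>S. c u v w * (Cf u v w - Cf v u w - Cf u w v - Cf w v u + Cf v w u + Cf w u v))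
       = 6 * (\<Sum>u\<in>S. \<Sum>v\<in>S. \<Sum>w\<in>S. c u v w * Cf u v w)"
proof -
  have c13: "c w v u = - c u v w" for u v w using c12[of v w u] c23[of v u w] c12[of u v w] by simp
  have cc1: "c v w u = c u v w" for u v w using c23[of v u w] c12[of u v w] by simp
  have cc2: "c w u v = c u v w" for u v w using c12[of u w v] c23[of u v w] by simp
  let ?A = "\<lambda>f. (\<Sum>u\<in>S. \<Sum>v\<in>S. \<Sum>w\<in>S. f u v w)"
  let ?B = "?A (\<lambda>u v w. c u v w * Cf u v w)"
  have p2: "c v u w * Cf u v w = - (c u v w * Cf u v w)" for u v w using c12[of u v w] by simp
  have p3: "c u w v * Cf u v w = - (c u v w * Cf u v w)" for u v w using c23[of u v w] by simp
  have p4: "c w v u * Cf u v w = - (c u v w * Cf u v w)" for u v w using c13[where u=u and v=v and w=w] by simp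
  have p5: "c w u v * Cf u v w = c u v w * Cf u v w" for u v w using cc2[where u=u and v=v and w=w] by (rule arg_cong[where f="\<lambda>x. x * Cf u v w"])
  have p6: "c v w u * Cf u v w = c u v w * Cf u v w" for u v w using cc1[where u=u and v=v and w=w] by (rule arg_cong[where f="\<lambda>x. x * Cf u v w"])
  have t2: "?A (\<lambda>u v w. c u v w * Cf v u w) = - ?B"
  proof -
    have "?A (\<lambda>u v w. c u v w * Cf v u w) = ?A (\<lambda>u v w. c v u w * Cf u v w)"
      by (rule sw12)
    also have "\<dots> = ?A (\<lambda>u v w. - (c u v w * Cf u v w))"
      by (intro sum.cong refl) (rule p2)
    finally show ?thesis by (simp add: sum_negf)
  qed
  have t3: "?A (\<lambda>u v w. c u v w * Cf u w v) = - ?B"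
  proof -
    have "?A (\<lambda>u v w. c u v w * Cf u w v) = ?A (\<lambda>u v w. c u w v * Cf u v w)"
      by (rule sw23)
    also have "\<dots> = ?A (\<lambda>u v w. - (c u v w * Cf u v w))"
      by (intro sum.cong refl) (rule p3)
    finally show ?thesis by (simp add: sum_negf)
  qed
  have t4: "?A (\<lambda>u v w. c u v w * Cf w v u) = - ?B"
  proof -
    have "?A (\<lambda>u v w. c u v w * Cf w v u) = ?A (\<lambda>u v w. c w v u * Cf u v w)"
      by (rule sw13)
    also have "\<dots> = ?A (\<lambda>u v w. - (c u v w * Cf u v w))"
      by (intro sum.cong refl) (rule p4)
    finally show ?thesis by (simp add: sum_negf)
  qed
  have t5: "?A (\<lambda>u v w. c u v w * Cf v w u) = ?B"
  proof -
    have "?A (\<lambda>u v w. c u v w * Cf v w u) = ?A (\<lambda>u v w. c w u v * Cf u v w)"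
      by (rule swc1)
    also have "\<dots> = ?B"
      by (intro sum.cong refl) (rule p5)
    finally show ?thesis .
  qed
  have t6: "?A (\<lambda>u v w. c u v w * Cf w u v) = ?B"
  proof -
    have "?A (\<lambda>u v w. c u v w * Cf w u v) = ?A (\<lambda>u v w. c v w u * Cf u v w)"
      by (rule swc2)
    also have "\<dots> = ?B"
      by (intro sum.cong refl) (rule p6)
    finally show ?thesis .
  qed
  have "?A (\<lambda>u v w. c u v w * (Cf u v w - Cf v u w - Cf u w v - Cf w v u + Cf v w u + Cf w u v))
     = ?B - ?A (\<lambda>u v w. c u v w * Cf v u w) - ?A (\<lambda>u v w. c u v w * Cf u w v)
       - ?A (\<lambda>u v w. c u v w * Cf w v u) + ?A (\<lambda>u v w. c u v w * Cf v w u) + ?A (\<lambda>u v w. c u v w * Cf w u v)"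
    by (simp add: algebra_simps sum.distrib sum_subtractf)
  also have "\<dots> = 6 * ?B" unfolding t2 t3 t4 t5 t6 by simp
  finally show ?thesis .
qed

section \<open>the Cartan trivector\<close>

definition cc :: "nat \<times> nat \<Rightarrow> nat \<times> nat \<Rightarrow> nat \<times> nat \<Rightarrow> 'k::field" where
  "cc u v w = (if fst u = snd v \<and> fst v = snd w \<and> fst w = snd u then 1 else 0)
            - (if fst u = snd w \<and> fst w = snd v \<and> fst v = snd u then 1 else 0)"

lemma cc12: "cc v u w = - cc u v w"
proof -
  have e1: "(fst v = snd u \<and> fst u = snd w \<and> fst w = snd v) = (fst u = snd w \<and> fst w = snd v \<and> fst v = snd u)" by blast
  have e2: "(fst v = snd w \<and> fst w = snd u \<and> fst u = snd v) = (fst u = snd v \<and> fst v = snd w \<and> fst w = snd u)" by blast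
  show ?thesis unfolding cc_def e1 e2 by simp
qed
lemma cc23: "cc u w v = - cc u v w"
proof -
  have e1: "(fst u = snd w \<and> fst w = snd v \<and> fst v = snd u) = (fst u = snd w \<and> fst w = snd v \<and> fst v = snd u)" by blast
  show ?thesis unfolding cc_def by simp
qed

abbreviation Em :: "nat \<times> nat \<Rightarrow> nat \<Rightarrow> nat \<Rightarrow> 'k::field" where "Em u \<equiv> Emat (fst u) (snd u)"

lemma mmul_Emat_pt: "b < N \<Longrightarrow> mmul N (Emat a b) (Emat c d) i j = (if i = a \<and> b = c \<and> j = d then 1 else 0)"
proof -
  assume b: "b < N"
  have "mmul N (Emat a b) (Emat c d) i j = (\<Sum>k<N. if k = b then Emat a b i b * Emat c d b j else 0)"
    unfolding mmul_def by (rule sum.cong) (auto simp: Emat_def)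
  also have "\<dots> = Emat a b i b * Emat c d b j" using b by simp
  also have "\<dots> = (if i = a \<and> b = c \<and> j = d then 1 else 0)" by (simp add: Emat_def)
  finally show ?thesis .
qed

lemma trpair_Emat: "a < N \<Longrightarrow> b < N \<Longrightarrow> trpair N (Emat a b) y = y b a"
proof -
  assume a: "a < N" and b: "b < N"
  have inner: "(\<Sum>c<N. Emat a b r c * y c r) = (if r = a then y b r else 0)" for r
  proof -
    have "(\<Sum>c<N. Emat a b r c * y c r) = (\<Sum>c<N. if c = b then (if r = a then y c r else 0) else 0)"
      by (rule sum.cong) (auto simp: Emat_def)
    then show ?thesis using b by simp
  qed
  show ?thesis unfolding trpair_def inner using a by simp
qed

lemma cartan_coef_cc:
  assumes "u \<in> gbasis K \<alpha>" "v \<in> gbasis K \<alpha>" "w \<in> gbasis K \<alpha>"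
  shows "cartan_coef K \<alpha> u v w = (cc u v w :: 'k::field)"
proof -
  have lt: "fst u < dimN K \<alpha>" "snd u < dimN K \<alpha>" "fst v < dimN K \<alpha>" "snd v < dimN K \<alpha>"
     "fst w < dimN K \<alpha>" "snd w < dimN K \<alpha>"
    using assms by (auto simp: gbasis_def)
  show ?thesis
    unfolding cartan_coef_def trpair_Emat[OF lt(2) lt(1)] mbr_def mmul_Emat_pt[OF lt(3)] mmul_Emat_pt[OF lt(5)] cc_def
    by (intro arg_cong2[where f="(-)"] if_cong) auto
qed

lemma finite_gbasis: "finite (gbasis K \<alpha>)"
  by (rule finite_subset[of _ "{..<dimN K \<alpha>} \<times> {..<dimN K \<alpha>}"]) (auto simp: gbasis_def)

lemma CE1:
  fixes F :: "(nat \<Rightarrow> nat \<Rightarrow> 'k::field) \<Rightarrow> (nat \<Rightarrow> nat \<Rightarrow> 'k) \<Rightarrow> (nat \<Rightarrow> nat \<Rightarrow> 'k) \<Rightarrow> 'r::comm_ring_1"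
  assumes F: "\<And>u v w. u \<in> gbasis K \<alpha> \<Longrightarrow> v \<in> gbasis K \<alpha> \<Longrightarrow> w \<in> gbasis K \<alpha> \<Longrightarrow> F (Em u) (Em v) (Em w) = Cf u v w"
    and emb_minus: "\<And>a. emb (- a) = - emb a"
    and emb6: "emb (1/12) * 6 = emb (1/2)"
  shows "cartan_eval K \<alpha> F emb = emb (1/2) * (\<Sum>u\<in>gbasis K \<alpha>. \<Sum>v\<in>gbasis K \<alpha>. \<Sum>w\<in>gbasis K \<alpha>. emb (cc u v w) * Cf u v w)"
proof -
  let ?S = "gbasis K \<alpha>"
  have "cartan_eval K \<alpha> F emb = emb (1/12) * (\<Sum>u\<in>?S. \<Sum>v\<in>?S. \<Sum>w\<in>?S. emb (cc u v w) *
      (Cf u v w - Cf v u w - Cf u w v - Cf w v u + Cf v w u + Cf w u v))"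
  proof -
    have pt: "emb (cartan_coef K \<alpha> u v w) * wedge3 F (Em u) (Em v) (Em w)
      = emb (cc u v w) * (Cf u v w - Cf v u w - Cf u w v - Cf w v u + Cf v w u + Cf w u v)"
      if "u \<in> ?S" "v \<in> ?S" "w \<in> ?S" for u v w
      using that by (simp add: wedge3_def F cartan_coef_cc)
    have "(\<Sum>u\<in>?S. \<Sum>v\<in>?S. \<Sum>w\<in>?S. emb (cartan_coef K \<alpha> u v w) * wedge3 F (Em u) (Em v) (Em w))
      = (\<Sum>u\<in>?S. \<Sum>v\<in>?S. \<Sum>w\<in>?S. emb (cc u v w) *
      (Cf u v w - Cf v u w - Cf u w v - Cf w v u + Cf v w u + Cf w u v))"
      by (intro sum.cong refl) (rule pt)
    then show ?thesis unfolding cartan_eval_def by simp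
  qed
  also have "\<dots> = emb (1/12) * (6 * (\<Sum>u\<in>?S. \<Sum>v\<in>?S. \<Sum>w\<in>?S. emb (cc u v w) * Cf u v w))"
  proof -
    have a1: "emb (cc v u w) = - emb (cc u v w)" for u v w
      by (subst cc12) (rule emb_minus)
    have a2: "emb (cc u w v) = - emb (cc u v w)" for u v w
      by (subst cc23) (rule emb_minus)
    show ?thesis by (rule arg_cong[where f="\<lambda>x. emb (1/12) * x"], rule wedge_sum) (rule a1, rule a2)
  qed
  also have "\<dots> = emb (1/2) * (\<Sum>u\<in>?S. \<Sum>v\<in>?S. \<Sum>w\<in>?S. emb (cc u v w) * Cf u v w)"
    by (simp add: emb6[symmetric] mult_ac)
  finally show ?thesis .
qed


lemma sum_delta_conj: "finite S \<Longrightarrow> (\<Sum>c\<in>S. if c = x \<and> Q c then f c else 0) = (if x \<in> S \<and> Q x then f x else 0)"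
proof -
  assume "finite S"
  have "(\<Sum>c\<in>S. if c = x \<and> Q c then f c else 0) = (\<Sum>c\<in>S. if c = x then (if Q c then f c else 0) else 0)"
    by (rule sum.cong) auto
  also have "\<dots> = (if x \<in> S \<and> Q x then f x else 0)" using \<open>finite S\<close> by simp
  finally show ?thesis .
qed

lemma sum_if_out: "(\<Sum>c\<in>S. if P then f c else 0) = (if P then (\<Sum>c\<in>S. f c) else 0)"
  by simp

lemma sum_gB: "(\<Sum>u\<in>gbasis K \<alpha>. f u) =
   (\<Sum>a<dimN K \<alpha>. \<Sum>b<dimN K \<alpha>. if sameblock K \<alpha> a b then f (a, b) else 0)"
proof -
  let ?N = "dimN K \<alpha>"
  have g: "gbasis K \<alpha> = (SIGMA a:{..<?N}. {b \<in> {..<?N}. sameblock K \<alpha> a b})"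
    by (auto simp: gbasis_def)
  have "(\<Sum>a<?N. \<Sum>b\<in>{b \<in> {..<?N}. sameblock K \<alpha> a b}. f (a, b))
     = (\<Sum>(a, b)\<in>(SIGMA a:{..<?N}. {b \<in> {..<?N}. sameblock K \<alpha> a b}). f (a, b))"
    by (rule sum.Sigma) auto
  also have "\<dots> = (\<Sum>u\<in>gbasis K \<alpha>. f u)" unfolding g by (simp add: case_prod_beta')
  finally have "(\<Sum>u\<in>gbasis K \<alpha>. f u) = (\<Sum>a<?N. \<Sum>b\<in>{b \<in> {..<?N}. sameblock K \<alpha> a b}. f (a, b))" ..
  also have "\<dots> = (\<Sum>a<?N. \<Sum>b<?N. if sameblock K \<alpha> a b then f (a, b) else 0)"
    by (rule sum.cong[OF refl], rule sum.inter_filter, simp)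
  finally show ?thesis .
qed

lemma c1_sum:
  fixes F :: "nat \<times> nat \<Rightarrow> nat \<times> nat \<Rightarrow> nat \<times> nat \<Rightarrow> 'r::comm_monoid_add"
  shows "(\<Sum>u\<in>gbasis K \<alpha>. \<Sum>v\<in>gbasis K \<alpha>. \<Sum>w\<in>gbasis K \<alpha>.
      (if fst u = snd v \<and> fst v = snd w \<and> fst w = snd u then F u v w else 0))
   = (\<Sum>a<dimN K \<alpha>. \<Sum>b<dimN K \<alpha>. \<Sum>c<dimN K \<alpha>.
      if sameblock K \<alpha> a b \<and> sameblock K \<alpha> c a \<and> sameblock K \<alpha> b c then F (a, b) (c, a) (b, c) else 0)"
proof -
  let ?N = "dimN K \<alpha>" and ?B = "gbasis K \<alpha>" and ?S = "sameblock K \<alpha>"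
  have fin: "finite ?B" by (rule finite_gbasis)
  have s1: "(\<Sum>w\<in>?B. (if fst u = snd v \<and> fst v = snd w \<and> fst w = snd u then F u v w else 0))
      = (if (snd u, fst v) \<in> ?B \<and> fst u = snd v then F u v (snd u, fst v) else 0)" for u v
  proof -
    have "(\<Sum>w\<in>?B. (if fst u = snd v \<and> fst v = snd w \<and> fst w = snd u then F u v w else 0))
       = (\<Sum>w\<in>?B. (if w = (snd u, fst v) \<and> fst u = snd v then F u v w else 0))"
      by (rule sum.cong) (auto simp: prod_eq_iff)
    also have "\<dots> = (if (snd u, fst v) \<in> ?B \<and> fst u = snd v then F u v (snd u, fst v) else 0)"
      by (rule sum_delta_conj[OF fin])
    finally show ?thesis .
  qed
  have s2: "(\<Sum>v\<in>?B. (if (snd u, fst v) \<in> ?B \<and> fst u = snd v then F u v (snd u, fst v) else 0))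
      = (\<Sum>c<?N. if ?S c (fst u) \<and> ?S (snd u) c then F u (c, fst u) (snd u, c) else 0)"
    if u: "fst u < ?N" "snd u < ?N" for u
  proof -
    have "(\<Sum>v\<in>?B. (if (snd u, fst v) \<in> ?B \<and> fst u = snd v then F u v (snd u, fst v) else 0))
      = (\<Sum>c<?N. \<Sum>d<?N. if ?S c d then (if (snd u, c) \<in> ?B \<and> fst u = d then F u (c, d) (snd u, c) else 0) else 0)"
      by (simp only: sum_gB fst_conv snd_conv)
    also have "\<dots> = (\<Sum>c<?N. \<Sum>d<?N. if d = fst u \<and> (?S c d \<and> (snd u, c) \<in> ?B) then F u (c, d) (snd u, c) else 0)"
      by (intro sum.cong refl) auto
    also have "\<dots> = (\<Sum>c<?N. if ?S c (fst u) \<and> (snd u, c) \<in> ?B then F u (c, fst u) (snd u, c) else 0)"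
      by (intro sum.cong refl) (simp add: sum_delta_conj u)
    also have "\<dots> = (\<Sum>c<?N. if ?S c (fst u) \<and> ?S (snd u) c then F u (c, fst u) (snd u, c) else 0)"
      by (intro sum.cong refl) (auto simp: gbasis_def u)
    finally show ?thesis .
  qed
  have "(\<Sum>u\<in>?B. \<Sum>v\<in>?B. \<Sum>w\<in>?B. (if fst u = snd v \<and> fst v = snd w \<and> fst w = snd u then F u v w else 0))
     = (\<Sum>u\<in>?B. \<Sum>v\<in>?B. (if (snd u, fst v) \<in> ?B \<and> fst u = snd v then F u v (snd u, fst v) else 0))"
    by (simp only: s1)
  also have "\<dots> = (\<Sum>u\<in>?B. \<Sum>c<?N. if ?S c (fst u) \<and> ?S (snd u) c then F u (c, fst u) (snd u, c) else 0)"
    by (rule sum.cong[OF refl], rule s2) (auto simp: gbasis_def)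
  also have "\<dots> = (\<Sum>a<?N. \<Sum>b<?N. if ?S a b then (\<Sum>c<?N. if ?S c a \<and> ?S b c then F (a, b) (c, a) (b, c) else 0) else 0)"
    by (simp only: sum_gB fst_conv snd_conv)
  also have "\<dots> = (\<Sum>a<?N. \<Sum>b<?N. \<Sum>c<?N.
      if ?S a b \<and> ?S c a \<and> ?S b c then F (a, b) (c, a) (b, c) else 0)"
    by (intro sum.cong refl) auto
  finally show ?thesis .
qed

lemma c2_sum:
  fixes F :: "nat \<times> nat \<Rightarrow> nat \<times> nat \<Rightarrow> nat \<times> nat \<Rightarrow> 'r::comm_monoid_add"
  shows "(\<Sum>u\<in>gbasis K \<alpha>. \<Sum>v\<in>gbasis K \<alpha>. \<Sum>w\<in>gbasis K \<alpha>.
      (if fst u = snd w \<and> fst w = snd v \<and> fst v = snd u then F u v w else 0))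
   = (\<Sum>a<dimN K \<alpha>. \<Sum>b<dimN K \<alpha>. \<Sum>c<dimN K \<alpha>.
      if sameblock K \<alpha> a b \<and> sameblock K \<alpha> b c \<and> sameblock K \<alpha> c a then F (a, b) (b, c) (c, a) else 0)"
proof -
  let ?N = "dimN K \<alpha>" and ?B = "gbasis K \<alpha>" and ?S = "sameblock K \<alpha>"
  have fin: "finite ?B" by (rule finite_gbasis)
  have s1: "(\<Sum>w\<in>?B. (if fst u = snd w \<and> fst w = snd v \<and> fst v = snd u then F u v w else 0))
      = (if (snd v, fst u) \<in> ?B \<and> fst v = snd u then F u v (snd v, fst u) else 0)" for u v
  proof -
    have "(\<Sum>w\<in>?B. (if fst u = snd w \<and> fst w = snd v \<and> fst v = snd u then F u v w else 0))
       = (\<Sum>w\<in>?B. (if w = (snd v, fst u) \<and> fst v = snd u then F u v w else 0))"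
      by (rule sum.cong) (auto simp: prod_eq_iff)
    also have "\<dots> = (if (snd v, fst u) \<in> ?B \<and> fst v = snd u then F u v (snd v, fst u) else 0)"
      by (rule sum_delta_conj[OF fin])
    finally show ?thesis .
  qed
  have s2: "(\<Sum>v\<in>?B. (if (snd v, fst u) \<in> ?B \<and> fst v = snd u then F u v (snd v, fst u) else 0))
      = (\<Sum>c<?N. if ?S (snd u) c \<and> ?S c (fst u) then F u (snd u, c) (c, fst u) else 0)"
    if u: "fst u < ?N" "snd u < ?N" for u
  proof -
    have "(\<Sum>v\<in>?B. (if (snd v, fst u) \<in> ?B \<and> fst v = snd u then F u v (snd v, fst u) else 0))
      = (\<Sum>d<?N. \<Sum>c<?N. if ?S d c then (if (c, fst u) \<in> ?B \<and> d = snd u then F u (d, c) (c, fst u) else 0) else 0)"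
      by (simp only: sum_gB fst_conv snd_conv)
    also have "\<dots> = (\<Sum>d<?N. if d = snd u then (\<Sum>c<?N. if ?S d c \<and> (c, fst u) \<in> ?B then F u (d, c) (c, fst u) else 0) else 0)"
    proof (rule sum.cong[OF refl])
      fix d
      show "(\<Sum>c<?N. if ?S d c then (if (c, fst u) \<in> ?B \<and> d = snd u then F u (d, c) (c, fst u) else 0) else 0)
        = (if d = snd u then (\<Sum>c<?N. if ?S d c \<and> (c, fst u) \<in> ?B then F u (d, c) (c, fst u) else 0) else 0)"
        by (cases "d = snd u") (auto intro!: sum.cong sum.neutral)
    qed
    also have "\<dots> = (\<Sum>c<?N. if ?S (snd u) c \<and> (c, fst u) \<in> ?B then F u (snd u, c) (c, fst u) else 0)"
      using u by simp
    also have "\<dots> = (\<Sum>c<?N. if ?S (snd u) c \<and> ?S c (fst u) then F u (snd u, c) (c, fst u) else 0)"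
      by (intro sum.cong refl) (auto simp: gbasis_def u)
    finally show ?thesis .
  qed
  have "(\<Sum>u\<in>?B. \<Sum>v\<in>?B. \<Sum>w\<in>?B. (if fst u = snd w \<and> fst w = snd v \<and> fst v = snd u then F u v w else 0))
     = (\<Sum>u\<in>?B. \<Sum>v\<in>?B. (if (snd v, fst u) \<in> ?B \<and> fst v = snd u then F u v (snd v, fst u) else 0))"
    by (simp only: s1)
  also have "\<dots> = (\<Sum>u\<in>?B. \<Sum>c<?N. if ?S (snd u) c \<and> ?S c (fst u) then F u (snd u, c) (c, fst u) else 0)"
    by (rule sum.cong[OF refl], rule s2) (auto simp: gbasis_def)
  also have "\<dots> = (\<Sum>a<?N. \<Sum>b<?N. if ?S a b then (\<Sum>c<?N. if ?S b c \<and> ?S c a then F (a, b) (b, c) (c, a) else 0) else 0)"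
    by (simp only: sum_gB fst_conv snd_conv)
  also have "\<dots> = (\<Sum>a<?N. \<Sum>b<?N. \<Sum>c<?N.
      if ?S a b \<and> ?S b c \<and> ?S c a then F (a, b) (b, c) (c, a) else 0)"
    by (intro sum.cong refl) auto
  finally show ?thesis .
qed

lemma cc_split: "(cc u v w :: 'k::field) * x = (if fst u = snd v \<and> fst v = snd w \<and> fst w = snd u then x else 0)
    - (if fst u = snd w \<and> fst w = snd v \<and> fst v = snd u then x else 0)"
  unfolding cc_def left_diff_distrib by (simp only: if_distrib[of "\<lambda>t. t * x"] mult_1 mult_zero_left)

lemma cc_sum:
  fixes Cf :: "nat \<times> nat \<Rightarrow> nat \<times> nat \<Rightarrow> nat \<times> nat \<Rightarrow> 'k::field"
  shows "(\<Sum>u\<in>gbasis K \<alpha>. \<Sum>v\<in>gbasis K \<alpha>. \<Sum>w\<in>gbasis K \<alpha>. cc u v w * Cf u v w)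
   = (\<Sum>a<dimN K \<alpha>. \<Sum>b<dimN K \<alpha>. \<Sum>c<dimN K \<alpha>.
      if sameblock K \<alpha> a b \<and> sameblock K \<alpha> c a \<and> sameblock K \<alpha> b c then Cf (a, b) (c, a) (b, c) else 0)
   - (\<Sum>a<dimN K \<alpha>. \<Sum>b<dimN K \<alpha>. \<Sum>c<dimN K \<alpha>.
      if sameblock K \<alpha> a b \<and> sameblock K \<alpha> b c \<and> sameblock K \<alpha> c a then Cf (a, b) (b, c) (c, a) else 0)"
  unfolding cc_split sum_subtractf c1_sum c2_sum ..


lemma triple_delta:
  assumes "finite A" "finite B" "finite C"
  shows "(\<Sum>a\<in>A. \<Sum>b\<in>B. \<Sum>c\<in>C. if a = x \<and> b = y \<and> c = z \<and> R a b c then f a b c else 0)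
    = (if x \<in> A \<and> y \<in> B \<and> z \<in> C \<and> R x y z then f x y z else (0::'r::comm_monoid_add))"
proof -
  have "(\<Sum>a\<in>A. \<Sum>b\<in>B. \<Sum>c\<in>C. if a = x \<and> b = y \<and> c = z \<and> R a b c then f a b c else 0)
     = (\<Sum>a\<in>A. \<Sum>b\<in>B. \<Sum>c\<in>C. if a = x then (if b = y then (if c = z then (if R a b c then f a b c else 0) else 0) else 0) else 0)"
    by (intro sum.cong refl) auto
  also have "\<dots> = (if x \<in> A \<and> y \<in> B \<and> z \<in> C \<and> R x y z then f x y z else 0)"
    using assms by (simp add: sum_if_out)
  finally show ?thesis .
qed

lemma cartan_comp_closed:
  "cartan_comp K \<alpha> M i1 j1 i2 j2 i3 j3 = (1/2::'k::field_char_0) * (\<Sum>u\<in>gbasis K \<alpha>. \<Sum>v\<in>gbasis K \<alpha>. \<Sum>w\<in>gbasis K \<alpha>.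
      cc u v w * (M (Em u) i1 j1 * M (Em v) i2 j2 * M (Em w) i3 j3))"
  unfolding cartan_comp_def
  by (subst CE1[where Cf="\<lambda>u v w. M (Em u) i1 j1 * M (Em v) i2 j2 * M (Em w) i3 j3"]) simp_all

lemma Adm_Em:
  assumes "fst u < N" "snd u < N"
  shows "Adm N g h (Em u) i j = g i (fst u) * h (snd u) j"
proof -
  have inner: "(\<Sum>k<N. g i k * Em u k l) = (if l = snd u then g i (fst u) else 0)" for l
  proof -
    have "(\<Sum>k<N. g i k * Em u k l) = (\<Sum>k<N. if k = fst u then (if l = snd u then g i (fst u) else 0) else 0)"
      by (rule sum.cong) (auto simp: Emat_def)
    then show ?thesis using assms by simp
  qed
  have "Adm N g h (Em u) i j = (\<Sum>l<N. (if l = snd u then g i (fst u) else 0) * h l j)"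
    unfolding Adm_def mmul_def inner ..
  also have "\<dots> = (\<Sum>l<N. if l = snd u then g i (fst u) * h l j else 0)"
    by (rule sum.cong) auto
  also have "\<dots> = g i (fst u) * h (snd u) j" using assms by simp
  finally show ?thesis .
qed

lemma Adm_Emat: "a < N \<Longrightarrow> b < N \<Longrightarrow> Adm N g h (Emat a b) i j = g i a * h b j"
  using Adm_Em[of "(a, b)" N g h i j] by simp

lemma prod3: "(\<Sum>a\<in>A. X a) * (\<Sum>b\<in>B. Y b) * (\<Sum>c\<in>C. W c) = (\<Sum>a\<in>A. \<Sum>b\<in>B. \<Sum>c\<in>C. X a * Y b * (W c::'r::comm_semiring_0))"
proof -
  have "(\<Sum>a\<in>A. X a) * (\<Sum>b\<in>B. Y b) * (\<Sum>c\<in>C. W c) = (\<Sum>a\<in>A. \<Sum>b\<in>B. X a * Y b) * (\<Sum>c\<in>C. W c)"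
    by (simp only: sum_product)
  also have "\<dots> = (\<Sum>a\<in>A. (\<Sum>b\<in>B. X a * Y b) * (\<Sum>c\<in>C. W c))"
    by (rule sum_distrib_right)
  also have "\<dots> = (\<Sum>a\<in>A. \<Sum>b\<in>B. X a * Y b * (\<Sum>c\<in>C. W c))"
    by (simp only: sum_distrib_right)
  also have "\<dots> = (\<Sum>a\<in>A. \<Sum>b\<in>B. \<Sum>c\<in>C. X a * Y b * W c)"
    by (simp only: sum_distrib_left)
  finally show ?thesis .
qed

lemma sb_congr: "sameblock K \<alpha> x x' \<Longrightarrow> sameblock K \<alpha> y y' \<Longrightarrow> sameblock K \<alpha> x y = sameblock K \<alpha> x' y'"
  by (meson sameblock_sym sameblock_trans)

lemma cartan_invariant:
  fixes g h :: "nat \<Rightarrow> nat \<Rightarrow> 'k::field_char_0"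
  assumes GL: "in_GLalpha K \<alpha> g h"
  shows "cartan_comp K \<alpha> (Adm (dimN K \<alpha>) g h) = cartan_comp K \<alpha> id"
proof (intro ext)
  fix i1 j1 i2 j2 i3 j3
  let ?N = "dimN K \<alpha>" and ?S = "sameblock K \<alpha>" and ?B = "gbasis K \<alpha>"
  have gg: "in_galpha K \<alpha> g" and gh: "mmul ?N g h = idm ?N" using GL by (auto simp: in_GLalpha_def)
  have gS: "g i a \<noteq> 0 \<Longrightarrow> ?S i a" for i a using gg by (auto simp: in_galpha_def)
  have gh_pt: "(\<Sum>a<?N. g i a * h a j) = idm ?N i j" for i j
    using fun_cong[OF fun_cong[OF gh, of i], of j] by (simp add: mmul_def)
  have id1: "(\<Sum>a<?N. \<Sum>b<?N. \<Sum>c<?N. if ?S a b \<and> ?S c a \<and> ?S b c then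
        id (Em (a, b)) i1 j1 * id (Em (c, a)) i2 j2 * id (Em (b, c)) i3 j3 else 0)
     = (if i1 < ?N \<and> j1 < ?N \<and> i2 < ?N \<and> i1 = j2 \<and> j1 = i3 \<and> i2 = j3 \<and> ?S i1 j1 \<and> ?S i2 i1 \<and> ?S j1 i2 then 1 else (0::'k))"
  proof -
    have "(\<Sum>a<?N. \<Sum>b<?N. \<Sum>c<?N. if ?S a b \<and> ?S c a \<and> ?S b c then
        id (Em (a, b)) i1 j1 * id (Em (c, a)) i2 j2 * id (Em (b, c)) i3 j3 else 0)
      = (\<Sum>a<?N. \<Sum>b<?N. \<Sum>c<?N. if a = i1 \<and> b = j1 \<and> c = i2 \<and>
          (a = j2 \<and> b = i3 \<and> c = j3 \<and> ?S a b \<and> ?S c a \<and> ?S b c) then 1 else (0::'k))"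
      by (intro sum.cong refl) (auto simp: Emat_def)
    also have "\<dots> = (if i1 \<in> {..<?N} \<and> j1 \<in> {..<?N} \<and> i2 \<in> {..<?N} \<and>
          (i1 = j2 \<and> j1 = i3 \<and> i2 = j3 \<and> ?S i1 j1 \<and> ?S i2 i1 \<and> ?S j1 i2) then 1 else 0)"
      by (rule triple_delta) auto
    finally show ?thesis by auto
  qed
  have id2: "(\<Sum>a<?N. \<Sum>b<?N. \<Sum>c<?N. if ?S a b \<and> ?S b c \<and> ?S c a then
        id (Em (a, b)) i1 j1 * id (Em (b, c)) i2 j2 * id (Em (c, a)) i3 j3 else 0)
     = (if i1 < ?N \<and> j1 < ?N \<and> j2 < ?N \<and> i1 = j3 \<and> j1 = i2 \<and> j2 = i3 \<and> ?S i1 j1 \<and> ?S j1 j2 \<and> ?S j2 i1 then 1 else (0::'k))"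
  proof -
    have "(\<Sum>a<?N. \<Sum>b<?N. \<Sum>c<?N. if ?S a b \<and> ?S b c \<and> ?S c a then
        id (Em (a, b)) i1 j1 * id (Em (b, c)) i2 j2 * id (Em (c, a)) i3 j3 else 0)
      = (\<Sum>a<?N. \<Sum>b<?N. \<Sum>c<?N. if a = i1 \<and> b = j1 \<and> c = j2 \<and>
          (b = i2 \<and> c = i3 \<and> a = j3 \<and> ?S a b \<and> ?S b c \<and> ?S c a) then 1 else (0::'k))"
      by (intro sum.cong refl) (auto simp: Emat_def)
    also have "\<dots> = (if i1 \<in> {..<?N} \<and> j1 \<in> {..<?N} \<and> j2 \<in> {..<?N} \<and>
          (j1 = i2 \<and> j2 = i3 \<and> i1 = j3 \<and> ?S i1 j1 \<and> ?S j1 j2 \<and> ?S j2 i1) then 1 else 0)"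
      by (rule triple_delta) auto
    finally show ?thesis by auto
  qed
  have ad1: "(\<Sum>a<?N. \<Sum>b<?N. \<Sum>c<?N. if ?S a b \<and> ?S c a \<and> ?S b c then
        Adm ?N g h (Em (a, b)) i1 j1 * Adm ?N g h (Em (c, a)) i2 j2 * Adm ?N g h (Em (b, c)) i3 j3 else 0)
     = (if ?S i1 i3 \<and> ?S i2 i1 \<and> ?S i3 i2 then idm ?N i1 j2 * idm ?N i3 j1 * idm ?N i2 j3 else 0)"
  proof -
    have "(\<Sum>a<?N. \<Sum>b<?N. \<Sum>c<?N. if ?S a b \<and> ?S c a \<and> ?S b c then
        Adm ?N g h (Em (a, b)) i1 j1 * Adm ?N g h (Em (c, a)) i2 j2 * Adm ?N g h (Em (b, c)) i3 j3 else 0)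
      = (\<Sum>a<?N. \<Sum>b<?N. \<Sum>c<?N. if ?S i1 i3 \<and> ?S i2 i1 \<and> ?S i3 i2 then
          (g i1 a * h a j2) * (g i3 b * h b j1) * (g i2 c * h c j3) else 0)"
    proof (intro sum.cong refl)
      fix a b c assume abc: "a \<in> {..<?N}" "b \<in> {..<?N}" "c \<in> {..<?N}"
      show "(if ?S a b \<and> ?S c a \<and> ?S b c then
        Adm ?N g h (Em (a, b)) i1 j1 * Adm ?N g h (Em (c, a)) i2 j2 * Adm ?N g h (Em (b, c)) i3 j3 else 0)
        = (if ?S i1 i3 \<and> ?S i2 i1 \<and> ?S i3 i2 then (g i1 a * h a j2) * (g i3 b * h b j1) * (g i2 c * h c j3) else 0)"
      proof (cases "g i1 a = 0 \<or> g i3 b = 0 \<or> g i2 c = 0")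
        case True then show ?thesis using abc by (auto simp: Adm_Emat)
      next
        case False
        then have s: "?S i1 a" "?S i3 b" "?S i2 c" using gS by auto
        have e: "(?S a b \<and> ?S c a \<and> ?S b c) = (?S i1 i3 \<and> ?S i2 i1 \<and> ?S i3 i2)"
          using sb_congr[OF sameblock_sym[OF s(1)] sameblock_sym[OF s(2)]]
            sb_congr[OF sameblock_sym[OF s(3)] sameblock_sym[OF s(1)]]
            sb_congr[OF sameblock_sym[OF s(2)] sameblock_sym[OF s(3)]] by simp
        show ?thesis unfolding e using abc by (simp add: Adm_Emat mult_ac)
      qed
    qed
    also have "\<dots> = (if ?S i1 i3 \<and> ?S i2 i1 \<and> ?S i3 i2 then
        (\<Sum>a<?N. g i1 a * h a j2) * (\<Sum>b<?N. g i3 b * h b j1) * (\<Sum>c<?N. g i2 c * h c j3) else 0)"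
      unfolding prod3 by (simp only: sum_if_out)
    finally show ?thesis by (simp add: gh_pt)
  qed
  have ad2: "(\<Sum>a<?N. \<Sum>b<?N. \<Sum>c<?N. if ?S a b \<and> ?S b c \<and> ?S c a then
        Adm ?N g h (Em (a, b)) i1 j1 * Adm ?N g h (Em (b, c)) i2 j2 * Adm ?N g h (Em (c, a)) i3 j3 else 0)
     = (if ?S i1 i2 \<and> ?S i2 i3 \<and> ?S i3 i1 then idm ?N i1 j3 * idm ?N i2 j1 * idm ?N i3 j2 else 0)"
  proof -
    have "(\<Sum>a<?N. \<Sum>b<?N. \<Sum>c<?N. if ?S a b \<and> ?S b c \<and> ?S c a then
        Adm ?N g h (Em (a, b)) i1 j1 * Adm ?N g h (Em (b, c)) i2 j2 * Adm ?N g h (Em (c, a)) i3 j3 else 0)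
      = (\<Sum>a<?N. \<Sum>b<?N. \<Sum>c<?N. if ?S i1 i2 \<and> ?S i2 i3 \<and> ?S i3 i1 then
          (g i1 a * h a j3) * (g i2 b * h b j1) * (g i3 c * h c j2) else 0)"
    proof (intro sum.cong refl)
      fix a b c assume abc: "a \<in> {..<?N}" "b \<in> {..<?N}" "c \<in> {..<?N}"
      show "(if ?S a b \<and> ?S b c \<and> ?S c a then
        Adm ?N g h (Em (a, b)) i1 j1 * Adm ?N g h (Em (b, c)) i2 j2 * Adm ?N g h (Em (c, a)) i3 j3 else 0)
        = (if ?S i1 i2 \<and> ?S i2 i3 \<and> ?S i3 i1 then (g i1 a * h a j3) * (g i2 b * h b j1) * (g i3 c * h c j2) else 0)"
      proof (cases "g i1 a = 0 \<or> g i2 b = 0 \<or> g i3 c = 0")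
        case True then show ?thesis using abc by (auto simp: Adm_Emat)
      next
        case False
        then have s: "?S i1 a" "?S i2 b" "?S i3 c" using gS by auto
        have e: "(?S a b \<and> ?S b c \<and> ?S c a) = (?S i1 i2 \<and> ?S i2 i3 \<and> ?S i3 i1)"
          using sb_congr[OF sameblock_sym[OF s(1)] sameblock_sym[OF s(2)]]
            sb_congr[OF sameblock_sym[OF s(2)] sameblock_sym[OF s(3)]]
            sb_congr[OF sameblock_sym[OF s(3)] sameblock_sym[OF s(1)]] by simp
        show ?thesis unfolding e using abc by (simp add: Adm_Emat mult_ac)
      qed
    qed
    also have "\<dots> = (if ?S i1 i2 \<and> ?S i2 i3 \<and> ?S i3 i1 then
        (\<Sum>a<?N. g i1 a * h a j3) * (\<Sum>b<?N. g i2 b * h b j1) * (\<Sum>c<?N. g i3 c * h c j2) else 0)"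
      unfolding prod3 by (simp only: sum_if_out)
    finally show ?thesis by (simp add: gh_pt)
  qed
  have e1: "(if ?S i1 i3 \<and> ?S i2 i1 \<and> ?S i3 i2 then idm ?N i1 j2 * idm ?N i3 j1 * idm ?N i2 j3 else 0)
     = (if i1 < ?N \<and> j1 < ?N \<and> i2 < ?N \<and> i1 = j2 \<and> j1 = i3 \<and> i2 = j3 \<and> ?S i1 j1 \<and> ?S i2 i1 \<and> ?S j1 i2 then 1 else (0::'k))"
    by (auto simp: idm_def)
  have e2: "(if ?S i1 i2 \<and> ?S i2 i3 \<and> ?S i3 i1 then idm ?N i1 j3 * idm ?N i2 j1 * idm ?N i3 j2 else 0)
     = (if i1 < ?N \<and> j1 < ?N \<and> j2 < ?N \<and> i1 = j3 \<and> j1 = i2 \<and> j2 = i3 \<and> ?S i1 j1 \<and> ?S j1 j2 \<and> ?S j2 i1 then 1 else (0::'k))"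
    by (auto simp: idm_def)
  show "cartan_comp K \<alpha> (Adm ?N g h) i1 j1 i2 j2 i3 j3 = cartan_comp K \<alpha> id i1 j1 i2 j2 i3 j3"
    unfolding cartan_comp_closed cc_sum ad1 ad2 id1 id2 e1 e2 ..
qed


context ctx begin

section \<open>Jacobiator on generators in terms of the triple bracket\<close>

definition T3 :: "nat \<Rightarrow> nat \<Rightarrow> nat \<Rightarrow> nat \<Rightarrow> nat \<Rightarrow> nat \<Rightarrow> ('a \<times> 'a \<times> 'a) list \<Rightarrow> ('a, 'k) rpoly" where
  "T3 i1 j1 i2 j2 i3 j3 L = sum_list (map (\<lambda>(x, y, z). X x i1 j1 * X y i2 j2 * X z i3 j3) L)"

lemma T3_append: "T3 i1 j1 i2 j2 i3 j3 (L @ M) = T3 i1 j1 i2 j2 i3 j3 L + T3 i1 j1 i2 j2 i3 j3 M"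
  by (simp add: T3_def)

lemma T3_tau: "T3 i1 j1 i2 j2 i3 j3 (map tau3 L) = T3 i2 j2 i3 j3 i1 j1 L"
  by (induction L) (auto simp: T3_def tau3_def mult_ac)

lemma T3_tau2: "T3 i1 j1 i2 j2 i3 j3 (map (tau3 \<circ> tau3) L) = T3 i3 j3 i1 j1 i2 j2 L"
  by (induction L) (auto simp: T3_def tau3_def mult_ac)

lemma T3_dbr_out: "T3 i1 j1 i2 j2 i3 j3 (dbr_out dbr a L) = tsum (\<lambda>x. ind_br dbr a x i2 j1 i1 j2) (\<lambda>z. X z i3 j3) L"
proof (induction L)
  case Nil then show ?case by (simp add: T3_def dbr_out_def tsum_def)
next
  case (Cons t L)
  obtain u v where t: "t = (u, v)" by (cases t)
  have gen: "T3 i1 j1 i2 j2 i3 j3 (map (\<lambda>(x, y). (x, y, v)) M) = tsum (\<lambda>x. X x i1 j1) (\<lambda>y. X y i2 j2) M * X v i3 j3" for M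
    by (induction M) (auto simp: T3_def tsum_def algebra_simps)
  have "T3 i1 j1 i2 j2 i3 j3 (map (\<lambda>(x, y). (x, y, v)) (dbr a u)) = ind_br dbr a u i2 j1 i1 j2 * X v i3 j3"
    by (simp add: gen ind_br_tsum)
  moreover have "dbr_out dbr a (t # L) = map (\<lambda>(x, y). (x, y, v)) (dbr a u) @ dbr_out dbr a L"
    by (simp add: dbr_out_def t)
  ultimately show ?case using Cons by (simp add: T3_append t tsum_def)
qed

lemma T3_triple: "T3 i1 j1 i2 j2 i3 j3 (triple_bracket dbr a b c) =
   T3 i1 j1 i2 j2 i3 j3 (dbr_out dbr a (dbr b c)) + T3 i2 j2 i3 j3 i1 j1 (dbr_out dbr b (dbr c a))
   + T3 i3 j3 i1 j1 i2 j2 (dbr_out dbr c (dbr a b))"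
  by (simp add: triple_bracket_def T3_append T3_tau T3_tau2)

lemma br_tsum2: "br p (tsum f g L) = tsum (\<lambda>x. br p (f x)) g L + tsum f (\<lambda>y. br p (g y)) L"
  by (induction L) (auto simp: tsum_def br_add2 br_mult2 algebra_simps)

lemma lmod_ind2: "lmod (\<lambda>y. ind_br dbr a y i j k l)"
  unfolding ind_br_tsum by (rule lmod_tsum2[OF lmod_X lmod_X])

lemma JT: "br (X a i j) (br (X b k l) (X c u v)) \<simeq>
   T3 u j i l k v (dbr_out dbr a (dbr b c)) - T3 k j i v u l (dbr_out dbr a (dbr c b))"
proof -
  have "br (X a i j) (br (X b k l) (X c u v)) =
     tsum (\<lambda>x. ind_br dbr a x i j u l) (\<lambda>y. X y k v) (dbr b c)
     + tsum (\<lambda>x. X x u l) (\<lambda>y. ind_br dbr a y i j k v) (dbr b c)"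
    by (simp add: br_XX ind_br_tsum[of b c] br_tsum2)
  also have "\<dots> \<simeq> tsum (\<lambda>x. ind_br dbr a x i j u l) (\<lambda>y. X y k v) (dbr b c)
     + (- tsum (\<lambda>y. ind_br dbr a y i j k v) (\<lambda>x. X x u l) (dbr c b))"
    by (intro req_add req_refl tsum_anti lmod_X lmod_ind2)
  also have "\<dots> = T3 u j i l k v (dbr_out dbr a (dbr b c)) - T3 k j i v u l (dbr_out dbr a (dbr c b))"
    by (simp add: T3_dbr_out)
  finally show ?thesis .
qed

definition Jac :: "('a, 'k) rpoly \<Rightarrow> ('a, 'k) rpoly \<Rightarrow> ('a, 'k) rpoly \<Rightarrow> ('a, 'k) rpoly" where
  "Jac p q r = br p (br q r) + br q (br r p) + br r (br p q)"

lemma Jac_gen: "Jac (X a i j) (X b k l) (X c u v) \<simeq>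
   T3 u j i l k v (triple_bracket dbr a b c) - T3 k j i v u l (triple_bracket dbr a c b)"
proof -
  have "Jac (X a i j) (X b k l) (X c u v) \<simeq>
      (T3 u j i l k v (dbr_out dbr a (dbr b c)) - T3 k j i v u l (dbr_out dbr a (dbr c b)))
    + (T3 i l k v u j (dbr_out dbr b (dbr c a)) - T3 u l k j i v (dbr_out dbr b (dbr a c)))
    + (T3 k v u j i l (dbr_out dbr c (dbr a b)) - T3 i v u l k j (dbr_out dbr c (dbr b a)))"
    unfolding Jac_def by (intro req_add JT)
  also have "\<dots> = T3 u j i l k v (triple_bracket dbr a b c) - T3 k j i v u l (triple_bracket dbr a c b)"
    by (simp add: T3_triple algebra_simps)
  finally show ?thesis .
qed

section \<open>evaluation of the right hand side of the quasi-Poisson identity\<close>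

abbreviation ib where "ib s p \<equiv> inblock \<alpha> s p"

definition Ev4 :: "nat \<Rightarrow> nat \<Rightarrow> nat \<Rightarrow> ('a, 'k) rpoly" where
  "Ev4 s p q = (if p = q \<and> ib s p then 1 else 0)"
definition Ev1 :: "nat \<Rightarrow> 'a \<Rightarrow> nat \<Rightarrow> nat \<Rightarrow> ('a, 'k) rpoly" where
  "Ev1 s x p q = (if ib s q then X x p q else 0)"
definition Ev2 :: "nat \<Rightarrow> 'a \<Rightarrow> nat \<Rightarrow> nat \<Rightarrow> ('a, 'k) rpoly" where
  "Ev2 s x p q = (if ib s p then X x p q else 0)"
definition Ev3 :: "nat \<Rightarrow> 'a \<Rightarrow> 'a \<Rightarrow> nat \<Rightarrow> nat \<Rightarrow> ('a, 'k) rpoly" where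
  "Ev3 s x y p q = (\<Sum>m<NN. if ib s m then X x p m * X y m q else 0)"

lemma XE4: "s < K \<Longrightarrow> X (e s) p q \<simeq> Ev4 s p q"
proof -
  have c: "cst (if p = q \<and> ib s p then 1 else 0) = Ev4 s p q" by (auto simp: Ev4_def)
  assume "s < K"
  then show ?thesis using R4[of s p q] by (simp only: eblk_def c)
qed

lemma XE1: assumes s: "s < K" shows "X (x * e s) p q \<simeq> Ev1 s x p q"
proof -
  have "X (x * e s) p q \<simeq> (\<Sum>m<NN. X x p m * X (e s) m q)" by (rule R3)
  also have "\<dots> \<simeq> (\<Sum>m<NN. X x p m * Ev4 s m q)" by (intro req_sum req_mult req_refl XE4 s)
  also have "\<dots> = (\<Sum>m<NN. if m = q then (if ib s q then X x p q else 0) else 0)"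
    by (rule sum.cong) (auto simp: Ev4_def)
  also have "\<dots> = Ev1 s x p q" using inblock_lt[OF s, of q] by (auto simp: Ev1_def)
  finally show ?thesis .
qed

lemma XE2: assumes s: "s < K" shows "X (e s * x) p q \<simeq> Ev2 s x p q"
proof -
  have "X (e s * x) p q \<simeq> (\<Sum>m<NN. X (e s) p m * X x m q)" by (rule R3)
  also have "\<dots> \<simeq> (\<Sum>m<NN. Ev4 s p m * X x m q)" by (intro req_sum req_mult req_refl XE4 s)
  also have "\<dots> = (\<Sum>m<NN. if m = p then (if ib s p then X x p q else 0) else 0)"
    by (rule sum.cong) (auto simp: Ev4_def)
  also have "\<dots> = Ev2 s x p q" using inblock_lt[OF s, of p] by (auto simp: Ev2_def)
  finally show ?thesis .
qed

lemma XE3: assumes s: "s < K" shows "X (x * e s * y) p q \<simeq> Ev3 s x y p q"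
proof -
  have "X (x * e s * y) p q \<simeq> (\<Sum>m<NN. X (x * e s) p m * X y m q)" by (rule R3)
  also have "\<dots> \<simeq> (\<Sum>m<NN. Ev1 s x p m * X y m q)" by (intro req_sum req_mult req_refl XE1 s)
  also have "\<dots> = Ev3 s x y p q" unfolding Ev3_def Ev1_def by (rule sum.cong) auto
  finally show ?thesis .
qed

lemma XsE: "X (sm t x) p q \<simeq> cst t * X x p q" by (rule R2)

definition Qt :: "nat \<Rightarrow> 'a \<Rightarrow> 'a \<Rightarrow> 'a \<Rightarrow> nat \<Rightarrow> nat \<Rightarrow> nat \<Rightarrow> nat \<Rightarrow> nat \<Rightarrow> nat \<Rightarrow> ('a, 'k) rpoly" where
  "Qt s a b c i1 j1 i2 j2 i3 j3 =
      Ev3 s c a i1 j1 * Ev2 s b i2 j2 * Ev4 s i3 j3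
    - Ev3 s c a i1 j1 * Ev4 s i2 j2 * Ev1 s b i3 j3
    - Ev1 s c i1 j1 * Ev3 s a b i2 j2 * Ev4 s i3 j3
    + Ev1 s c i1 j1 * Ev1 s a i2 j2 * Ev1 s b i3 j3
    - Ev2 s a i1 j1 * Ev2 s b i2 j2 * Ev2 s c i3 j3
    + Ev2 s a i1 j1 * Ev4 s i2 j2 * Ev3 s b c i3 j3
    + Ev4 s i1 j1 * Ev3 s a b i2 j2 * Ev2 s c i3 j3
    - Ev4 s i1 j1 * Ev1 s a i2 j2 * Ev3 s b c i3 j3"

lemma T3_concat: "T3 i1 j1 i2 j2 i3 j3 (concat (map f xs)) = sum_list (map (\<lambda>s. T3 i1 j1 i2 j2 i3 j3 (f s)) xs)"
  by (induction xs) (simp_all add: T3_append, simp add: T3_def)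

lemma qP_T3: "T3 i1 j1 i2 j2 i3 j3 (qP_rhs sm K e a b c) \<simeq> cst (1/4) * (\<Sum>s<K. Qt s a b c i1 j1 i2 j2 i3 j3)"
proof -
  let ?q = "cst (1/4) :: ('a, 'k) rpoly"
  have one: "T3 i1 j1 i2 j2 i3 j3 (let es = e s; p = sm (1/4); m = sm (-(1/4)) in
     [ (p (c * es * a), es * b, es),
       (m (c * es * a), es, b * es),
       (m (c * es), a * es * b, es),
       (p (c * es), a * es, b * es),
       (m (es * a), es * b, es * c),
       (p (es * a), es, b * es * c),
       (p es, a * es * b, es * c),
       (m es, a * es, b * es * c) ]) \<simeq> ?q * Qt s a b c i1 j1 i2 j2 i3 j3" if s: "s < K" for s
  proof -
    have "T3 i1 j1 i2 j2 i3 j3 (let es = e s; p = sm (1/4); m = sm (-(1/4)) in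
     [ (p (c * es * a), es * b, es),
       (m (c * es * a), es, b * es),
       (m (c * es), a * es * b, es),
       (p (c * es), a * es, b * es),
       (m (es * a), es * b, es * c),
       (p (es * a), es, b * es * c),
       (p es, a * es * b, es * c),
       (m es, a * es, b * es * c) ]) =
       X (sm (1/4) (c * e s * a)) i1 j1 * X (e s * b) i2 j2 * X (e s) i3 j3
     + (X (sm (-(1/4)) (c * e s * a)) i1 j1 * X (e s) i2 j2 * X (b * e s) i3 j3
     + (X (sm (-(1/4)) (c * e s)) i1 j1 * X (a * e s * b) i2 j2 * X (e s) i3 j3
     + (X (sm (1/4) (c * e s)) i1 j1 * X (a * e s) i2 j2 * X (b * e s) i3 j3
     + (X (sm (-(1/4)) (e s * a)) i1 j1 * X (e s * b) i2 j2 * X (e s * c) i3 j3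
     + (X (sm (1/4) (e s * a)) i1 j1 * X (e s) i2 j2 * X (b * e s * c) i3 j3
     + (X (sm (1/4) (e s)) i1 j1 * X (a * e s * b) i2 j2 * X (e s * c) i3 j3
     + X (sm (-(1/4)) (e s)) i1 j1 * X (a * e s) i2 j2 * X (b * e s * c) i3 j3))))))"
      by (simp add: T3_def Let_def)
    also have "\<dots> \<simeq>
       (?q * Ev3 s c a i1 j1) * Ev2 s b i2 j2 * Ev4 s i3 j3
     + ((cst (-(1/4)) * Ev3 s c a i1 j1) * Ev4 s i2 j2 * Ev1 s b i3 j3
     + ((cst (-(1/4)) * Ev1 s c i1 j1) * Ev3 s a b i2 j2 * Ev4 s i3 j3
     + ((?q * Ev1 s c i1 j1) * Ev1 s a i2 j2 * Ev1 s b i3 j3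
     + ((cst (-(1/4)) * Ev2 s a i1 j1) * Ev2 s b i2 j2 * Ev2 s c i3 j3
     + ((?q * Ev2 s a i1 j1) * Ev4 s i2 j2 * Ev3 s b c i3 j3
     + ((?q * Ev4 s i1 j1) * Ev3 s a b i2 j2 * Ev2 s c i3 j3
     + (cst (-(1/4)) * Ev4 s i1 j1) * Ev1 s a i2 j2 * Ev3 s b c i3 j3))))))"
      by (intro req_add req_mult req_trans[OF XsE] req_refl XE1 XE2 XE3 XE4 s)
    also have "\<dots> = ?q * Qt s a b c i1 j1 i2 j2 i3 j3"
      by (simp add: Qt_def cst_uminus algebra_simps)
    finally show ?thesis .
  qed
  have "T3 i1 j1 i2 j2 i3 j3 (qP_rhs sm K e a b c) = (\<Sum>s<K. T3 i1 j1 i2 j2 i3 j3 (let es = e s; p = sm (1/4); m = sm (-(1/4)) in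
     [ (p (c * es * a), es * b, es),
       (m (c * es * a), es, b * es),
       (m (c * es), a * es * b, es),
       (p (c * es), a * es, b * es),
       (m (es * a), es * b, es * c),
       (p (es * a), es, b * es * c),
       (p es, a * es * b, es * c),
       (m es, a * es, b * es * c) ]))"
    unfolding qP_rhs_def T3_concat by (simp add: interv_sum_list_conv_sum_set_nat atLeast0LessThan)
  also have "\<dots> \<simeq> (\<Sum>s<K. ?q * Qt s a b c i1 j1 i2 j2 i3 j3)"
    by (intro req_sum one) simp
  also have "\<dots> = ?q * (\<Sum>s<K. Qt s a b c i1 j1 i2 j2 i3 j3)" by (simp add: sum_distrib_left)
  finally show ?thesis .
qed

lemma Jac_gen_Q: "Jac (X a i j) (X b k l) (X c u v) \<simeq>
   cst (1/4) * (\<Sum>s<K. Qt s a b c u j i l k v) - cst (1/4) * (\<Sum>s<K. Qt s a c b k j i v u l)"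
proof -
  have "Jac (X a i j) (X b k l) (X c u v) \<simeq>
     T3 u j i l k v (triple_bracket dbr a b c) - T3 k j i v u l (triple_bracket dbr a c b)"
    by (rule Jac_gen)
  also have "\<dots> \<simeq> T3 u j i l k v (qP_rhs sm K e a b c) - T3 k j i v u l (qP_rhs sm K e a c b)"
    unfolding T3_def by (intro req_diff teq3_prod lmod_X qP)
  also have "\<dots> \<simeq> cst (1/4) * (\<Sum>s<K. Qt s a b c u j i l k v) - cst (1/4) * (\<Sum>s<K. Qt s a c b k j i v u l)"
    by (intro req_diff qP_T3)
  finally show ?thesis .
qed

end


context ctx begin

definition eA1 :: "'a \<Rightarrow> nat \<Rightarrow> nat \<Rightarrow> nat \<Rightarrow> nat \<Rightarrow> ('a, 'k) rpoly" where
  "eA1 x i j p r = (if r = j then X x i p else 0)"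
definition eA2 :: "'a \<Rightarrow> nat \<Rightarrow> nat \<Rightarrow> nat \<Rightarrow> nat \<Rightarrow> ('a, 'k) rpoly" where
  "eA2 x i j p r = (if p = i then X x r j else 0)"

lemma ss1: "s < K \<Longrightarrow> (\<Sum>p<NN. if ib s p \<and> p = t then f p else 0) = (if ib s t then f t else 0)"
proof -
  assume s: "s < K"
  have "(\<Sum>p<NN. if ib s p \<and> p = t then f p else 0) = (\<Sum>p<NN. if p = t \<and> ib s p then f p else 0)"
    by (rule sum.cong) auto
  also have "\<dots> = (if ib s t then f t else 0)"
    using sum_delta_conj[of "{..<NN}" t "ib s" f] inblock_lt[OF s, of t] by auto
  finally show ?thesis .
qed

lemma ss4: "s < K \<Longrightarrow> (\<Sum>p<NN. if ib s p \<and> p = t1 \<and> p = t2 then 1 else 0) = Ev4 s t2 t1"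
proof -
  assume s: "s < K"
  have "(\<Sum>p<NN. if ib s p \<and> p = t1 \<and> p = t2 then 1 else 0) = (\<Sum>p<NN. if ib s p \<and> p = t1 then (if t1 = t2 then 1 else 0) else (0::('a, 'k) rpoly))"
    by (rule sum.cong) auto
  also have "\<dots> = Ev4 s t2 t1" by (simp add: ss1[OF s] Ev4_def)
  finally show ?thesis .
qed

lemma fact3: "(\<Sum>p<NN. \<Sum>r<NN. \<Sum>q<NN. Fp p * Fr r * Fq q) = (\<Sum>p<NN. Fp p) * (\<Sum>r<NN. Fr r) * (\<Sum>q<NN. (Fq q :: ('a, 'k) rpoly))"
  by (rule prod3[symmetric])

lemma G1_111: assumes s: "s < K" shows
  "(\<Sum>p<NN. \<Sum>r<NN. \<Sum>q<NN. if ib s p \<and> ib s r \<and> ib s q then eA1 a i j p r * eA1 b k l q p * eA1 c u v r q else 0) = Ev1 s c u j * Ev1 s a i l * Ev1 s b k v"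
proof -
  have "(\<Sum>p<NN. \<Sum>r<NN. \<Sum>q<NN. if ib s p \<and> ib s r \<and> ib s q then eA1 a i j p r * eA1 b k l q p * eA1 c u v r q else 0) = (\<Sum>p<NN. \<Sum>r<NN. \<Sum>q<NN. (if ib s p \<and> p = l then X a i p else 0) * (if ib s r \<and> r = j then X c u r else 0) * (if ib s q \<and> q = v then X b k q else 0))"
    by (intro sum.cong refl) (auto simp: eA1_def eA2_def mult_ac)
  also have "\<dots> = Ev1 s c u j * Ev1 s a i l * Ev1 s b k v"
    unfolding fact3 by (simp add: ss1[OF s] ss4[OF s] Ev1_def Ev2_def Ev3_def mult_ac)
  finally show ?thesis .
qed

lemma G1_112: assumes s: "s < K" shows
  "(\<Sum>p<NN. \<Sum>r<NN. \<Sum>q<NN. if ib s p \<and> ib s r \<and> ib s q then eA1 a i j p r * eA1 b k l q p * eA2 c u v r q else 0) = Ev4 s u j * Ev1 s a i l * Ev3 s b c k v"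
proof -
  have "(\<Sum>p<NN. \<Sum>r<NN. \<Sum>q<NN. if ib s p \<and> ib s r \<and> ib s q then eA1 a i j p r * eA1 b k l q p * eA2 c u v r q else 0) = (\<Sum>p<NN. \<Sum>r<NN. \<Sum>q<NN. (if ib s p \<and> p = l then X a i p else 0) * (if ib s r \<and> r = j \<and> r = u then 1 else 0) * (if ib s q then X b k q * X c q v else 0))"
    by (intro sum.cong refl) (auto simp: eA1_def eA2_def mult_ac)
  also have "\<dots> = Ev4 s u j * Ev1 s a i l * Ev3 s b c k v"
    unfolding fact3 by (simp add: ss1[OF s] ss4[OF s] Ev1_def Ev2_def Ev3_def mult_ac)
  finally show ?thesis .
qed

lemma G1_121: assumes s: "s < K" shows
  "(\<Sum>p<NN. \<Sum>r<NN. \<Sum>q<NN. if ib s p \<and> ib s r \<and> ib s q then eA1 a i j p r * eA2 b k l q p * eA1 c u v r q else 0) = Ev1 s c u j * Ev3 s a b i l * Ev4 s k v"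
proof -
  have "(\<Sum>p<NN. \<Sum>r<NN. \<Sum>q<NN. if ib s p \<and> ib s r \<and> ib s q then eA1 a i j p r * eA2 b k l q p * eA1 c u v r q else 0) = (\<Sum>p<NN. \<Sum>r<NN. \<Sum>q<NN. (if ib s p then X a i p * X b p l else 0) * (if ib s r \<and> r = j then X c u r else 0) * (if ib s q \<and> q = v \<and> q = k then 1 else 0))"
    by (intro sum.cong refl) (auto simp: eA1_def eA2_def mult_ac)
  also have "\<dots> = Ev1 s c u j * Ev3 s a b i l * Ev4 s k v"
    unfolding fact3 by (simp add: ss1[OF s] ss4[OF s] Ev1_def Ev2_def Ev3_def mult_ac)
  finally show ?thesis .
qed

lemma G1_122: assumes s: "s < K" shows
  "(\<Sum>p<NN. \<Sum>r<NN. \<Sum>q<NN. if ib s p \<and> ib s r \<and> ib s q then eA1 a i j p r * eA2 b k l q p * eA2 c u v r q else 0) = Ev4 s u j * Ev3 s a b i l * Ev2 s c k v"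
proof -
  have "(\<Sum>p<NN. \<Sum>r<NN. \<Sum>q<NN. if ib s p \<and> ib s r \<and> ib s q then eA1 a i j p r * eA2 b k l q p * eA2 c u v r q else 0) = (\<Sum>p<NN. \<Sum>r<NN. \<Sum>q<NN. (if ib s p then X a i p * X b p l else 0) * (if ib s r \<and> r = j \<and> r = u then 1 else 0) * (if ib s q \<and> q = k then X c q v else 0))"
    by (intro sum.cong refl) (auto simp: eA1_def eA2_def mult_ac)
  also have "\<dots> = Ev4 s u j * Ev3 s a b i l * Ev2 s c k v"
    unfolding fact3 by (simp add: ss1[OF s] ss4[OF s] Ev1_def Ev2_def Ev3_def mult_ac)
  finally show ?thesis .
qed

lemma G1_211: assumes s: "s < K" shows
  "(\<Sum>p<NN. \<Sum>r<NN. \<Sum>q<NN. if ib s p \<and> ib s r \<and> ib s q then eA2 a i j p r * eA1 b k l q p * eA1 c u v r q else 0) = Ev3 s c a u j * Ev4 s i l * Ev1 s b k v"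
proof -
  have "(\<Sum>p<NN. \<Sum>r<NN. \<Sum>q<NN. if ib s p \<and> ib s r \<and> ib s q then eA2 a i j p r * eA1 b k l q p * eA1 c u v r q else 0) = (\<Sum>p<NN. \<Sum>r<NN. \<Sum>q<NN. (if ib s p \<and> p = l \<and> p = i then 1 else 0) * (if ib s r then X c u r * X a r j else 0) * (if ib s q \<and> q = v then X b k q else 0))"
    by (intro sum.cong refl) (auto simp: eA1_def eA2_def mult_ac)
  also have "\<dots> = Ev3 s c a u j * Ev4 s i l * Ev1 s b k v"
    unfolding fact3 by (simp add: ss1[OF s] ss4[OF s] Ev1_def Ev2_def Ev3_def mult_ac)
  finally show ?thesis .
qed

lemma G1_212: assumes s: "s < K" shows
  "(\<Sum>p<NN. \<Sum>r<NN. \<Sum>q<NN. if ib s p \<and> ib s r \<and> ib s q then eA2 a i j p r * eA1 b k l q p * eA2 c u v r q else 0) = Ev2 s a u j * Ev4 s i l * Ev3 s b c k v"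
proof -
  have "(\<Sum>p<NN. \<Sum>r<NN. \<Sum>q<NN. if ib s p \<and> ib s r \<and> ib s q then eA2 a i j p r * eA1 b k l q p * eA2 c u v r q else 0) = (\<Sum>p<NN. \<Sum>r<NN. \<Sum>q<NN. (if ib s p \<and> p = l \<and> p = i then 1 else 0) * (if ib s r \<and> r = u then X a r j else 0) * (if ib s q then X b k q * X c q v else 0))"
    by (intro sum.cong refl) (auto simp: eA1_def eA2_def mult_ac)
  also have "\<dots> = Ev2 s a u j * Ev4 s i l * Ev3 s b c k v"
    unfolding fact3 by (simp add: ss1[OF s] ss4[OF s] Ev1_def Ev2_def Ev3_def mult_ac)
  finally show ?thesis .
qed

lemma G1_221: assumes s: "s < K" shows
  "(\<Sum>p<NN. \<Sum>r<NN. \<Sum>q<NN. if ib s p \<and> ib s r \<and> ib s q then eA2 a i j p r * eA2 b k l q p * eA1 c u v r q else 0) = Ev3 s c a u j * Ev2 s b i l * Ev4 s k v"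
proof -
  have "(\<Sum>p<NN. \<Sum>r<NN. \<Sum>q<NN. if ib s p \<and> ib s r \<and> ib s q then eA2 a i j p r * eA2 b k l q p * eA1 c u v r q else 0) = (\<Sum>p<NN. \<Sum>r<NN. \<Sum>q<NN. (if ib s p \<and> p = i then X b p l else 0) * (if ib s r then X c u r * X a r j else 0) * (if ib s q \<and> q = v \<and> q = k then 1 else 0))"
    by (intro sum.cong refl) (auto simp: eA1_def eA2_def mult_ac)
  also have "\<dots> = Ev3 s c a u j * Ev2 s b i l * Ev4 s k v"
    unfolding fact3 by (simp add: ss1[OF s] ss4[OF s] Ev1_def Ev2_def Ev3_def mult_ac)
  finally show ?thesis .
qed

lemma G1_222: assumes s: "s < K" shows
  "(\<Sum>p<NN. \<Sum>r<NN. \<Sum>q<NN. if ib s p \<and> ib s r \<and> ib s q then eA2 a i j p r * eA2 b k l q p * eA2 c u v r q else 0) = Ev2 s a u j * Ev2 s b i l * Ev2 s c k v"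
proof -
  have "(\<Sum>p<NN. \<Sum>r<NN. \<Sum>q<NN. if ib s p \<and> ib s r \<and> ib s q then eA2 a i j p r * eA2 b k l q p * eA2 c u v r q else 0) = (\<Sum>p<NN. \<Sum>r<NN. \<Sum>q<NN. (if ib s p \<and> p = i then X b p l else 0) * (if ib s r \<and> r = u then X a r j else 0) * (if ib s q \<and> q = k then X c q v else 0))"
    by (intro sum.cong refl) (auto simp: eA1_def eA2_def mult_ac)
  also have "\<dots> = Ev2 s a u j * Ev2 s b i l * Ev2 s c k v"
    unfolding fact3 by (simp add: ss1[OF s] ss4[OF s] Ev1_def Ev2_def Ev3_def mult_ac)
  finally show ?thesis .
qed

lemma G2_111: assumes s: "s < K" shows
  "(\<Sum>p<NN. \<Sum>q<NN. \<Sum>r<NN. if ib s p \<and> ib s q \<and> ib s r then eA1 a i j p q * eA1 b k l q r * eA1 c u v r p else 0) = Ev1 s b k j * Ev1 s a i v * Ev1 s c u l"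
proof -
  have "(\<Sum>p<NN. \<Sum>q<NN. \<Sum>r<NN. if ib s p \<and> ib s q \<and> ib s r then eA1 a i j p q * eA1 b k l q r * eA1 c u v r p else 0) = (\<Sum>p<NN. \<Sum>q<NN. \<Sum>r<NN. (if ib s p \<and> p = v then X a i p else 0) * (if ib s q \<and> q = j then X b k q else 0) * (if ib s r \<and> r = l then X c u r else 0))"
    by (intro sum.cong refl) (auto simp: eA1_def eA2_def mult_ac)
  also have "\<dots> = Ev1 s b k j * Ev1 s a i v * Ev1 s c u l"
    unfolding fact3 by (simp add: ss1[OF s] ss4[OF s] Ev1_def Ev2_def Ev3_def mult_ac)
  finally show ?thesis .
qed

lemma G2_112: assumes s: "s < K" shows
  "(\<Sum>p<NN. \<Sum>q<NN. \<Sum>r<NN. if ib s p \<and> ib s q \<and> ib s r then eA1 a i j p q * eA1 b k l q r * eA2 c u v r p else 0) = Ev1 s b k j * Ev3 s a c i v * Ev4 s u l"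
proof -
  have "(\<Sum>p<NN. \<Sum>q<NN. \<Sum>r<NN. if ib s p \<and> ib s q \<and> ib s r then eA1 a i j p q * eA1 b k l q r * eA2 c u v r p else 0) = (\<Sum>p<NN. \<Sum>q<NN. \<Sum>r<NN. (if ib s p then X a i p * X c p v else 0) * (if ib s q \<and> q = j then X b k q else 0) * (if ib s r \<and> r = l \<and> r = u then 1 else 0))"
    by (intro sum.cong refl) (auto simp: eA1_def eA2_def mult_ac)
  also have "\<dots> = Ev1 s b k j * Ev3 s a c i v * Ev4 s u l"
    unfolding fact3 by (simp add: ss1[OF s] ss4[OF s] Ev1_def Ev2_def Ev3_def mult_ac)
  finally show ?thesis .
qed

lemma G2_121: assumes s: "s < K" shows
  "(\<Sum>p<NN. \<Sum>q<NN. \<Sum>r<NN. if ib s p \<and> ib s q \<and> ib s r then eA1 a i j p q * eA2 b k l q r * eA1 c u v r p else 0) = Ev4 s k j * Ev1 s a i v * Ev3 s c b u l"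
proof -
  have "(\<Sum>p<NN. \<Sum>q<NN. \<Sum>r<NN. if ib s p \<and> ib s q \<and> ib s r then eA1 a i j p q * eA2 b k l q r * eA1 c u v r p else 0) = (\<Sum>p<NN. \<Sum>q<NN. \<Sum>r<NN. (if ib s p \<and> p = v then X a i p else 0) * (if ib s q \<and> q = j \<and> q = k then 1 else 0) * (if ib s r then X c u r * X b r l else 0))"
    by (intro sum.cong refl) (auto simp: eA1_def eA2_def mult_ac)
  also have "\<dots> = Ev4 s k j * Ev1 s a i v * Ev3 s c b u l"
    unfolding fact3 by (simp add: ss1[OF s] ss4[OF s] Ev1_def Ev2_def Ev3_def mult_ac)
  finally show ?thesis .
qed

lemma G2_122: assumes s: "s < K" shows
  "(\<Sum>p<NN. \<Sum>q<NN. \<Sum>r<NN. if ib s p \<and> ib s q \<and> ib s r then eA1 a i j p q * eA2 b k l q r * eA2 c u v r p else 0) = Ev4 s k j * Ev3 s a c i v * Ev2 s b u l"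
proof -
  have "(\<Sum>p<NN. \<Sum>q<NN. \<Sum>r<NN. if ib s p \<and> ib s q \<and> ib s r then eA1 a i j p q * eA2 b k l q r * eA2 c u v r p else 0) = (\<Sum>p<NN. \<Sum>q<NN. \<Sum>r<NN. (if ib s p then X a i p * X c p v else 0) * (if ib s q \<and> q = j \<and> q = k then 1 else 0) * (if ib s r \<and> r = u then X b r l else 0))"
    by (intro sum.cong refl) (auto simp: eA1_def eA2_def mult_ac)
  also have "\<dots> = Ev4 s k j * Ev3 s a c i v * Ev2 s b u l"
    unfolding fact3 by (simp add: ss1[OF s] ss4[OF s] Ev1_def Ev2_def Ev3_def mult_ac)
  finally show ?thesis .
qed

lemma G2_211: assumes s: "s < K" shows
  "(\<Sum>p<NN. \<Sum>q<NN. \<Sum>r<NN. if ib s p \<and> ib s q \<and> ib s r then eA2 a i j p q * eA1 b k l q r * eA1 c u v r p else 0) = Ev3 s b a k j * Ev4 s i v * Ev1 s c u l"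
proof -
  have "(\<Sum>p<NN. \<Sum>q<NN. \<Sum>r<NN. if ib s p \<and> ib s q \<and> ib s r then eA2 a i j p q * eA1 b k l q r * eA1 c u v r p else 0) = (\<Sum>p<NN. \<Sum>q<NN. \<Sum>r<NN. (if ib s p \<and> p = v \<and> p = i then 1 else 0) * (if ib s q then X b k q * X a q j else 0) * (if ib s r \<and> r = l then X c u r else 0))"
    by (intro sum.cong refl) (auto simp: eA1_def eA2_def mult_ac)
  also have "\<dots> = Ev3 s b a k j * Ev4 s i v * Ev1 s c u l"
    unfolding fact3 by (simp add: ss1[OF s] ss4[OF s] Ev1_def Ev2_def Ev3_def mult_ac)
  finally show ?thesis .
qed

lemma G2_212: assumes s: "s < K" shows
  "(\<Sum>p<NN. \<Sum>q<NN. \<Sum>r<NN. if ib s p \<and> ib s q \<and> ib s r then eA2 a i j p q * eA1 b k l q r * eA2 c u v r p else 0) = Ev3 s b a k j * Ev2 s c i v * Ev4 s u l"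
proof -
  have "(\<Sum>p<NN. \<Sum>q<NN. \<Sum>r<NN. if ib s p \<and> ib s q \<and> ib s r then eA2 a i j p q * eA1 b k l q r * eA2 c u v r p else 0) = (\<Sum>p<NN. \<Sum>q<NN. \<Sum>r<NN. (if ib s p \<and> p = i then X c p v else 0) * (if ib s q then X b k q * X a q j else 0) * (if ib s r \<and> r = l \<and> r = u then 1 else 0))"
    by (intro sum.cong refl) (auto simp: eA1_def eA2_def mult_ac)
  also have "\<dots> = Ev3 s b a k j * Ev2 s c i v * Ev4 s u l"
    unfolding fact3 by (simp add: ss1[OF s] ss4[OF s] Ev1_def Ev2_def Ev3_def mult_ac)
  finally show ?thesis .
qed

lemma G2_221: assumes s: "s < K" shows
  "(\<Sum>p<NN. \<Sum>q<NN. \<Sum>r<NN. if ib s p \<and> ib s q \<and> ib s r then eA2 a i j p q * eA2 b k l q r * eA1 c u v r p else 0) = Ev2 s a k j * Ev4 s i v * Ev3 s c b u l"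
proof -
  have "(\<Sum>p<NN. \<Sum>q<NN. \<Sum>r<NN. if ib s p \<and> ib s q \<and> ib s r then eA2 a i j p q * eA2 b k l q r * eA1 c u v r p else 0) = (\<Sum>p<NN. \<Sum>q<NN. \<Sum>r<NN. (if ib s p \<and> p = v \<and> p = i then 1 else 0) * (if ib s q \<and> q = k then X a q j else 0) * (if ib s r then X c u r * X b r l else 0))"
    by (intro sum.cong refl) (auto simp: eA1_def eA2_def mult_ac)
  also have "\<dots> = Ev2 s a k j * Ev4 s i v * Ev3 s c b u l"
    unfolding fact3 by (simp add: ss1[OF s] ss4[OF s] Ev1_def Ev2_def Ev3_def mult_ac)
  finally show ?thesis .
qed

lemma G2_222: assumes s: "s < K" shows
  "(\<Sum>p<NN. \<Sum>q<NN. \<Sum>r<NN. if ib s p \<and> ib s q \<and> ib s r then eA2 a i j p q * eA2 b k l q r * eA2 c u v r p else 0) = Ev2 s a k j * Ev2 s c i v * Ev2 s b u l"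
proof -
  have "(\<Sum>p<NN. \<Sum>q<NN. \<Sum>r<NN. if ib s p \<and> ib s q \<and> ib s r then eA2 a i j p q * eA2 b k l q r * eA2 c u v r p else 0) = (\<Sum>p<NN. \<Sum>q<NN. \<Sum>r<NN. (if ib s p \<and> p = i then X c p v else 0) * (if ib s q \<and> q = k then X a q j else 0) * (if ib s r \<and> r = u then X b r l else 0))"
    by (intro sum.cong refl) (auto simp: eA1_def eA2_def mult_ac)
  also have "\<dots> = Ev2 s a k j * Ev2 s c i v * Ev2 s b u l"
    unfolding fact3 by (simp add: ss1[OF s] ss4[OF s] Ev1_def Ev2_def Ev3_def mult_ac)
  finally show ?thesis .
qed

end


lemma sum_unique_if:
  assumes uniq: "\<And>s t. s \<in> S \<Longrightarrow> t \<in> S \<Longrightarrow> Q s \<Longrightarrow> Q t \<Longrightarrow> s = t" and fin: "finite S"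
  shows "(\<Sum>s\<in>S. if Q s then F else 0) = (if \<exists>s\<in>S. Q s then F else (0::'r::comm_monoid_add))"
proof (cases "\<exists>s\<in>S. Q s")
  case True
  then obtain s0 where s0: "s0 \<in> S" "Q s0" by blast
  have "(\<Sum>s\<in>S. if Q s then F else 0) = (\<Sum>s\<in>S. if s = s0 then F else 0)"
    by (rule sum.cong) (use uniq s0 in auto)
  also have "\<dots> = F" using s0 fin by simp
  finally show ?thesis using True by simp
next
  case False then show ?thesis by simp
qed

lemma if0_diff: "(if P then x - y else 0) = (if P then x else 0) - (if P then y else (0::'r::ab_group_add))"
  by simp
lemma if0_add: "(if P then x + y else 0) = (if P then x else 0) + (if P then y else (0::'r::ab_group_add))"
  by simp

context ctx begin

definition eRE :: "'a \<Rightarrow> nat \<Rightarrow> nat \<Rightarrow> nat \<Rightarrow> nat \<Rightarrow> ('a, 'k) rpoly" where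
  "eRE x i j p r = eA1 x i j p r - eA2 x i j p r"

lemma Phi1: assumes s: "s < K" shows
  "(\<Sum>p<NN. \<Sum>r<NN. \<Sum>q<NN. if ib s p \<and> ib s r \<and> ib s q then eRE a i j p r * eRE b k l q p * eRE c u v r q else 0)
   = Qt s a b c u j i l k v"
proof -
  let ?P = "\<lambda>p r q. ib s p \<and> ib s r \<and> ib s q"
  have pt: "(if ?P p r q then eRE a i j p r * eRE b k l q p * eRE c u v r q else 0) =
      (if ?P p r q then eA1 a i j p r * eA1 b k l q p * eA1 c u v r q else 0)
    - (if ?P p r q then eA1 a i j p r * eA1 b k l q p * eA2 c u v r q else 0)
    - (if ?P p r q then eA1 a i j p r * eA2 b k l q p * eA1 c u v r q else 0)
    + (if ?P p r q then eA1 a i j p r * eA2 b k l q p * eA2 c u v r q else 0)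
    - (if ?P p r q then eA2 a i j p r * eA1 b k l q p * eA1 c u v r q else 0)
    + (if ?P p r q then eA2 a i j p r * eA1 b k l q p * eA2 c u v r q else 0)
    + (if ?P p r q then eA2 a i j p r * eA2 b k l q p * eA1 c u v r q else 0)
    - (if ?P p r q then eA2 a i j p r * eA2 b k l q p * eA2 c u v r q else 0)" for p r q
  proof -
    have alg: "eRE a i j p r * eRE b k l q p * eRE c u v r q =
      eA1 a i j p r * eA1 b k l q p * eA1 c u v r q - eA1 a i j p r * eA1 b k l q p * eA2 c u v r q
    - eA1 a i j p r * eA2 b k l q p * eA1 c u v r q + eA1 a i j p r * eA2 b k l q p * eA2 c u v r q
    - eA2 a i j p r * eA1 b k l q p * eA1 c u v r q + eA2 a i j p r * eA1 b k l q p * eA2 c u v r q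
    + eA2 a i j p r * eA2 b k l q p * eA1 c u v r q - eA2 a i j p r * eA2 b k l q p * eA2 c u v r q"
      unfolding eRE_def by (simp add: algebra_simps)
    show ?thesis unfolding alg by (simp only: if0_diff if0_add)
  qed
  show ?thesis
    unfolding pt by (simp only: sum.distrib sum_subtractf G1_111[OF s] G1_112[OF s] G1_121[OF s] G1_122[OF s]
      G1_211[OF s] G1_212[OF s] G1_221[OF s] G1_222[OF s]) (simp add: Qt_def algebra_simps)
qed

lemma Phi2: assumes s: "s < K" shows
  "(\<Sum>p<NN. \<Sum>q<NN. \<Sum>r<NN. if ib s p \<and> ib s q \<and> ib s r then eRE a i j p q * eRE b k l q r * eRE c u v r p else 0)
   = Qt s a c b k j i v u l"
proof -
  let ?P = "\<lambda>p q r. ib s p \<and> ib s q \<and> ib s r"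
  have pt: "(if ?P p q r then eRE a i j p q * eRE b k l q r * eRE c u v r p else 0) =
      (if ?P p q r then eA1 a i j p q * eA1 b k l q r * eA1 c u v r p else 0)
    - (if ?P p q r then eA1 a i j p q * eA1 b k l q r * eA2 c u v r p else 0)
    - (if ?P p q r then eA1 a i j p q * eA2 b k l q r * eA1 c u v r p else 0)
    + (if ?P p q r then eA1 a i j p q * eA2 b k l q r * eA2 c u v r p else 0)
    - (if ?P p q r then eA2 a i j p q * eA1 b k l q r * eA1 c u v r p else 0)
    + (if ?P p q r then eA2 a i j p q * eA1 b k l q r * eA2 c u v r p else 0)
    + (if ?P p q r then eA2 a i j p q * eA2 b k l q r * eA1 c u v r p else 0)
    - (if ?P p q r then eA2 a i j p q * eA2 b k l q r * eA2 c u v r p else 0)" for p q r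
  proof -
    have alg: "eRE a i j p q * eRE b k l q r * eRE c u v r p =
      eA1 a i j p q * eA1 b k l q r * eA1 c u v r p - eA1 a i j p q * eA1 b k l q r * eA2 c u v r p
    - eA1 a i j p q * eA2 b k l q r * eA1 c u v r p + eA1 a i j p q * eA2 b k l q r * eA2 c u v r p
    - eA2 a i j p q * eA1 b k l q r * eA1 c u v r p + eA2 a i j p q * eA1 b k l q r * eA2 c u v r p
    + eA2 a i j p q * eA2 b k l q r * eA1 c u v r p - eA2 a i j p q * eA2 b k l q r * eA2 c u v r p"
      unfolding eRE_def by (simp add: algebra_simps)
    show ?thesis unfolding alg by (simp only: if0_diff if0_add)
  qed
  show ?thesis
    unfolding pt by (simp only: sum.distrib sum_subtractf G2_111[OF s] G2_112[OF s] G2_121[OF s] G2_122[OF s]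
      G2_211[OF s] G2_212[OF s] G2_221[OF s] G2_222[OF s]) (simp add: Qt_def algebra_simps)
qed

end


context ctx begin

lemma cst_if: "cst (if P then x else y) = (if P then cst x else cst y)" by simp

lemma eR_Emat:
  assumes "i < NN" "j < NN" "p < NN" "q < NN"
  shows "eR (Emat p q) (X x i j) = eRE x i j p q"
proof -
  have s1: "(\<Sum>m<NN. X x i m * cst (Emat p q m j)) = eA1 x i j p q"
  proof -
    have "(\<Sum>m<NN. X x i m * cst (Emat p q m j)) = (\<Sum>m<NN. if m = p then (if q = j then X x i p else 0) else 0)"
      by (rule sum.cong) (auto simp: Emat_def cst_if)
    then show ?thesis using assms by (simp add: eA1_def)
  qed
  have s2: "(\<Sum>m<NN. cst (Emat p q i m) * X x m j) = eA2 x i j p q"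
  proof -
    have "(\<Sum>m<NN. cst (Emat p q i m) * X x m j) = (\<Sum>m<NN. if m = q then (if p = i then X x q j else 0) else 0)"
      by (rule sum.cong) (auto simp: Emat_def cst_if)
    then show ?thesis using assms by (simp add: eA2_def)
  qed
  show ?thesis using assms by (simp add: eR_X sum_subtractf s1 s2 eRE_def)
qed

lemma phiR_closed:
  fixes P Q R :: "('a, 'k) rpoly"
  shows "phiR K \<alpha> P Q R = cst (1/2) * (\<Sum>u\<in>gbasis K \<alpha>. \<Sum>v\<in>gbasis K \<alpha>. \<Sum>w\<in>gbasis K \<alpha>.
     cst (cc u v w) * (eR (Em u) P * eR (Em v) Q * eR (Em w) R))"
proof -
  have e6: "cst (1/12) * 6 = (cst (1/2) :: ('a, 'k) rpoly)"
  proof -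
    have h: "(6::('a, 'k) rpoly) = cst 6" by (simp add: cst_def)
    have "cst (1/12) * 6 = (cst (1/12 * 6) :: ('a, 'k) rpoly)" unfolding h cst_mult ..
    also have "(1/12 * 6 :: 'k) = 1/2" by simp
    finally show ?thesis .
  qed
  show ?thesis unfolding phiR_def
    by (rule CE1[where Cf="\<lambda>u v w. eR (Em u) P * eR (Em v) Q * eR (Em w) R"]) (simp_all add: cst_uminus e6)
qed

lemma ccR_split: "cst (cc u v w) * x = (if fst u = snd v \<and> fst v = snd w \<and> fst w = snd u then x else 0)
    - (if fst u = snd w \<and> fst w = snd v \<and> fst v = snd u then x else (0::('a, 'k) rpoly))"
  unfolding cc_def cst_diff cst_if cst_1 cst_0 left_diff_distrib
  by (simp only: if_distrib[of "\<lambda>t. t * x"] mult_1 mult_zero_left)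

lemma blk_pt:
  assumes "p < NN" "q < NN" "r < NN"
  shows "(\<Sum>s<K. if ib s p \<and> ib s q \<and> ib s r then F else 0) =
     (if sameblock K \<alpha> p q \<and> sameblock K \<alpha> r p \<and> sameblock K \<alpha> q r then F else (0::('a, 'k) rpoly))"
proof -
  have "(\<Sum>s<K. if ib s p \<and> ib s q \<and> ib s r then F else 0) = (if \<exists>s\<in>{..<K}. ib s p \<and> ib s q \<and> ib s r then F else 0)"
    by (rule sum_unique_if) (auto dest: inblock_unique)
  also have "(\<exists>s\<in>{..<K}. ib s p \<and> ib s q \<and> ib s r) = (sameblock K \<alpha> p q \<and> sameblock K \<alpha> r p \<and> sameblock K \<alpha> q r)"
  proof
    assume "\<exists>s\<in>{..<K}. ib s p \<and> ib s q \<and> ib s r"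
    then show "sameblock K \<alpha> p q \<and> sameblock K \<alpha> r p \<and> sameblock K \<alpha> q r"
      by (auto simp: sameblock_def)
  next
    assume a: "sameblock K \<alpha> p q \<and> sameblock K \<alpha> r p \<and> sameblock K \<alpha> q r"
    then obtain s t where st: "s < K" "ib s p" "ib s q" "t < K" "ib t r" "ib t p"
      by (auto simp: sameblock_def)
    then have "s = t" using inblock_unique by metis
    then show "\<exists>s\<in>{..<K}. ib s p \<and> ib s q \<and> ib s r" using st by auto
  qed
  finally show ?thesis .
qed

lemma swap_out3: "(\<Sum>p\<in>A. \<Sum>q\<in>B. \<Sum>r\<in>C. \<Sum>s\<in>D. f s p q r) = (\<Sum>s\<in>D. \<Sum>p\<in>A. \<Sum>q\<in>B. \<Sum>r\<in>C. f s p q r)"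
proof -
  have "(\<Sum>p\<in>A. \<Sum>q\<in>B. \<Sum>r\<in>C. \<Sum>s\<in>D. f s p q r) = (\<Sum>p\<in>A. \<Sum>q\<in>B. \<Sum>s\<in>D. \<Sum>r\<in>C. f s p q r)"
    by (intro sum.cong refl sum.swap)
  also have "\<dots> = (\<Sum>p\<in>A. \<Sum>s\<in>D. \<Sum>q\<in>B. \<Sum>r\<in>C. f s p q r)"
    by (intro sum.cong refl sum.swap)
  also have "\<dots> = (\<Sum>s\<in>D. \<Sum>p\<in>A. \<Sum>q\<in>B. \<Sum>r\<in>C. f s p q r)"
    by (rule sum.swap)
  finally show ?thesis .
qed

lemma phi_gen:
  assumes lt: "i < NN" "j < NN" "k < NN" "l < NN" "u < NN" "v < NN"
  shows "cst (1/2) * phiR K \<alpha> (X a i j) (X b k l) (X c u v) =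
     cst (1/4) * (\<Sum>s<K. Qt s a b c u j i l k v) - cst (1/4) * (\<Sum>s<K. Qt s a c b k j i v u l)"
proof -
  let ?S = "sameblock K \<alpha>"
  let ?Cf = "\<lambda>U V W. eR (Em U) (X a i j) * eR (Em V) (X b k l) * eR (Em W) (X c u v)"
  have "phiR K \<alpha> (X a i j) (X b k l) (X c u v) = cst (1/2) *
     ((\<Sum>p<NN. \<Sum>r<NN. \<Sum>q<NN. if ?S p r \<and> ?S q p \<and> ?S r q then ?Cf (p, r) (q, p) (r, q) else 0)
    - (\<Sum>p<NN. \<Sum>q<NN. \<Sum>r<NN. if ?S p q \<and> ?S q r \<and> ?S r p then ?Cf (p, q) (q, r) (r, p) else 0))"
    unfolding phiR_closed ccR_split sum_subtractf c1_sum c2_sum ..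
  also have "(\<Sum>p<NN. \<Sum>r<NN. \<Sum>q<NN. if ?S p r \<and> ?S q p \<and> ?S r q then ?Cf (p, r) (q, p) (r, q) else 0)
     = (\<Sum>p<NN. \<Sum>r<NN. \<Sum>q<NN. \<Sum>s<K. if ib s p \<and> ib s r \<and> ib s q then eRE a i j p r * eRE b k l q p * eRE c u v r q else 0)"
    by (intro sum.cong refl) (simp add: blk_pt eR_Emat lt)
  also have "\<dots> = (\<Sum>s<K. Qt s a b c u j i l k v)"
    by (subst swap_out3, rule sum.cong[OF refl], rule Phi1) simp
  also have "(\<Sum>p<NN. \<Sum>q<NN. \<Sum>r<NN. if ?S p q \<and> ?S q r \<and> ?S r p then ?Cf (p, q) (q, r) (r, p) else 0)
     = (\<Sum>p<NN. \<Sum>q<NN. \<Sum>r<NN. \<Sum>s<K. if ib s p \<and> ib s q \<and> ib s r then eRE a i j p q * eRE b k l q r * eRE c u v r p else 0)"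
  proof (intro sum.cong refl)
    fix p q r assume "p \<in> {..<NN}" "q \<in> {..<NN}" "r \<in> {..<NN}"
    then have e: "(?S p q \<and> ?S q r \<and> ?S r p) = (?S p q \<and> ?S r p \<and> ?S q r)" by auto
    show "(if ?S p q \<and> ?S q r \<and> ?S r p then ?Cf (p, q) (q, r) (r, p) else 0) =
       (\<Sum>s<K. if ib s p \<and> ib s q \<and> ib s r then eRE a i j p q * eRE b k l q r * eRE c u v r p else 0)"
      unfolding e using \<open>p \<in> _\<close> \<open>q \<in> _\<close> \<open>r \<in> _\<close> by (simp add: blk_pt eR_Emat lt)
  qed
  also have "\<dots> = (\<Sum>s<K. Qt s a c b k j i v u l)"
    by (subst swap_out3, rule sum.cong[OF refl], rule Phi2) simp
  finally have "phiR K \<alpha> (X a i j) (X b k l) (X c u v) =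
     cst (1/2) * ((\<Sum>s<K. Qt s a b c u j i l k v) - (\<Sum>s<K. Qt s a c b k j i v u l))" .
  then have "cst (1/2) * phiR K \<alpha> (X a i j) (X b k l) (X c u v) =
     (cst (1/2) * cst (1/2)) * ((\<Sum>s<K. Qt s a b c u j i l k v) - (\<Sum>s<K. Qt s a c b k j i v u l))"
    by (simp add: mult.assoc)
  also have "cst (1/2) * cst (1/2) = (cst (1/4) :: ('a, 'k) rpoly)" by (simp add: cst_mult[symmetric])
  finally show ?thesis by (simp add: right_diff_distrib)
qed

end


lemma wedge3_add: "wedge3 (\<lambda>x y z. F1 x y z + F2 x y z) a b c = wedge3 F1 a b c + wedge3 F2 a b c"
  by (simp add: wedge3_def algebra_simps)
lemma wedge3_mult_r: "wedge3 (\<lambda>x y z. F x y z * t) a b c = wedge3 F a b c * (t::'r::comm_ring_1)"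
  by (simp add: wedge3_def algebra_simps)
lemma wedge3_mult_l: "wedge3 (\<lambda>x y z. t * F x y z) a b c = (t::'r::comm_ring_1) * wedge3 F a b c"
  by (simp add: wedge3_def algebra_simps)

lemma ce_add:
  fixes emb :: "'k::field \<Rightarrow> 'r::comm_ring_1"
  shows "cartan_eval K \<alpha> (\<lambda>x y z. F1 x y z + F2 x y z) emb = cartan_eval K \<alpha> F1 emb + cartan_eval K \<alpha> F2 emb"
  by (simp add: cartan_eval_def wedge3_add distrib_left sum.distrib)
lemma ce_mult_r:
  fixes emb :: "'k::field \<Rightarrow> 'r::comm_ring_1"
  shows "cartan_eval K \<alpha> (\<lambda>x y z. F x y z * t) emb = cartan_eval K \<alpha> F emb * t"
  by (simp add: cartan_eval_def wedge3_mult_r sum_distrib_right mult.assoc)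
lemma ce_mult_l:
  fixes emb :: "'k::field \<Rightarrow> 'r::comm_ring_1"
  shows "cartan_eval K \<alpha> (\<lambda>x y z. t * F x y z) emb = t * cartan_eval K \<alpha> F emb"
  by (simp add: cartan_eval_def wedge3_mult_l sum_distrib_left mult.left_commute)
lemma ce_zero: "(\<And>x y z. F x y z = 0) \<Longrightarrow> cartan_eval K \<alpha> F emb = 0"
  by (simp add: cartan_eval_def wedge3_def)

context ctx begin

lemma phiR_add1: "phiR K \<alpha> (p1 + p2) q r = phiR K \<alpha> p1 q r + phiR K \<alpha> p2 q r"
  unfolding phiR_def eR_add distrib_right by (rule ce_add)
lemma phiR_add2: "phiR K \<alpha> p (q1 + q2) r = phiR K \<alpha> p q1 r + phiR K \<alpha> p q2 r"
  unfolding phiR_def eR_add distrib_left distrib_right by (rule ce_add)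
lemma phiR_add3: "phiR K \<alpha> p q (r1 + r2) = phiR K \<alpha> p q r1 + phiR K \<alpha> p q r2"
  unfolding phiR_def eR_add distrib_left by (rule ce_add)

lemma phiR_mult1: "phiR K \<alpha> (p1 * p2) q r = phiR K \<alpha> p1 q r * p2 + p1 * phiR K \<alpha> p2 q r"
proof -
  have "(\<lambda>x y z. eR x (p1 * p2) * eR y q * eR z r) =
     (\<lambda>x y z. (eR x p1 * eR y q * eR z r) * p2 + p1 * (eR x p2 * eR y q * eR z r))"
    by (simp add: fun_eq_iff eR_mult algebra_simps)
  then show ?thesis unfolding phiR_def by (simp add: ce_add ce_mult_r ce_mult_l)
qed
lemma phiR_mult2: "phiR K \<alpha> p (q1 * q2) r = phiR K \<alpha> p q1 r * q2 + q1 * phiR K \<alpha> p q2 r"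
proof -
  have "(\<lambda>x y z. eR x p * eR y (q1 * q2) * eR z r) =
     (\<lambda>x y z. (eR x p * eR y q1 * eR z r) * q2 + q1 * (eR x p * eR y q2 * eR z r))"
    by (simp add: fun_eq_iff eR_mult algebra_simps)
  then show ?thesis unfolding phiR_def by (simp add: ce_add ce_mult_r ce_mult_l)
qed
lemma phiR_mult3: "phiR K \<alpha> p q (r1 * r2) = phiR K \<alpha> p q r1 * r2 + r1 * phiR K \<alpha> p q r2"
proof -
  have "(\<lambda>x y z. eR x p * eR y q * eR z (r1 * r2)) =
     (\<lambda>x y z. (eR x p * eR y q * eR z r1) * r2 + r1 * (eR x p * eR y q * eR z r2))"
    by (simp add: fun_eq_iff eR_mult algebra_simps)
  then show ?thesis unfolding phiR_def by (simp add: ce_add ce_mult_r ce_mult_l)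
qed
lemma phiR_cst1: "phiR K \<alpha> (cst c) q r = 0" unfolding phiR_def by (rule ce_zero) simp
lemma phiR_cst2: "phiR K \<alpha> p (cst c) r = 0" unfolding phiR_def by (rule ce_zero) simp
lemma phiR_cst3: "phiR K \<alpha> p q (cst c) = 0" unfolding phiR_def by (rule ce_zero) simp

lemma Jac_cyc: "Jac p q r = Jac q r p"
  by (simp add: Jac_def algebra_simps)
lemma Jac_cyc2: "Jac p q r = Jac r p q"
  by (simp add: Jac_def algebra_simps)
lemma Jac_add3: "Jac p q (r1 + r2) = Jac p q r1 + Jac p q r2"
  by (simp add: Jac_def br_add1 br_add2 algebra_simps)
lemma Jac_cst3: "Jac p q (cst c) = 0"
  by (simp add: Jac_def)
lemma Jac_mult3: "inI (Jac p q (r1 * r2) - (Jac p q r1 * r2 + r1 * Jac p q r2))"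
proof -
  have "Jac p q (r1 * r2) - (Jac p q r1 * r2 + r1 * Jac p q r2) =
     br q r1 * (br p r2 + br r2 p) + br q r2 * (br p r1 + br r1 p)"
    by (simp add: Jac_def br_mult1 br_mult2 br_add1 br_add2 algebra_simps)
  then show ?thesis using br_anti_I by (simp add: Iadd Imult)
qed

lemma Jac_wd1: "p \<simeq> p' \<Longrightarrow> Jac p q r \<simeq> Jac p' q r"
  unfolding Jac_def by (intro req_add br_wd req_refl)

lemma Jac_zero1: "Jac 0 q r = 0" by (simp add: Jac_def)

lemma der_vanish_mod:
  assumes cst: "\<And>c. inI (D (cst c))" and var: "\<And>a i j. inI (D (X a i j))"
    and add: "\<And>p q. D (p + q) = D p + D q"
    and mul: "\<And>p q. inI (D (p * q) - (D p * q + p * D q))"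
  shows "inI (D p)"
proof (induction p rule: rpoly_induct)
  case (3 p q) then show ?case by (simp add: add Iadd)
next
  case (4 p q)
  have "D (p * q) = (D (p * q) - (D p * q + p * D q)) + D p * q + p * D q" by simp
  then show ?case using 4 mul[of p q] by (metis Iadd Imult Imult2)
qed (use cst var in auto)

lemma jac_gen_all: "inI (Jac (X a i j) (X b k l) (X c u v) - cst (1/2) * phiR K \<alpha> (X a i j) (X b k l) (X c u v))"
proof (cases "i < NN \<and> j < NN \<and> k < NN \<and> l < NN \<and> u < NN \<and> v < NN")
  case True
  then show ?thesis using Jac_gen_Q[of a i j b k l c u v] phi_gen[of i j k l u v a b c]
    by (simp add: req_def')
next
  case False
  have phi0: "phiR K \<alpha> (X a i j) (X b k l) (X c u v) = 0"
  proof (cases "i < NN \<and> j < NN")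
    case False show ?thesis unfolding phiR_def by (rule ce_zero) (use False in \<open>auto simp: eR_X\<close>)
  next
    case T1: True
    show ?thesis
    proof (cases "k < NN \<and> l < NN")
      case False show ?thesis unfolding phiR_def by (rule ce_zero) (use False in \<open>auto simp: eR_X\<close>)
    next
      case True
      then have F: "\<not> (u < NN \<and> v < NN)" using False T1 by auto
      show ?thesis unfolding phiR_def by (rule ce_zero) (use F in \<open>auto simp: eR_X\<close>)
    qed
  qed
  have jac0: "Jac (X a i j) (X b k l) (X c u v) \<simeq> 0"
  proof (cases "i < NN \<and> j < NN")
    case False
    then show ?thesis using Jac_wd1[OF R5'[OF False]] by (simp add: Jac_zero1)
  next
    case T1: True
    show ?thesis
    proof (cases "k < NN \<and> l < NN")
      case False
      have "Jac (X b k l) (X c u v) (X a i j) \<simeq> Jac 0 (X c u v) (X a i j)" by (rule Jac_wd1[OF R5'[OF False]])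
      then show ?thesis by (simp add: Jac_zero1 Jac_cyc[of "X a i j"])
    next
      case True
      then have F: "\<not> (u < NN \<and> v < NN)" using False T1 by auto
      have "Jac (X c u v) (X a i j) (X b k l) \<simeq> Jac 0 (X a i j) (X b k l)" by (rule Jac_wd1[OF R5'[OF F]])
      then show ?thesis by (simp add: Jac_zero1 Jac_cyc2[of "X a i j"])
    qed
  qed
  then show ?thesis using phi0 by (simp add: req_def')
qed

lemma jacobi_all: "inI (Jac p q r - cst (1/2) * phiR K \<alpha> p q r)"
proof -
  have stepB: "inI (Jac (X a i j) (X b k l) r - cst (1/2) * phiR K \<alpha> (X a i j) (X b k l) r)" for a i j b k l r
    by (rule der_vanish_mod[where D="\<lambda>r. Jac (X a i j) (X b k l) r - cst (1/2) * phiR K \<alpha> (X a i j) (X b k l) r"])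
      (use jac_gen_all Jac_mult3 in \<open>auto simp: Jac_cst3 phiR_cst3 Jac_add3 phiR_add3 phiR_mult3 algebra_simps\<close>)
  have stepC: "inI (Jac (X a i j) q r - cst (1/2) * phiR K \<alpha> (X a i j) q r)" for a i j q r
  proof (rule der_vanish_mod[where D="\<lambda>q. Jac (X a i j) q r - cst (1/2) * phiR K \<alpha> (X a i j) q r"])
    fix c show "inI (Jac (X a i j) (cst c) r - cst (1/2) * phiR K \<alpha> (X a i j) (cst c) r)"
      using Jac_cst3[of r "X a i j" c] by (simp add: Jac_cyc[of "X a i j"] Jac_cyc[of "cst c"] phiR_cst2)
  next
    fix b k l show "inI (Jac (X a i j) (X b k l) r - cst (1/2) * phiR K \<alpha> (X a i j) (X b k l) r)" by (rule stepB)
  next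
    fix q1 q2 show "Jac (X a i j) (q1 + q2) r - cst (1/2) * phiR K \<alpha> (X a i j) (q1 + q2) r =
      (Jac (X a i j) q1 r - cst (1/2) * phiR K \<alpha> (X a i j) q1 r) + (Jac (X a i j) q2 r - cst (1/2) * phiR K \<alpha> (X a i j) q2 r)"
      by (simp only: Jac_cyc2[of "X a i j"] Jac_add3 phiR_add2) (simp add: algebra_simps)
  next
    fix q1 q2
    have "Jac (X a i j) (q1 * q2) r - cst (1/2) * phiR K \<alpha> (X a i j) (q1 * q2) r
      - ((Jac (X a i j) q1 r - cst (1/2) * phiR K \<alpha> (X a i j) q1 r) * q2 + q1 * (Jac (X a i j) q2 r - cst (1/2) * phiR K \<alpha> (X a i j) q2 r))
      = Jac r (X a i j) (q1 * q2) - (Jac r (X a i j) q1 * q2 + q1 * Jac r (X a i j) q2)"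
      by (simp only: Jac_cyc2[of "X a i j"] phiR_mult2) (simp add: algebra_simps)
    then show "inI (Jac (X a i j) (q1 * q2) r - cst (1/2) * phiR K \<alpha> (X a i j) (q1 * q2) r
      - ((Jac (X a i j) q1 r - cst (1/2) * phiR K \<alpha> (X a i j) q1 r) * q2 + q1 * (Jac (X a i j) q2 r - cst (1/2) * phiR K \<alpha> (X a i j) q2 r)))"
      using Jac_mult3 by simp
  qed
  show ?thesis
  proof (rule der_vanish_mod[where D="\<lambda>p. Jac p q r - cst (1/2) * phiR K \<alpha> p q r"])
    fix c show "inI (Jac (cst c) q r - cst (1/2) * phiR K \<alpha> (cst c) q r)"
      using Jac_cst3[of q r c] by (simp add: Jac_cyc[of "cst c"] phiR_cst1)
  next
    fix a i j show "inI (Jac (X a i j) q r - cst (1/2) * phiR K \<alpha> (X a i j) q r)" by (rule stepC)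
  next
    fix p1 p2 show "Jac (p1 + p2) q r - cst (1/2) * phiR K \<alpha> (p1 + p2) q r =
      (Jac p1 q r - cst (1/2) * phiR K \<alpha> p1 q r) + (Jac p2 q r - cst (1/2) * phiR K \<alpha> p2 q r)"
      using Jac_add3[of q r p1 p2] by (simp add: Jac_cyc[of _ q r] phiR_add1 algebra_simps)
  next
    fix p1 p2
    have "Jac (p1 * p2) q r - cst (1/2) * phiR K \<alpha> (p1 * p2) q r
      - ((Jac p1 q r - cst (1/2) * phiR K \<alpha> p1 q r) * p2 + p1 * (Jac p2 q r - cst (1/2) * phiR K \<alpha> p2 q r))
      = Jac q r (p1 * p2) - (Jac q r p1 * p2 + p1 * Jac q r p2)"
      by (simp add: Jac_cyc[of _ q r] phiR_mult1 algebra_simps)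
    then show "inI (Jac (p1 * p2) q r - cst (1/2) * phiR K \<alpha> (p1 * p2) q r
      - ((Jac p1 q r - cst (1/2) * phiR K \<alpha> p1 q r) * p2 + p1 * (Jac p2 q r - cst (1/2) * phiR K \<alpha> p2 q r)))"
      using Jac_mult3 by simp
  qed
qed

end



theorem theorem5p6:
  fixes sm :: "'k::field_char_0 \<Rightarrow> 'a::ring \<Rightarrow> 'a"
    and K :: nat and e :: "nat \<Rightarrow> 'a"
    and dbr :: "'a \<Rightarrow> 'a \<Rightarrow> ('a \<times> 'a) list"
    and \<alpha> :: "nat \<Rightarrow> nat"
  assumes dqP: "double_quasi_Poisson sm K e dbr"
  shows "\<exists>br :: ('a, 'k) rpoly \<Rightarrow> ('a, 'k) rpoly \<Rightarrow> ('a, 'k) rpoly.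
     \<comment> \<open>br is well defined on R = O(Rep(A, alpha))\<close>
     (\<forall>p p' q q'. req sm K e \<alpha> p p' \<longrightarrow> req sm K e \<alpha> q q' \<longrightarrow> req sm K e \<alpha> (br p q) (br p' q')) \<and>
     \<comment> \<open>antisymmetric\<close>
     (\<forall>p q. req sm K e \<alpha> (br p q) (- br q p)) \<and>
     \<comment> \<open>k-bilinear biderivation\<close>
     (\<forall>p q r. req sm K e \<alpha> (br p (q + r)) (br p q + br p r)) \<and>
     (\<forall>p q r. req sm K e \<alpha> (br (p + q) r) (br p r + br q r)) \<and>
     (\<forall>c p q. req sm K e \<alpha> (br p (cst c * q)) (cst c * br p q)) \<and>
     (\<forall>c p q. req sm K e \<alpha> (br (cst c * p) q) (cst c * br p q)) \<and>
     (\<forall>p q r. req sm K e \<alpha> (br p (q * r)) (br p q * r + q * br p r)) \<and>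
     (\<forall>p q r. req sm K e \<alpha> (br (p * q) r) (br p r * q + p * br q r)) \<and>
     \<comment> \<open>the defining formula on generators\<close>
     (\<forall>a b i j k l. i < dimN K \<alpha> \<longrightarrow> j < dimN K \<alpha> \<longrightarrow> k < dimN K \<alpha> \<longrightarrow> l < dimN K \<alpha> \<longrightarrow>
        req sm K e \<alpha> (br (Xv a i j) (Xv b k l)) (ind_br dbr a b i j k l)) \<and>
     \<comment> \<open>g_alpha-invariance\<close>
     (\<forall>\<eta> p q. in_galpha K \<alpha> \<eta> \<longrightarrow>
        req sm K e \<alpha> (etaR K \<alpha> \<eta> (br p q)) (br (etaR K \<alpha> \<eta> p) q + br p (etaR K \<alpha> \<eta> q))) \<and>
     \<comment> \<open>quasi-Poisson Jacobi identity\<close>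
     (\<forall>p q r. req sm K e \<alpha> (br p (br q r) + br q (br r p) + br r (br p q))
                          (cst (1/2) * phiR K \<alpha> p q r)) \<and>
     \<comment> \<open>GL_alpha-invariance\<close>
     (\<forall>g h p q. in_GLalpha K \<alpha> g h \<longrightarrow>
        req sm K e \<alpha> (gactR K \<alpha> g h (br p q)) (br (gactR K \<alpha> g h p) (gactR K \<alpha> g h q))) \<and>
     \<comment> \<open>the Cartan trivector is GL_alpha-invariant\<close>
     (\<forall>(g :: nat \<Rightarrow> nat \<Rightarrow> 'k) h. in_GLalpha K \<alpha> g h \<longrightarrow>
        cartan_comp K \<alpha> (Adm (dimN K \<alpha>) g h) = cartan_comp K \<alpha> id)"
proof -
  interpret ctx sm K e dbr \<alpha> by unfold_locales (rule dqP)
  show ?thesis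
  proof (rule exI[where x = br], intro conjI)
    show "\<forall>p p' q q'. req sm K e \<alpha> p p' \<longrightarrow> req sm K e \<alpha> q q' \<longrightarrow> req sm K e \<alpha> (br p q) (br p' q')"
      using br_wd by blast
    show "\<forall>p q. req sm K e \<alpha> (br p q) (- br q p)"
      using br_anti by blast
    show "\<forall>p q r. req sm K e \<alpha> (br p (q + r)) (br p q + br p r)"
      by (simp add: br_add2)
    show "\<forall>p q r. req sm K e \<alpha> (br (p + q) r) (br p r + br q r)"
      by (simp add: br_add1)
    show "\<forall>c p q. req sm K e \<alpha> (br p (cst c * q)) (cst c * br p q)"
      by (simp add: br_cmult2)
    show "\<forall>c p q. req sm K e \<alpha> (br (cst c * p) q) (cst c * br p q)"
      by (simp add: br_cmult1)
    show "\<forall>p q r. req sm K e \<alpha> (br p (q * r)) (br p q * r + q * br p r)"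
      by (simp add: br_mult2)
    show "\<forall>p q r. req sm K e \<alpha> (br (p * q) r) (br p r * q + p * br q r)"
      by (simp add: br_mult1)
    show "\<forall>a b i j k l. i < dimN K \<alpha> \<longrightarrow> j < dimN K \<alpha> \<longrightarrow> k < dimN K \<alpha> \<longrightarrow> l < dimN K \<alpha> \<longrightarrow>
        req sm K e \<alpha> (br (Xv a i j) (Xv b k l)) (ind_br dbr a b i j k l)"
      by (simp add: br_XX)
    show "\<forall>\<eta> p q. in_galpha K \<alpha> \<eta> \<longrightarrow>
        req sm K e \<alpha> (etaR K \<alpha> \<eta> (br p q)) (br (etaR K \<alpha> \<eta> p) q + br p (etaR K \<alpha> \<eta> q))"
      using eta_inv by blast
    show "\<forall>p q r. req sm K e \<alpha> (br p (br q r) + br q (br r p) + br r (br p q))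
                          (cst (1/2) * phiR K \<alpha> p q r)"
      using jacobi_all by (simp add: Jac_def req_def')
    show "\<forall>g h p q. in_GLalpha K \<alpha> g h \<longrightarrow>
        req sm K e \<alpha> (gactR K \<alpha> g h (br p q)) (br (gactR K \<alpha> g h p) (gactR K \<alpha> g h q))"
      using gl_inv by (auto simp: in_GLalpha_def)
    show "\<forall>(g :: nat \<Rightarrow> nat \<Rightarrow> 'k) h. in_GLalpha K \<alpha> g h \<longrightarrow>
        cartan_comp K \<alpha> (Adm (dimN K \<alpha>) g h) = cartan_comp K \<alpha> id"
      using cartan_invariant by blast
  qed
qed

end
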